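(* Let $n\ge p$, $\mathcal X\in\mathrm{St}(n,p,l)$, $\mathcal U,\mathcal V\in T_{\mathcal X}\mathrm{St}(n,p,l)$, and let $R_{\mathcal X}(\mathcal U)=(\mathcal X+\mathcal U)*(\mathcal I+\mathcal U^\top*\mathcal U)^{-1/2}$ be the t-PD based retraction. Put $\mathcal P=(\mathcal I+\mathcal U^\top*\mathcal U)^{1/2}$, $\mathcal Y=R_{\mathcal X}(\mathcal U)=(\mathcal X+\mathcal U)*\mathcal P^{-1}$, and let $\mathcal S\in\mathbb R^{p\times p\times l}$ be given by $$\operatorname{vec}(\mathcal S)=\big(\widetilde{\operatorname{bcirc}}(\mathcal P)^\top\otimes I_p+[I_p]_{l\times l}\odot\operatorname{bcirc}(\mathcal P)\big)^{\dagger}\operatorname{vec}(\mathcal Y^\top*\mathcal V-\mathcal V^\top*\mathcal Y).$$ Then the vector transport by differentiated retraction $\mathcal T_{\mathcal U}\mathcal V:=\frac{d}{dt}R_{\mathcal X}(\mathcal U+t\mathcal V)\big|_{t=0}$ equals $$\mathcal T_{\mathcal U}\mathcal V=\mathcal Y*\mathcal S+(\mathcal I-\mathcal Y*\mathcal Y^\top)*\mathcal V*(\mathcal Y^\top*(\mathcal X+\mathcal U))^{-1}.$$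
   Context: Frontal slices $A^{(i)}=\mathcal A(:,:,i)$. $\operatorname{bcirc}(\mathcal A)$ is the block circulant matrix whose $(i,j)$ block is $A^{(((i-j)\bmod l)+1)}$, and $\widetilde{\operatorname{bcirc}}(\mathcal A)$ is the block matrix whose $(i,j)$ block is $A^{(((j-i)\bmod l)+1)}$ (first block row $A^{(1)},A^{(2)},\dots,A^{(l)}$). The t-product is $\mathcal A*\mathcal B=\operatorname{fold}(\operatorname{bcirc}(\mathcal A)\operatorname{unfold}(\mathcal B))$, with $\operatorname{unfold}$ stacking frontal slices vertically and $\operatorname{fold}$ its inverse. Transpose: $\mathcal A^\top$ has frontal slices $(A^{(1)})^\top,(A^{(l)})^\top,\dots,(A^{(2)})^\top$. $\mathcal I$ identity tensor, $\mathcal A^{-1}$ t-product inverse. For a symmetric ($\mathcal A=\mathcal A^\top$) tensor that is t-positive definite ($\langle\mathcal Z,\mathcal A*\mathcal Z\rangle>0$ for nonzero $\mathcal Z\in\mathbb R^{p\times1\times l}$), $\mathcal A^{1/2}$ is the unique symmetric t-positive semidefinite $\mathcal S$ with $\mathcal S*\mathcal S=\mathcal A$ and $\mathcal A^{-1/2}=(\mathcal A^{1/2})^{-1}$. $\operatorname{vec}(\mathcal A)$ is the column-major vectorization $\mathcal A(:)$ (columns of $A^{(1)}$, then of $A^{(2)}$, etc.). $[I_p]_{l\times l}$ is the $pl\times pl$ block matrix all of whose $p\times p$ blocks equal $I_p$; for block matrices $M=[M_{ij}]$, $N=[N_{ij}]$ with the same block pattern $l\times l$, the Khatri–Rao product $M\odot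 N$ is the block matrix with $(i,j)$ block $M_{ij}\otimes N_{ij}$. $\dagger$ is the Moore–Penrose inverse. $\mathrm{St}(n,p,l)=\{\mathcal X\in\mathbb R^{n\times p\times l}:\mathcal X^\top*\mathcal X=\mathcal I\}$. *)

theory Defs
  imports Complex_Main "Jordan_Normal_Form.Matrix"
begin

text \<open>Third-order real tensors of size m x n x l are represented by the list of their
 l frontal slices A^(1),...,A^(l), each an m x n matrix (list index k = slice k+1).\<close>

type_synonym tensor = "real mat list"

definition tdims :: "nat \<Rightarrow> nat \<Rightarrow> nat \<Rightarrow> tensor \<Rightarrow> bool" where
  "tdims m n l A \<longleftrightarrow> length A = l \<and> (\<forall>M\<in>set A. M \<in> carrier_mat m n)"

definition bcirc :: "tensor \<Rightarrow> real mat" where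
  "bcirc A = (let l = length A; m = dim_row (A!0); n = dim_col (A!0) in
     mat (m*l) (n*l) (\<lambda>(r,c). A ! nat ((int (r div m) - int (c div n)) mod int l) $$ (r mod m, c mod n)))"

definition bcirc_t :: "tensor \<Rightarrow> real mat" where
  "bcirc_t A = (let l = length A; m = dim_row (A!0); n = dim_col (A!0) in
     mat (m*l) (n*l) (\<lambda>(r,c). A ! nat ((int (c div n) - int (r div m)) mod int l) $$ (r mod m, c mod n)))"

definition unfold :: "tensor \<Rightarrow> real mat" where
  "unfold B = (let l = length B; m = dim_row (B!0); n = dim_col (B!0) in
     mat (m*l) n (\<lambda>(r,c). B ! (r div m) $$ (r mod m, c)))"

definition fold :: "nat \<Rightarrow> real mat \<Rightarrow> tensor" where
  "fold l M = map (\<lambda>k. mat (dim_row M div l) (dim_col M)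
                     (\<lambda>(i,j). M $$ (k * (dim_row M div l) + i, j))) [0..<l]"

definition tprod :: "tensor \<Rightarrow> tensor \<Rightarrow> tensor" (infixl "\<star>" 70) where
  "A \<star> B = fold (length A) (bcirc A * unfold B)"

definition tplus :: "tensor \<Rightarrow> tensor \<Rightarrow> tensor" (infixl "\<oplus>\<^sub>t" 65) where
  "A \<oplus>\<^sub>t B = map2 (+) A B"

definition tminus :: "tensor \<Rightarrow> tensor \<Rightarrow> tensor" (infixl "\<ominus>\<^sub>t" 65) where
  "A \<ominus>\<^sub>t B = map2 (-) A B"

definition tsmult :: "real \<Rightarrow> tensor \<Rightarrow> tensor" where
  "tsmult a A = map (\<lambda>M. a \<cdot>\<^sub>m M) A"

text \<open>Transpose: slices (A^(1))^T, (A^(l))^T, ..., (A^(2))^T.\<close>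
definition ttrans :: "tensor \<Rightarrow> tensor" where
  "ttrans A = map (\<lambda>k. transpose_mat (A ! ((length A - k) mod length A))) [0..<length A]"

definition tid :: "nat \<Rightarrow> nat \<Rightarrow> tensor" where
  "tid p l = map (\<lambda>k. if k = 0 then 1\<^sub>m p else 0\<^sub>m p p) [0..<l]"

definition tinv :: "nat \<Rightarrow> nat \<Rightarrow> tensor \<Rightarrow> tensor" where
  "tinv p l A = (THE B. tdims p p l B \<and> A \<star> B = tid p l \<and> B \<star> A = tid p l)"

definition tinner :: "tensor \<Rightarrow> tensor \<Rightarrow> real" where
  "tinner A B = (\<Sum>k<length A. \<Sum>i<dim_row (A!k). \<Sum>j<dim_col (A!k). A!k $$ (i,j) * B!k $$ (i,j))"

definition tsym :: "tensor \<Rightarrow> bool" where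
  "tsym A \<longleftrightarrow> A = ttrans A"

definition tpsd :: "nat \<Rightarrow> nat \<Rightarrow> tensor \<Rightarrow> bool" where
  "tpsd p l A \<longleftrightarrow> (\<forall>Z. tdims p 1 l Z \<longrightarrow> tinner Z (A \<star> Z) \<ge> 0)"

definition tpd :: "nat \<Rightarrow> nat \<Rightarrow> tensor \<Rightarrow> bool" where
  "tpd p l A \<longleftrightarrow> (\<forall>Z. tdims p 1 l Z \<longrightarrow> Z \<noteq> replicate l (0\<^sub>m p 1) \<longrightarrow> tinner Z (A \<star> Z) > 0)"

definition tsqrt :: "nat \<Rightarrow> nat \<Rightarrow> tensor \<Rightarrow> tensor" where
  "tsqrt p l A = (THE S. tdims p p l S \<and> tsym S \<and> tpsd p l S \<and> S \<star> S = A)"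

definition tinvsqrt :: "nat \<Rightarrow> nat \<Rightarrow> tensor \<Rightarrow> tensor" where
  "tinvsqrt p l A = tinv p l (tsqrt p l A)"

text \<open>Column-major vectorization vec(A) = A(:) of an m x n x l tensor.\<close>
definition tvec :: "tensor \<Rightarrow> real vec" where
  "tvec A = (let l = length A; m = dim_row (A!0); n = dim_col (A!0) in
     vec (m*n*l) (\<lambda>x. A ! (x div (m*n)) $$ ((x mod (m*n)) mod m, (x mod (m*n)) div m)))"

definition kron :: "real mat \<Rightarrow> real mat \<Rightarrow> real mat" where
  "kron M N = mat (dim_row M * dim_row N) (dim_col M * dim_col N)
     (\<lambda>(r,c). M $$ (r div dim_row N, c div dim_col N) * N $$ (r mod dim_row N, c mod dim_col N))"

text \<open>Khatri-Rao product of block matrices with an l x l block pattern, blocks of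
  M of size a x b and blocks of N of size c x d: (i,j) block is M_ij (x) N_ij.\<close>
definition khatri_rao :: "nat \<Rightarrow> real mat \<Rightarrow> real mat \<Rightarrow> real mat" where
  "khatri_rao l M N = (let a = dim_row M div l; b = dim_col M div l;
                          c = dim_row N div l; d = dim_col N div l in
     mat (a*c*l) (b*d*l) (\<lambda>(r,s).
       let i = r div (a*c); j = s div (b*d); r' = r mod (a*c); s' = s mod (b*d) in
       M $$ (i*a + r' div c, j*b + s' div d) * N $$ (i*c + r' mod c, j*d + s' mod d)))"

text \<open>[I_p]_{l x l}: pl x pl block matrix all of whose p x p blocks are I_p.\<close>
definition blockI :: "nat \<Rightarrow> nat \<Rightarrow> real mat" where
  "blockI p l = mat (p*l) (p*l) (\<lambda>(r,c). if r mod p = c mod p then 1 else 0)"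

definition pinv :: "real mat \<Rightarrow> real mat" where
  "pinv M = (THE X. X \<in> carrier_mat (dim_col M) (dim_row M) \<and> M * X * M = M \<and> X * M * X = X
              \<and> transpose_mat (M * X) = M * X \<and> transpose_mat (X * M) = X * M)"

definition tStiefel :: "nat \<Rightarrow> nat \<Rightarrow> nat \<Rightarrow> tensor set" where
  "tStiefel n p l = {X. tdims n p l X \<and> ttrans X \<star> X = tid p l}"

definition tangent_tStiefel :: "nat \<Rightarrow> nat \<Rightarrow> nat \<Rightarrow> tensor \<Rightarrow> tensor set" where
  "tangent_tStiefel n p l X = {U. tdims n p l U \<and> ttrans X \<star> U \<oplus>\<^sub>t ttrans U \<star> X = replicate l (0\<^sub>m p p)}"

definition retr_tpd :: "nat \<Rightarrow> nat \<Rightarrow> tensor \<Rightarrow> tensor \<Rightarrow> tensor" where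
  "retr_tpd p l X U = (X \<oplus>\<^sub>t U) \<star> tinvsqrt p l (tid p l \<oplus>\<^sub>t ttrans U \<star> U)"

end

theory Submission
  imports Defs "HOL-Analysis.L2_Norm" "Jordan_Normal_Form.Determinant"
begin

lemma sum_split_mult: fixes m l :: nat shows "(\<Sum>r<m*l. g r) = (\<Sum>k<l. \<Sum>a<m. g (k*m+a))"
proof -
  have "(\<Sum>r<m*l. g r) = (\<Sum>k<l. sum g {k*m..<k*m+m})"
    using sum.nat_group[of g m l] by (simp add: mult.commute)
  also have "\<dots> = (\<Sum>k<l. \<Sum>a<m. g (k*m+a))"
  proof (rule sum.cong[OF refl])
    fix k
    have "{k*m..<k*m+m} = (\<lambda>a. a + k*m) ` {0..<m}"
      using image_add_atLeastLessThan[of "k*m" 0 m] by (simp add: add.commute)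
    then show "sum g {k*m..<k*m+m} = (\<Sum>a<m. g (k*m+a))"
      by (simp add: sum.reindex atLeast0LessThan add.commute)
  qed
  finally show ?thesis .
qed

lemma idx_lt: fixes k l a m :: nat assumes "k < l" "a < m" shows "k*m + a < m*l"
proof -
  have "k*m + a < (k+1)*m" using assms by simp
  also have "\<dots> \<le> l*m" using assms by (intro mult_le_mono1) simp
  finally show ?thesis by (simp add: mult.commute)
qed

lemma idx_lt0: fixes l b n :: nat assumes "0 < l" "b < n" shows "b < n*l"
  using idx_lt[of 0 l b n] assms by simp

definition cx :: "nat \<Rightarrow> nat \<Rightarrow> nat \<Rightarrow> nat" where
  "cx l i j = nat ((int i - int j) mod int l)"

lemma cx_int: "0 < l \<Longrightarrow> int (cx l i j) = (int i - int j) mod int l"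
  unfolding cx_def by simp

lemma cx_lt: "0 < l \<Longrightarrow> cx l i j < l"
  unfolding cx_def by (simp add: nat_less_iff)

lemma cx_eqI: "0 < l \<Longrightarrow> (int a - int b) mod int l = (int c - int d) mod int l \<Longrightarrow> cx l a b = cx l c d"
  unfolding cx_def by simp

lemma cx_eq_natI: "0 < l \<Longrightarrow> k < l \<Longrightarrow> (int a - int b) mod int l = int k \<Longrightarrow> cx l a b = k"
  unfolding cx_def by simp

lemma cx_0: "k < l \<Longrightarrow> cx l k 0 = k"
  unfolding cx_def by simp

lemma mod_diff_zero_iff: assumes "a < l" "b < l" shows "((int a - int b) mod int l = 0) = (a = b)"
proof
  assume h: "(int a - int b) mod int l = 0"
  show "a = b"
  proof (cases "a \<ge> b")
    case True
    then have "(int a - int b) mod int l = int a - int b" using assms by (intro mod_pos_pos_trivial) auto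
    then show ?thesis using h True by simp
  next
    case False
    then have "(int a - int b + int l) mod int l = int a - int b + int l" using assms by (intro mod_pos_pos_trivial) auto
    then have "(int a - int b) mod int l = int a - int b + int l" by simp
    then show ?thesis using h False assms by simp
  qed
qed simp

lemma cx_zero_iff: "a < l \<Longrightarrow> b < l \<Longrightarrow> (cx l a b = 0) = (a = b)"
proof -
  assume a: "a < l" and b: "b < l"
  then have l: "0 < l" by simp
  have "(cx l a b = 0) = (int (cx l a b) = 0)" by simp
  also have "\<dots> = ((int a - int b) mod int l = 0)" by (simp add: cx_int[OF l])
  also have "\<dots> = (a = b)" by (rule mod_diff_zero_iff[OF a b])
  finally show ?thesis .
qed

lemma tdimsD:
  assumes "tdims m n l A" "0 < l"
  shows "length A = l" "dim_row (A!0) = m" "dim_col (A!0) = n" "\<And>k. k < l \<Longrightarrow> A!k \<in> carrier_mat m n"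
  using assms unfolding tdims_def by auto

lemma bcirc_carrier: assumes "tdims m n l A" "0 < l" shows "bcirc A \<in> carrier_mat (m*l) (n*l)"
  using tdimsD[OF assms] unfolding bcirc_def Let_def by auto

lemma bcirc_idx: assumes "tdims m n l A" "0 < l" "r < m*l" "c < n*l"
  shows "bcirc A $$ (r,c) = A ! cx l (r div m) (c div n) $$ (r mod m, c mod n)"
  using tdimsD[OF assms(1,2)] assms(3,4) unfolding bcirc_def Let_def cx_def by auto

lemma unfold_carrier: assumes "tdims m n l A" "0 < l" shows "unfold A \<in> carrier_mat (m*l) n"
  using tdimsD[OF assms] unfolding unfold_def Let_def by auto

lemma unfold_idx: assumes "tdims m n l A" "0 < l" "r < m*l" "c < n"
  shows "unfold A $$ (r,c) = A ! (r div m) $$ (r mod m, c)"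
  using tdimsD[OF assms(1,2)] assms(3,4) unfolding unfold_def Let_def by auto

lemma fold_length[simp]: "length (fold l M) = l"
  unfolding fold_def by simp

lemma fold_nth: "k < l \<Longrightarrow> fold l M ! k = mat (dim_row M div l) (dim_col M) (\<lambda>(i,j). M $$ (k*(dim_row M div l)+i, j))"
  unfolding fold_def by simp

lemma tprod_tdims: assumes "tdims m n l A" "tdims n q l B" "0 < l" shows "tdims m q l (A \<star> B)"
proof -
  have b: "bcirc A * unfold B \<in> carrier_mat (m*l) q"
    using bcirc_carrier[OF assms(1,3)] unfold_carrier[OF assms(2,3)] by auto
  have la: "length A = l" using tdimsD[OF assms(1,3)] by simp
  have d: "dim_row (bcirc A) = m*l" "dim_col (unfold B) = q" using bcirc_carrier[OF assms(1,3)] unfold_carrier[OF assms(2,3)] by auto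
  show ?thesis unfolding tprod_def tdims_def using assms(3) la d
    by (auto simp: fold_def)
qed

lemma tprod_idx: assumes "tdims m n l A" "tdims n q l B" "0 < l" "k < l" "a < m" "c < q"
  shows "(A \<star> B) ! k $$ (a,c) = (\<Sum>s<n*l. bcirc A $$ (k*m+a, s) * unfold B $$ (s,c))"
proof -
  have b: "bcirc A \<in> carrier_mat (m*l) (n*l)" using bcirc_carrier[OF assms(1,3)] .
  have u: "unfold B \<in> carrier_mat (n*l) q" using unfold_carrier[OF assms(2,3)] .
  have la: "length A = l" using tdimsD[OF assms(1,3)] by simp
  have km: "k*m+a < m*l" using assms(4,5) by (rule idx_lt)
  show ?thesis unfolding tprod_def la using b u assms(3-6) km
    by (auto simp: fold_nth scalar_prod_def lessThan_atLeast0 intro!: sum.cong)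
qed

lemma tent: assumes "tdims m n l T" "0 < l" "k < l" "a < m" "b < n"
  shows "T ! k $$ (a,b) = bcirc T $$ (k*m+a, b)"
proof -
  have r: "k*m+a < m*l" using assms(3,4) by (rule idx_lt)
  have c: "b < n*l" using assms(2,5) by (rule idx_lt0)
  show ?thesis using bcirc_idx[OF assms(1,2) r c] assms by (simp add: cx_0)
qed

lemma cx_add: fixes l J a :: nat assumes "0 < l" "a < l" shows "cx l ((a + J) mod l) J = a"
  using assms by (intro cx_eq_natI) (auto simp: of_nat_mod mod_simps)

lemma cx_add2: fixes l J b :: nat assumes "0 < l" "b < l" shows "(cx l b J + J) mod l = b"
proof -
  have "int ((cx l b J + J) mod l) = int b" using assms
    by (simp add: of_nat_mod cx_int mod_simps)
  then show ?thesis by simp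
qed

lemma rot_sum: fixes l J :: nat assumes "0 < l"
  shows "(\<Sum>j<l. h j) = (\<Sum>j<l. h ((j + J) mod l))"
  by (rule sum.reindex_bij_witness[of _ "\<lambda>j. (j + J) mod l" "\<lambda>j. cx l j J"])
     (use assms cx_add cx_add2 cx_lt in auto)

lemma div_lt: fixes r m l :: nat assumes "r < m*l" shows "r div m < l"
  using less_mult_imp_div_less[of r l m] assms by (simp add: mult.commute)

lemma cx_assoc: fixes l I J j :: nat assumes "0 < l"
  shows "cx l I ((j+J) mod l) = cx l (cx l I J) j"
proof (rule cx_eqI[OF assms])
  have "(int I - int ((j+J) mod l)) mod int l = (int I - (int j + int J)) mod int l"
    by (simp add: of_nat_mod mod_diff_right_eq)
  also have "\<dots> = (int I - int J - int j) mod int l" by (simp add: algebra_simps)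
  also have "\<dots> = ((int I - int J) mod int l - int j) mod int l" by (simp add: mod_diff_left_eq)
  also have "\<dots> = (int (cx l I J) - int j) mod int l" by (simp add: cx_int[OF assms])
  finally show "(int I - int ((j+J) mod l)) mod int l = (int (cx l I J) - int j) mod int l" .
qed

lemma cx_neg: fixes l i j :: nat assumes "0 < l" shows "(l - cx l i j) mod l = cx l j i"
proof -
  have K: "cx l i j < l" using cx_lt[OF assms] .
  have "int ((l - cx l i j) mod l) = (int l - int (cx l i j)) mod int l"
    using K by (simp add: of_nat_mod of_nat_diff)
  also have "\<dots> = (- int (cx l i j)) mod int l" by (simp add: mod_diff_left_eq[symmetric])
  also have "\<dots> = (- ((int i - int j) mod int l)) mod int l" by (simp add: cx_int[OF assms])
  also have "\<dots> = (- (int i - int j)) mod int l" by (simp add: mod_minus_eq)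
  also have "\<dots> = int (cx l j i)" by (simp add: cx_int[OF assms])
  finally show ?thesis by simp
qed

lemma divmod_facts: fixes k m a :: nat assumes "a < m" shows "(k*m+a) div m = k" "(k*m+a) mod m = a"
  using assms by auto

lemma bcirc_tprod: assumes A: "tdims m n l A" and B: "tdims n q l B" and l: "0 < l"
  shows "bcirc (A \<star> B) = bcirc A * bcirc B"
proof -
  have AB: "tdims m q l (A \<star> B)" by (rule tprod_tdims[OF A B l])
  note cAB = bcirc_carrier[OF AB l] and cA = bcirc_carrier[OF A l] and cB = bcirc_carrier[OF B l]
  show ?thesis
  proof (rule eq_matI)
    show "dim_row (bcirc (A \<star> B)) = dim_row (bcirc A * bcirc B)"
         "dim_col (bcirc (A \<star> B)) = dim_col (bcirc A * bcirc B)" using cAB cA cB by auto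
    fix r c assume "r < dim_row (bcirc A * bcirc B)" "c < dim_col (bcirc A * bcirc B)"
    then have r: "r < m*l" and c: "c < q*l" using cA cB by auto
    then have m0: "0 < m" and q0: "0 < q" by (auto intro: gr0I)
    define I J a' c' where "I = r div m" and "J = c div q" and "a' = r mod m" and "c' = c mod q"
    have I: "I < l" unfolding I_def using r by (rule div_lt)
    have J: "J < l" unfolding J_def using c by (rule div_lt)
    have a': "a' < m" unfolding a'_def using m0 by simp
    have c': "c' < q" unfolding c'_def using q0 by simp
    define K where "K = cx l I J"
    have K: "K < l" unfolding K_def using cx_lt[OF l] .
    have "bcirc (A \<star> B) $$ (r,c) = (A \<star> B) ! K $$ (a', c')"
      unfolding bcirc_idx[OF AB l r c] K_def I_def J_def a'_def c'_def ..
    also have "\<dots> = (\<Sum>s<n*l. bcirc A $$ (K*m+a', s) * unfold B $$ (s, c'))"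
      by (rule tprod_idx[OF A B l K a' c'])
    also have "\<dots> = (\<Sum>j<l. \<Sum>b<n. A ! (cx l K j) $$ (a', b) * B ! j $$ (b, c'))"
    proof (subst sum_split_mult, intro sum.cong refl)
      fix j b assume j: "j \<in> {..<l}" and b: "b \<in> {..<n}"
      have jb: "j*n+b < n*l" using j b by (intro idx_lt) auto
      have Ka: "K*m+a' < m*l" using K a' by (intro idx_lt) auto
      show "bcirc A $$ (K*m+a', j*n+b) * unfold B $$ (j*n+b, c') = A ! (cx l K j) $$ (a', b) * B ! j $$ (b, c')"
        using bcirc_idx[OF A l Ka jb] unfold_idx[OF B l jb c'] a' b by simp
    qed
    also have "\<dots> = (\<Sum>j<l. \<Sum>b<n. A ! (cx l I ((j+J) mod l)) $$ (a', b) * B ! (cx l ((j+J) mod l) J) $$ (b, c'))"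
      by (intro sum.cong refl) (simp add: cx_add[OF l] cx_assoc[OF l] K_def)
    also have "\<dots> = (\<Sum>j<l. \<Sum>b<n. A ! (cx l I j) $$ (a', b) * B ! (cx l j J) $$ (b, c'))"
      using rot_sum[OF l, of "\<lambda>j. \<Sum>b<n. A ! (cx l I j) $$ (a', b) * B ! (cx l j J) $$ (b, c')" J] by simp
    also have "\<dots> = (\<Sum>s<n*l. bcirc A $$ (r, s) * bcirc B $$ (s, c))"
    proof (subst sum_split_mult, intro sum.cong refl)
      fix j b assume j: "j \<in> {..<l}" and b: "b \<in> {..<n}"
      have jb: "j*n+b < n*l" using j b by (intro idx_lt) auto
      show "A ! (cx l I j) $$ (a', b) * B ! (cx l j J) $$ (b, c') = bcirc A $$ (r, j*n+b) * bcirc B $$ (j*n+b, c)"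
        using bcirc_idx[OF A l r jb] bcirc_idx[OF B l jb c] b by (simp add: I_def J_def a'_def c'_def)
    qed
    also have "\<dots> = (bcirc A * bcirc B) $$ (r,c)"
      using cA cB r c by (simp add: scalar_prod_def lessThan_atLeast0)
    finally show "bcirc (A \<star> B) $$ (r,c) = (bcirc A * bcirc B) $$ (r,c)" .
  qed
qed

lemma ttrans_length[simp]: "length (ttrans A) = length A"
  unfolding ttrans_def by simp

lemma ttrans_nth: "k < length A \<Longrightarrow> ttrans A ! k = transpose_mat (A ! ((length A - k) mod length A))"
  unfolding ttrans_def by simp

lemma ttrans_tdims: assumes A: "tdims m n l A" and l: "0 < l" shows "tdims n m l (ttrans A)"
proof -
  have la: "length A = l" using tdimsD[OF A l] by simp
  show ?thesis unfolding tdims_def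
  proof (intro conjI ballI)
    show "length (ttrans A) = l" using la by simp
    fix M assume "M \<in> set (ttrans A)"
    then obtain k where k: "k < l" and M: "M = ttrans A ! k" using la by (auto simp: in_set_conv_nth)
    have "(l - k) mod l < l" using l by simp
    then show "M \<in> carrier_mat n m" using M k la tdimsD(4)[OF A l] by (auto simp: ttrans_nth)
  qed
qed

lemma bcirc_ttrans: assumes A: "tdims m n l A" and l: "0 < l"
  shows "bcirc (ttrans A) = transpose_mat (bcirc A)"
proof -
  have At: "tdims n m l (ttrans A)" by (rule ttrans_tdims[OF A l])
  have la: "length A = l" using tdimsD[OF A l] by simp
  note cAt = bcirc_carrier[OF At l] and cA = bcirc_carrier[OF A l]
  show ?thesis
  proof (rule eq_matI)
    show "dim_row (bcirc (ttrans A)) = dim_row (transpose_mat (bcirc A))"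
         "dim_col (bcirc (ttrans A)) = dim_col (transpose_mat (bcirc A))" using cAt cA by auto
    fix r c assume "r < dim_row (transpose_mat (bcirc A))" "c < dim_col (transpose_mat (bcirc A))"
    then have r: "r < n*l" and c: "c < m*l" using cA by auto
    then have n0: "0 < n" and m0: "0 < m" by (auto intro: gr0I)
    have K: "cx l (r div n) (c div m) < l" by (rule cx_lt[OF l])
    have idx: "(l - cx l (r div n) (c div m)) mod l < l" using l by simp
    have "bcirc (ttrans A) $$ (r,c) = transpose_mat (A ! ((l - cx l (r div n) (c div m)) mod l)) $$ (r mod n, c mod m)"
      using bcirc_idx[OF At l r c] K la by (simp add: ttrans_nth)
    also have "\<dots> = A ! (cx l (c div m) (r div n)) $$ (c mod m, r mod n)"
      using tdimsD(4)[OF A l idx] n0 m0 by (simp add: cx_neg[OF l])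
    also have "\<dots> = transpose_mat (bcirc A) $$ (r,c)"
      using bcirc_idx[OF A l c r] r c cA by simp
    finally show "bcirc (ttrans A) $$ (r,c) = transpose_mat (bcirc A) $$ (r,c)" .
  qed
qed

lemma tplus_nth: "length A = length B \<Longrightarrow> k < length A \<Longrightarrow> (A \<oplus>\<^sub>t B) ! k = A ! k + B ! k"
  unfolding tplus_def by simp
lemma tminus_nth: "length A = length B \<Longrightarrow> k < length A \<Longrightarrow> (A \<ominus>\<^sub>t B) ! k = A ! k - B ! k"
  unfolding tminus_def by simp
lemma tsmult_nth: "k < length A \<Longrightarrow> (tsmult a A) ! k = a \<cdot>\<^sub>m A ! k"
  unfolding tsmult_def by simp

lemma tplus_tdims: assumes "tdims m n l A" "tdims m n l B" shows "tdims m n l (A \<oplus>\<^sub>t B)"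
  using assms unfolding tdims_def tplus_def by (fastforce simp: in_set_conv_nth intro!: add_carrier_mat)
lemma tminus_tdims: assumes "tdims m n l A" "tdims m n l B" shows "tdims m n l (A \<ominus>\<^sub>t B)"
  using assms unfolding tdims_def tminus_def by (fastforce simp: in_set_conv_nth intro!: minus_carrier_mat)
lemma tsmult_tdims: assumes "tdims m n l A" shows "tdims m n l (tsmult a A)"
  using assms unfolding tdims_def tsmult_def by auto

lemma bcirc_tplus: assumes A: "tdims m n l A" and B: "tdims m n l B" and l: "0 < l"
  shows "bcirc (A \<oplus>\<^sub>t B) = bcirc A + bcirc B"
proof -
  have AB: "tdims m n l (A \<oplus>\<^sub>t B)" by (rule tplus_tdims[OF A B])
  note cAB = bcirc_carrier[OF AB l] and cA = bcirc_carrier[OF A l] and cB = bcirc_carrier[OF B l]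
  show ?thesis
  proof (rule eq_matI)
    show "dim_row (bcirc (A \<oplus>\<^sub>t B)) = dim_row (bcirc A + bcirc B)"
         "dim_col (bcirc (A \<oplus>\<^sub>t B)) = dim_col (bcirc A + bcirc B)" using cAB cA cB by auto
    fix r c assume "r < dim_row (bcirc A + bcirc B)" "c < dim_col (bcirc A + bcirc B)"
    then have r: "r < m*l" and c: "c < n*l" using cB by auto
    then have n0: "0 < n" and m0: "0 < m" by (auto intro: gr0I)
    have K: "cx l (r div m) (c div n) < l" by (rule cx_lt[OF l])
    show "bcirc (A \<oplus>\<^sub>t B) $$ (r,c) = (bcirc A + bcirc B) $$ (r,c)"
      using bcirc_idx[OF AB l r c] bcirc_idx[OF A l r c] bcirc_idx[OF B l r c] r c cA cB
        tdimsD[OF A l] tdimsD[OF B l] K n0 m0 tdimsD(4)[OF A l K] tdimsD(4)[OF B l K]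
      by (simp add: tplus_nth)
  qed
qed

lemma bcirc_tminus: assumes A: "tdims m n l A" and B: "tdims m n l B" and l: "0 < l"
  shows "bcirc (A \<ominus>\<^sub>t B) = bcirc A - bcirc B"
proof -
  have AB: "tdims m n l (A \<ominus>\<^sub>t B)" by (rule tminus_tdims[OF A B])
  note cAB = bcirc_carrier[OF AB l] and cA = bcirc_carrier[OF A l] and cB = bcirc_carrier[OF B l]
  show ?thesis
  proof (rule eq_matI)
    show "dim_row (bcirc (A \<ominus>\<^sub>t B)) = dim_row (bcirc A - bcirc B)"
         "dim_col (bcirc (A \<ominus>\<^sub>t B)) = dim_col (bcirc A - bcirc B)" using cAB cA cB by auto
    fix r c assume "r < dim_row (bcirc A - bcirc B)" "c < dim_col (bcirc A - bcirc B)"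
    then have r: "r < m*l" and c: "c < n*l" using cB by auto
    then have n0: "0 < n" and m0: "0 < m" by (auto intro: gr0I)
    have K: "cx l (r div m) (c div n) < l" by (rule cx_lt[OF l])
    show "bcirc (A \<ominus>\<^sub>t B) $$ (r,c) = (bcirc A - bcirc B) $$ (r,c)"
      using bcirc_idx[OF AB l r c] bcirc_idx[OF A l r c] bcirc_idx[OF B l r c] r c cA cB
        tdimsD[OF A l] tdimsD[OF B l] K n0 m0 tdimsD(4)[OF A l K] tdimsD(4)[OF B l K]
      by (simp add: tminus_nth)
  qed
qed

lemma bcirc_tsmult: assumes A: "tdims m n l A" and l: "0 < l"
  shows "bcirc (tsmult a A) = a \<cdot>\<^sub>m bcirc A"
proof -
  have AB: "tdims m n l (tsmult a A)" by (rule tsmult_tdims[OF A])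
  note cAB = bcirc_carrier[OF AB l] and cA = bcirc_carrier[OF A l]
  show ?thesis
  proof (rule eq_matI)
    show "dim_row (bcirc (tsmult a A)) = dim_row (a \<cdot>\<^sub>m bcirc A)"
         "dim_col (bcirc (tsmult a A)) = dim_col (a \<cdot>\<^sub>m bcirc A)" using cAB cA by auto
    fix r c assume "r < dim_row (a \<cdot>\<^sub>m bcirc A)" "c < dim_col (a \<cdot>\<^sub>m bcirc A)"
    then have r: "r < m*l" and c: "c < n*l" using cA by auto
    then have n0: "0 < n" and m0: "0 < m" by (auto intro: gr0I)
    have K: "cx l (r div m) (c div n) < l" by (rule cx_lt[OF l])
    show "bcirc (tsmult a A) $$ (r,c) = (a \<cdot>\<^sub>m bcirc A) $$ (r,c)"
      using bcirc_idx[OF AB l r c] bcirc_idx[OF A l r c] r c cA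
        tdimsD[OF A l] K n0 m0 tdimsD(4)[OF A l K]
      by (simp add: tsmult_nth)
  qed
qed

lemma tid_length[simp]: "length (tid p l) = l" unfolding tid_def by simp
lemma tid_nth: "k < l \<Longrightarrow> tid p l ! k = (if k = 0 then 1\<^sub>m p else 0\<^sub>m p p)"
  unfolding tid_def by simp
lemma tid_tdims: "tdims p p l (tid p l)"
  unfolding tdims_def tid_def by auto

lemma bcirc_tid: assumes l: "0 < l" shows "bcirc (tid p l) = 1\<^sub>m (p*l)"
proof -
  note cI = bcirc_carrier[OF tid_tdims l, of p]
  show ?thesis
  proof (rule eq_matI)
    show "dim_row (bcirc (tid p l)) = dim_row (1\<^sub>m (p*l) :: real mat)"
         "dim_col (bcirc (tid p l)) = dim_col (1\<^sub>m (p*l) :: real mat)" using cI by auto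
    fix r c assume "r < dim_row (1\<^sub>m (p*l) :: real mat)" "c < dim_col (1\<^sub>m (p*l) :: real mat)"
    then have r: "r < p*l" and c: "c < p*l" by auto
    then have p0: "0 < p" by (auto intro: gr0I)
    have I: "r div p < l" using r by (rule div_lt)
    have J: "c div p < l" using c by (rule div_lt)
    have K: "cx l (r div p) (c div p) < l" by (rule cx_lt[OF l])
    have eq: "(r = c) = (r div p = c div p \<and> r mod p = c mod p)"
      by (metis div_mult_mod_eq)
    show "bcirc (tid p l) $$ (r,c) = (1\<^sub>m (p*l) :: real mat) $$ (r,c)"
      using bcirc_idx[OF tid_tdims l r c] K r c p0 cx_zero_iff[OF I J] eq
      by (simp add: tid_nth)
  qed
qed

lemma bcirc_inj: assumes A: "tdims m n l A" and B: "tdims m n l B" and l: "0 < l"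
  and eq: "bcirc A = bcirc B" shows "A = B"
proof (rule nth_equalityI)
  show "length A = length B" using tdimsD[OF A l] tdimsD[OF B l] by simp
  fix k assume "k < length A"
  then have k: "k < l" using tdimsD[OF A l] by simp
  show "A ! k = B ! k"
  proof (rule eq_matI)
    show "dim_row (A!k) = dim_row (B!k)" "dim_col (A!k) = dim_col (B!k)"
      using tdimsD(4)[OF A l k] tdimsD(4)[OF B l k] by auto
    fix a b assume "a < dim_row (B!k)" "b < dim_col (B!k)"
    then have a: "a < m" and b: "b < n" using tdimsD(4)[OF B l k] by auto
    show "A ! k $$ (a,b) = B ! k $$ (a,b)"
      using tent[OF A l k a b] tent[OF B l k a b] eq by simp
  qed
qed

definition mv :: "real mat \<Rightarrow> (nat \<Rightarrow> real) \<Rightarrow> nat \<Rightarrow> real" where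
  "mv M x = (\<lambda>i. \<Sum>j<dim_col M. M $$ (i,j) * x j)"

definition nv :: "nat \<Rightarrow> (nat \<Rightarrow> real) \<Rightarrow> real" where
  "nv N x = L2_set x {..<N}"

definition bil :: "real mat \<Rightarrow> (nat \<Rightarrow> real) \<Rightarrow> (nat \<Rightarrow> real) \<Rightarrow> real" where
  "bil M x y = (\<Sum>i<dim_row M. x i * mv M y i)"

definition psd :: "real mat \<Rightarrow> bool" where
  "psd M \<longleftrightarrow> (\<forall>x. 0 \<le> bil M x x)"

definition symm :: "real mat \<Rightarrow> bool" where
  "symm M \<longleftrightarrow> transpose_mat M = M"

definition opb :: "real mat \<Rightarrow> real \<Rightarrow> bool" where
  "opb M b \<longleftrightarrow> (\<forall>x. nv (dim_row M) (mv M x) \<le> b * nv (dim_col M) x)"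

definition fro :: "real mat \<Rightarrow> real" where
  "fro M = L2_set (\<lambda>(i,j). M $$ (i,j)) ({..<dim_row M} \<times> {..<dim_col M})"

lemma nv_nonneg: "0 \<le> nv N x" unfolding nv_def by (rule L2_set_nonneg)
lemma fro_nonneg: "0 \<le> fro M" unfolding fro_def by (rule L2_set_nonneg)

lemma nv_sq: "(nv N x)\<^sup>2 = (\<Sum>i<N. (x i)\<^sup>2)"
  unfolding nv_def L2_set_def by (simp add: sum_nonneg)

lemma fro_sq: "(fro M)\<^sup>2 = (\<Sum>i<dim_row M. \<Sum>j<dim_col M. (M $$ (i,j))\<^sup>2)"
  unfolding fro_def L2_set_def by (simp add: sum_nonneg sum.cartesian_product case_prod_beta)

lemma nv_cong: "(\<And>i. i < N \<Longrightarrow> x i = y i) \<Longrightarrow> nv N x = nv N y"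
  unfolding nv_def by (intro L2_set_cong) auto

lemma abs_le_nv: "i < N \<Longrightarrow> \<bar>x i\<bar> \<le> nv N x"
proof -
  assume i: "i < N"
  have "\<bar>x i\<bar> \<le> L2_set (\<lambda>i. \<bar>x i\<bar>) {..<N}" using i by (intro member_le_L2_set) auto
  also have "\<dots> = nv N x" unfolding nv_def L2_set_def by simp
  finally show ?thesis .
qed

lemma abs_le_fro: "i < dim_row M \<Longrightarrow> j < dim_col M \<Longrightarrow> \<bar>M $$ (i,j)\<bar> \<le> fro M"
proof -
  assume i: "i < dim_row M" and j: "j < dim_col M"
  have "\<bar>M $$ (i,j)\<bar> \<le> L2_set (\<lambda>(i,j). \<bar>M $$ (i,j)\<bar>) ({..<dim_row M} \<times> {..<dim_col M})"
    using i j member_le_L2_set[of "{..<dim_row M} \<times> {..<dim_col M}" "(i,j)" "\<lambda>(i,j). \<bar>M $$ (i,j)\<bar>"] by auto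
  also have "\<dots> = fro M" unfolding fro_def L2_set_def by (simp add: case_prod_beta)
  finally show ?thesis .
qed

lemma nv_add: "nv N (\<lambda>i. x i + y i) \<le> nv N x + nv N y"
  unfolding nv_def by (rule L2_set_triangle_ineq)

lemma nv_scale: "nv N (\<lambda>i. c * x i) = \<bar>c\<bar> * nv N x"
proof -
  have "\<bar>c\<bar> * nv N x = L2_set (\<lambda>i. \<bar>c\<bar> * x i) {..<N}" unfolding nv_def by (simp add: L2_set_right_distrib)
  also have "\<dots> = nv N (\<lambda>i. c * x i)" unfolding nv_def L2_set_def by (simp add: power_mult_distrib)
  finally show ?thesis by simp
qed

lemma nv_neg: "nv N (\<lambda>i. - x i) = nv N x"
  using nv_scale[of N "-1" x] by simp

lemma nv_diff: "nv N (\<lambda>i. x i - y i) \<le> nv N x + nv N y"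
  using nv_add[of N x "\<lambda>i. - y i"] nv_neg[of N y] by simp

lemma CS_sum: "\<bar>\<Sum>i\<in>A. f i * g i\<bar> \<le> L2_set f A * L2_set g A"
proof -
  have "\<bar>\<Sum>i\<in>A. f i * g i\<bar> \<le> (\<Sum>i\<in>A. \<bar>f i\<bar> * \<bar>g i\<bar>)"
    by (rule order_trans[OF sum_abs]) (simp add: abs_mult)
  also have "\<dots> \<le> L2_set f A * L2_set g A" by (rule L2_set_mult_ineq)
  finally show ?thesis .
qed

lemma CS_nv: "\<bar>\<Sum>i<N. f i * g i\<bar> \<le> nv N f * nv N g"
  unfolding nv_def by (rule CS_sum)

lemma mv_mult: assumes A: "A \<in> carrier_mat a b" and B: "B \<in> carrier_mat b c" and i: "i < a"
  shows "mv (A * B) x i = mv A (mv B x) i"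
proof -
  have "mv (A * B) x i = (\<Sum>j<c. (\<Sum>k<b. A $$ (i,k) * B $$ (k,j)) * x j)"
    unfolding mv_def using A B i by (simp add: scalar_prod_def lessThan_atLeast0)
  also have "\<dots> = (\<Sum>k<b. A $$ (i,k) * (\<Sum>j<c. B $$ (k,j) * x j))"
    by (simp add: sum_distrib_left sum_distrib_right sum.swap[of _ "{..<c}"] mult.assoc)
  also have "\<dots> = mv A (mv B x) i" unfolding mv_def using A B by simp
  finally show ?thesis .
qed

lemma mv_add: assumes A: "A \<in> carrier_mat a b" and B: "B \<in> carrier_mat a b" and i: "i < a"
  shows "mv (A + B) x i = mv A x i + mv B x i"
  unfolding mv_def using A B i by (simp add: sum.distrib distrib_right)

lemma mv_minus: assumes A: "A \<in> carrier_mat a b" and B: "B \<in> carrier_mat a b" and i: "i < a"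
  shows "mv (A - B) x i = mv A x i - mv B x i"
  unfolding mv_def using A B i by (simp add: sum_subtractf left_diff_distrib)

lemma mv_smult: assumes A: "A \<in> carrier_mat a b" and i: "i < a"
  shows "mv (c \<cdot>\<^sub>m A) x i = c * mv A x i"
  unfolding mv_def using A i by (simp add: sum_distrib_left mult.assoc)

lemma mv_one: assumes i: "i < N" shows "mv (1\<^sub>m N) x i = x i"
proof -
  have "mv (1\<^sub>m N) x i = (\<Sum>j<N. if i = j then x j else 0)"
    unfolding mv_def using i by (intro sum.cong) auto
  also have "\<dots> = x i" using i by (simp add: sum.delta)
  finally show ?thesis .
qed

lemma mv_cong: assumes "\<And>j. j < dim_col M \<Longrightarrow> x j = y j" shows "mv M x i = mv M y i"
  unfolding mv_def using assms by (intro sum.cong) auto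

lemma nv_mv_fro: assumes A: "A \<in> carrier_mat a b"
  shows "nv a (mv A x) \<le> fro A * nv b x"
proof -
  have "(nv a (mv A x))\<^sup>2 = (\<Sum>i<a. (mv A x i)\<^sup>2)" by (rule nv_sq)
  also have "\<dots> \<le> (\<Sum>i<a. (\<Sum>j<b. (A $$ (i,j))\<^sup>2) * (nv b x)\<^sup>2)"
  proof (rule sum_mono)
    fix i
    have "\<bar>mv A x i\<bar> \<le> nv b (\<lambda>j. A $$ (i,j)) * nv b x"
      unfolding mv_def using A CS_nv[where N=b and f="\<lambda>j. A $$ (i,j)" and g=x] by simp
    then have "(mv A x i)\<^sup>2 \<le> (nv b (\<lambda>j. A $$ (i,j)) * nv b x)\<^sup>2"
      using abs_le_square_iff[of "mv A x i" "nv b (\<lambda>j. A $$ (i,j)) * nv b x"] nv_nonneg[of b]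
      by (simp add: abs_mult)
    also have "\<dots> = (\<Sum>j<b. (A $$ (i,j))\<^sup>2) * (nv b x)\<^sup>2" by (simp add: power_mult_distrib nv_sq)
    finally show "(mv A x i)\<^sup>2 \<le> (\<Sum>j<b. (A $$ (i,j))\<^sup>2) * (nv b x)\<^sup>2" .
  qed
  also have "\<dots> = (fro A * nv b x)\<^sup>2"
    using A by (simp add: power_mult_distrib fro_sq sum_distrib_right)
  finally have "(nv a (mv A x))\<^sup>2 \<le> (fro A * nv b x)\<^sup>2" .
  then show ?thesis using fro_nonneg nv_nonneg by (meson mult_nonneg_nonneg power2_le_imp_le)
qed

lemma opb_fro: "opb A (fro A)"
  unfolding opb_def using nv_mv_fro[of A "dim_row A" "dim_col A"] by auto

lemma opb_mult: assumes A: "A \<in> carrier_mat a b" and B: "B \<in> carrier_mat b c"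
  and oA: "opb A \<alpha>" and oB: "opb B \<beta>" and a0: "0 \<le> \<alpha>"
  shows "opb (A * B) (\<alpha> * \<beta>)"
  unfolding opb_def
proof
  fix x
  have "nv (dim_row (A * B)) (mv (A * B) x) = nv a (mv A (mv B x))"
    using A B by (auto intro!: nv_cong simp: mv_mult)
  also have "\<dots> \<le> \<alpha> * nv b (mv B x)" using oA A unfolding opb_def by auto
  also have "\<dots> \<le> \<alpha> * (\<beta> * nv c x)" using oB B a0 unfolding opb_def by (auto intro: mult_left_mono)
  finally show "nv (dim_row (A * B)) (mv (A * B) x) \<le> \<alpha> * \<beta> * nv (dim_col (A * B)) x"
    using A B by (simp add: mult.assoc)
qed

lemma opb_add: assumes A: "A \<in> carrier_mat a b" and B: "B \<in> carrier_mat a b"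
  and oA: "opb A \<alpha>" and oB: "opb B \<beta>"
  shows "opb (A + B) (\<alpha> + \<beta>)"
  unfolding opb_def
proof
  fix x
  have "nv (dim_row (A + B)) (mv (A + B) x) = nv a (\<lambda>i. mv A x i + mv B x i)"
    using A B by (auto intro!: nv_cong simp: mv_add)
  also have "\<dots> \<le> nv a (mv A x) + nv a (mv B x)" by (rule nv_add)
  also have "\<dots> \<le> \<alpha> * nv b x + \<beta> * nv b x" using oA oB A B unfolding opb_def by (auto intro: add_mono)
  finally show "nv (dim_row (A + B)) (mv (A + B) x) \<le> (\<alpha> + \<beta>) * nv (dim_col (A + B)) x"
    using A B by (simp add: distrib_right)
qed

lemma opb_minus: assumes A: "A \<in> carrier_mat a b" and B: "B \<in> carrier_mat a b"
  and oA: "opb A \<alpha>" and oB: "opb B \<beta>"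
  shows "opb (A - B) (\<alpha> + \<beta>)"
  unfolding opb_def
proof
  fix x
  have "nv (dim_row (A - B)) (mv (A - B) x) = nv a (\<lambda>i. mv A x i - mv B x i)"
    using A B by (auto intro!: nv_cong simp: mv_minus)
  also have "\<dots> \<le> nv a (mv A x) + nv a (mv B x)" by (rule nv_diff)
  also have "\<dots> \<le> \<alpha> * nv b x + \<beta> * nv b x" using oA oB A B unfolding opb_def by (auto intro: add_mono)
  finally show "nv (dim_row (A - B)) (mv (A - B) x) \<le> (\<alpha> + \<beta>) * nv (dim_col (A - B)) x"
    using A B by (simp add: distrib_right)
qed

lemma opb_smult: assumes A: "A \<in> carrier_mat a b" and oA: "opb A \<alpha>"
  shows "opb (c \<cdot>\<^sub>m A) (\<bar>c\<bar> * \<alpha>)"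
  unfolding opb_def
proof
  fix x
  have "nv (dim_row (c \<cdot>\<^sub>m A)) (mv (c \<cdot>\<^sub>m A) x) = nv a (\<lambda>i. c * mv A x i)"
    using A by (auto intro!: nv_cong simp: mv_smult)
  also have "\<dots> = \<bar>c\<bar> * nv a (mv A x)" by (rule nv_scale)
  also have "\<dots> \<le> \<bar>c\<bar> * (\<alpha> * nv b x)" using oA A unfolding opb_def by (auto intro: mult_left_mono)
  finally show "nv (dim_row (c \<cdot>\<^sub>m A)) (mv (c \<cdot>\<^sub>m A) x) \<le> \<bar>c\<bar> * \<alpha> * nv (dim_col (c \<cdot>\<^sub>m A)) x"
    using A by (simp add: mult.assoc)
qed

lemma opb_mono: "opb A \<alpha> \<Longrightarrow> \<alpha> \<le> \<beta> \<Longrightarrow> opb A \<beta>"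
  unfolding opb_def by (meson mult_right_mono nv_nonneg order_trans)

lemma opb_entry: assumes oA: "opb A \<alpha>" and i: "i < dim_row A" and j: "j < dim_col A"
  shows "\<bar>A $$ (i,j)\<bar> \<le> \<alpha>"
proof -
  define x where "x = (\<lambda>k. if k = j then 1 else (0::real))"
  have "mv A x i = A $$ (i,j)" unfolding mv_def x_def using j
    by (simp add: if_distrib[of "\<lambda>v. A $$ (i, _) * v"] sum.delta' lessThan_def cong: if_cong)
  moreover have "nv (dim_col A) x = 1"
  proof -
    have "(nv (dim_col A) x)\<^sup>2 = 1" unfolding nv_sq x_def using j
      by (simp add: if_distrib[of "\<lambda>v. v\<^sup>2"] sum.delta' lessThan_def cong: if_cong)
    then show ?thesis using nv_nonneg[of "dim_col A" x] power2_eq_1_iff by force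
  qed
  ultimately show ?thesis using abs_le_nv[OF i, of "mv A x"] oA unfolding opb_def
    by (metis mult.right_neutral order_trans)
qed

lemma bil_expand: assumes M: "M \<in> carrier_mat N N"
  shows "bil M x y = (\<Sum>i<N. \<Sum>j<N. x i * M $$ (i,j) * y j)"
  unfolding bil_def mv_def using M by (simp add: sum_distrib_left mult.assoc)

lemma symmD: assumes M: "M \<in> carrier_mat N N" and s: "symm M" and i: "i < N" and j: "j < N"
  shows "M $$ (i,j) = M $$ (j,i)"
proof -
  have "transpose_mat M $$ (j,i) = M $$ (i,j)" using M i j by simp
  then show ?thesis using s unfolding symm_def by simp
qed

lemma bil_sym: assumes M: "M \<in> carrier_mat N N" and s: "symm M"
  shows "bil M x y = bil M y x"
proof -
  have "bil M x y = (\<Sum>i<N. \<Sum>j<N. x i * M $$ (i,j) * y j)" by (rule bil_expand[OF M])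
  also have "\<dots> = (\<Sum>j<N. \<Sum>i<N. x i * M $$ (i,j) * y j)" by (rule sum.swap)
  also have "\<dots> = (\<Sum>j<N. \<Sum>i<N. y j * M $$ (j,i) * x i)"
    using symmD[OF M s] by (intro sum.cong refl) (simp add: mult.commute mult.left_commute)
  also have "\<dots> = bil M y x" by (rule bil_expand[OF M, symmetric])
  finally show ?thesis .
qed

lemma bil_lin: assumes M: "M \<in> carrier_mat N N"
  shows "bil M (\<lambda>i. x i + t * y i) (\<lambda>i. x i + t * y i) = bil M x x + t * bil M x y + t * bil M y x + t\<^sup>2 * bil M y y"
  unfolding bil_expand[OF M]
  by (simp add: algebra_simps sum.distrib sum_distrib_left power2_eq_square)

lemma quad_disc: fixes a b c :: real
  assumes h: "\<And>t. 0 \<le> c + 2*t*b + t\<^sup>2*a" and a0: "0 \<le> a" shows "b\<^sup>2 \<le> a*c"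
proof (cases "a = 0")
  case True
  show ?thesis
  proof (cases "b = 0")
    case False
    have "0 \<le> c + 2*(-(c+1)/(2*b))*b + (-(c+1)/(2*b))\<^sup>2*a" by (rule h)
    then show ?thesis using True False by (simp add: field_simps)
  qed (use True h[of 0] in simp)
next
  case False
  with a0 have a: "0 < a" by simp
  have "0 \<le> c + 2*(-b/a)*b + (-b/a)\<^sup>2*a" by (rule h)
  then have "0 \<le> c - b\<^sup>2/a" using a by (simp add: field_simps power2_eq_square)
  then show ?thesis using a by (simp add: field_simps)
qed

lemma sq_cancel: fixes u K :: real assumes "u\<^sup>2 * u\<^sup>2 \<le> u\<^sup>2 * K" "u \<noteq> 0" shows "u\<^sup>2 \<le> K"
proof -
  have "0 < u\<^sup>2" using assms(2) by simp
  then show ?thesis using assms(1) mult_le_cancel_left_pos[of "u\<^sup>2" "u\<^sup>2" K] by simp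
qed

lemma bil_CS: assumes M: "M \<in> carrier_mat N N" and s: "symm M" and p: "psd M"
  shows "(bil M x y)\<^sup>2 \<le> bil M x x * bil M y y"
proof -
  have "\<And>t. 0 \<le> bil M x x + 2*t*bil M x y + t\<^sup>2*bil M y y"
  proof -
    fix t
    have "0 \<le> bil M (\<lambda>i. x i + t * y i) (\<lambda>i. x i + t * y i)" using p unfolding psd_def by simp
    then show "0 \<le> bil M x x + 2*t*bil M x y + t\<^sup>2*bil M y y"
      unfolding bil_lin[OF M] bil_sym[OF M s, of y x] by simp
  qed
  from quad_disc[OF this] p show ?thesis unfolding psd_def by (simp add: mult.commute)
qed

lemma bil_self_mv: assumes M: "M \<in> carrier_mat N N"
  shows "bil M (mv M x) x = (nv N (mv M x))\<^sup>2"
  unfolding bil_def nv_sq using M by (simp add: power2_eq_square)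

lemma bil_le_nv: assumes M: "M \<in> carrier_mat N N" and oM: "opb M \<beta>"
  shows "bil M y y \<le> \<beta> * (nv N y)\<^sup>2"
proof -
  have "bil M y y \<le> \<bar>\<Sum>i<N. y i * mv M y i\<bar>" unfolding bil_def using M by simp
  also have "\<dots> \<le> nv N y * nv N (mv M y)" by (rule CS_nv)
  also have "\<dots> \<le> nv N y * (\<beta> * nv N y)" using oM M unfolding opb_def
    by (auto intro: mult_left_mono nv_nonneg)
  finally show ?thesis by (simp add: power2_eq_square mult_ac)
qed

lemma opb_psd: assumes M: "M \<in> carrier_mat N N" and s: "symm M" and p: "psd M"
  and g: "\<And>x. bil M x x \<le> \<gamma> * (nv N x)\<^sup>2" and g0: "0 \<le> \<gamma>"
  shows "opb M \<gamma>"
  unfolding opb_def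
proof
  fix x
  let ?y = "mv M x"
  have "((nv N ?y)\<^sup>2)\<^sup>2 = (bil M ?y x)\<^sup>2" using bil_self_mv[OF M] by simp
  also have "\<dots> \<le> bil M ?y ?y * bil M x x" by (rule bil_CS[OF M s p])
  also have "\<dots> \<le> (\<gamma> * (nv N ?y)\<^sup>2) * (\<gamma> * (nv N x)\<^sup>2)"
    using g p unfolding psd_def by (intro mult_mono) (auto intro: mult_nonneg_nonneg g0)
  finally have h0: "((nv N ?y)\<^sup>2)\<^sup>2 \<le> (\<gamma> * (nv N ?y)\<^sup>2) * (\<gamma> * (nv N x)\<^sup>2)" .
  have h: "(nv N ?y)\<^sup>2 * (nv N ?y)\<^sup>2 \<le> (nv N ?y)\<^sup>2 * (\<gamma> * nv N x)\<^sup>2"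
    using h0 by (simp add: power2_eq_square power_mult_distrib mult_ac)
  have "nv N ?y \<le> \<gamma> * nv N x"
  proof (cases "nv N ?y = 0")
    case True then show ?thesis using g0 nv_nonneg by simp
  next
    case False
    then have "0 < (nv N ?y)\<^sup>2" using nv_nonneg by simp
    then have "(nv N ?y)\<^sup>2 \<le> (\<gamma> * nv N x)\<^sup>2" using sq_cancel[OF h False] by simp
    then show ?thesis using g0 nv_nonneg by (meson mult_nonneg_nonneg power2_le_imp_le)
  qed
  then show "nv (dim_row M) (mv M x) \<le> \<gamma> * nv (dim_col M) x" using M by simp
qed

lemma pd_from_sq: assumes M: "M \<in> carrier_mat N N" and s: "symm M" and p: "psd M"
  and g: "\<And>x. nv N x \<le> nv N (mv M x)" and oM: "opb M \<beta>" and b0: "0 < \<beta>"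
  shows "(nv N x)\<^sup>2 \<le> \<beta> * bil M x x"
proof -
  let ?y = "mv M x"
  have "((nv N ?y)\<^sup>2)\<^sup>2 = (bil M ?y x)\<^sup>2" using bil_self_mv[OF M] by simp
  also have "\<dots> \<le> bil M ?y ?y * bil M x x" by (rule bil_CS[OF M s p])
  also have "\<dots> \<le> (\<beta> * (nv N ?y)\<^sup>2) * bil M x x"
    using bil_le_nv[OF M oM] p unfolding psd_def by (intro mult_right_mono) auto
  finally have h0: "((nv N ?y)\<^sup>2)\<^sup>2 \<le> (\<beta> * (nv N ?y)\<^sup>2) * bil M x x" .
  have h: "(nv N ?y)\<^sup>2 * (nv N ?y)\<^sup>2 \<le> (nv N ?y)\<^sup>2 * (\<beta> * bil M x x)"
    using h0 by (simp add: power2_eq_square mult_ac)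
  have "(nv N ?y)\<^sup>2 \<le> \<beta> * bil M x x"
  proof (cases "nv N ?y = 0")
    case True then show ?thesis using b0 p unfolding psd_def by simp
  next
    case False
    then have "0 < (nv N ?y)\<^sup>2" using nv_nonneg by simp
    then show ?thesis using sq_cancel[OF h False] by simp
  qed
  moreover have "(nv N x)\<^sup>2 \<le> (nv N ?y)\<^sup>2" using g[of x] nv_nonneg by (simp add: power_mono)
  ultimately show ?thesis by linarith
qed

lemma fro_cong_sum: "fro M = L2_set (\<lambda>(i,j). M $$ (i,j)) ({..<dim_row M} \<times> {..<dim_col M})"
  unfolding fro_def ..

lemma fro_add: assumes A: "A \<in> carrier_mat a b" and B: "B \<in> carrier_mat a b"
  shows "fro (A + B) \<le> fro A + fro B"
proof -
  have "fro (A + B) = L2_set (\<lambda>ij. (\<lambda>(i,j). A $$ (i,j)) ij + (\<lambda>(i,j). B $$ (i,j)) ij) ({..<a} \<times> {..<b})"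
    unfolding fro_def using A B by (intro L2_set_cong) auto
  also have "\<dots> \<le> fro A + fro B" unfolding fro_def using A B
    by (simp add: L2_set_triangle_ineq del: case_prod_conv split_paired_all)
  finally show ?thesis .
qed

lemma fro_smult: assumes A: "A \<in> carrier_mat a b" shows "fro (c \<cdot>\<^sub>m A) = \<bar>c\<bar> * fro A"
proof -
  have "fro (c \<cdot>\<^sub>m A) = L2_set (\<lambda>ij. \<bar>c\<bar> * (\<lambda>(i,j). A $$ (i,j)) ij) ({..<a} \<times> {..<b})"
    unfolding fro_def L2_set_def using A by (intro arg_cong[where f=sqrt] sum.cong) (auto simp: power_mult_distrib)
  also have "\<dots> = \<bar>c\<bar> * fro A" unfolding fro_def using A by (simp add: L2_set_right_distrib)
  finally show ?thesis .
qed

lemma fro_uminus: assumes A: "A \<in> carrier_mat a b" shows "fro (- A) = fro A"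
proof -
  have "- A = (-1) \<cdot>\<^sub>m A" using A by (auto intro!: eq_matI)
  then show ?thesis using fro_smult[OF A, of "-1"] by simp
qed

lemma fro_minus: assumes A: "A \<in> carrier_mat a b" and B: "B \<in> carrier_mat a b"
  shows "fro (A - B) \<le> fro A + fro B"
proof -
  have "A - B = A + (- B)" using A B by (auto intro!: eq_matI)
  then show ?thesis using fro_add[OF A, of "- B"] fro_uminus[OF B] B by simp
qed

lemma fro_mult: assumes A: "A \<in> carrier_mat a b" and B: "B \<in> carrier_mat b c"
  shows "fro (A * B) \<le> fro A * fro B"
proof -
  have "(fro (A * B))\<^sup>2 = (\<Sum>i<a. \<Sum>j<c. ((A*B) $$ (i,j))\<^sup>2)" using A B by (simp add: fro_sq)
  also have "\<dots> = (\<Sum>j<c. \<Sum>i<a. ((A*B) $$ (i,j))\<^sup>2)" by (rule sum.swap)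
  also have "\<dots> = (\<Sum>j<c. (nv a (mv A (\<lambda>k. B $$ (k,j))))\<^sup>2)"
  proof (intro sum.cong refl)
    fix j assume j: "j \<in> {..<c}"
    show "(\<Sum>i<a. ((A*B) $$ (i,j))\<^sup>2) = (nv a (mv A (\<lambda>k. B $$ (k,j))))\<^sup>2"
      unfolding nv_sq mv_def using A B j by (intro sum.cong refl) (simp add: scalar_prod_def lessThan_atLeast0)
  qed
  also have "\<dots> \<le> (\<Sum>j<c. (fro A)\<^sup>2 * (nv b (\<lambda>k. B $$ (k,j)))\<^sup>2)"
  proof (rule sum_mono)
    fix j
    have "nv a (mv A (\<lambda>k. B $$ (k,j))) \<le> fro A * nv b (\<lambda>k. B $$ (k,j))" by (rule nv_mv_fro[OF A])
    then show "(nv a (mv A (\<lambda>k. B $$ (k,j))))\<^sup>2 \<le> (fro A)\<^sup>2 * (nv b (\<lambda>k. B $$ (k,j)))\<^sup>2"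
      using nv_nonneg by (metis power_mono power_mult_distrib)
  qed
  also have "\<dots> = (fro A)\<^sup>2 * (\<Sum>j<c. \<Sum>k<b. (B $$ (k,j))\<^sup>2)"
    by (simp add: nv_sq sum_distrib_left)
  also have "\<dots> = (fro A)\<^sup>2 * (\<Sum>k<b. \<Sum>j<c. (B $$ (k,j))\<^sup>2)"
    by (subst sum.swap) (rule refl)
  also have "\<dots> = (fro A)\<^sup>2 * (fro B)\<^sup>2"
    using B by (simp add: fro_sq)
  finally have "(fro (A * B))\<^sup>2 \<le> (fro A * fro B)\<^sup>2" by (simp add: power_mult_distrib)
  then show ?thesis using fro_nonneg by (meson mult_nonneg_nonneg power2_le_imp_le)
qed

definition minner :: "real mat \<Rightarrow> real mat \<Rightarrow> real" where
  "minner E F = (\<Sum>i<dim_row E. \<Sum>j<dim_col E. E $$ (i,j) * F $$ (i,j))"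

lemma minner_CS: assumes E: "E \<in> carrier_mat a b" and F: "F \<in> carrier_mat a b"
  shows "minner E F \<le> fro E * fro F"
proof -
  have "minner E F = (\<Sum>ij\<in>{..<a} \<times> {..<b}. (\<lambda>(i,j). E $$ (i,j)) ij * (\<lambda>(i,j). F $$ (i,j)) ij)"
    unfolding minner_def using E by (simp add: sum.cartesian_product case_prod_beta)
  also have "\<dots> \<le> \<bar>\<dots>\<bar>" by simp
  also have "\<dots> \<le> L2_set (\<lambda>(i,j). E $$ (i,j)) ({..<a} \<times> {..<b}) * L2_set (\<lambda>(i,j). F $$ (i,j)) ({..<a} \<times> {..<b})"
    by (rule CS_sum)
  also have "\<dots> = fro E * fro F" unfolding fro_def using carrier_matD[OF E] carrier_matD[OF F] by (simp only:)
  finally show ?thesis .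
qed

lemma minner_add: assumes E: "E \<in> carrier_mat a b" and F: "F \<in> carrier_mat a b" and G: "G \<in> carrier_mat a b"
  shows "minner E (F + G) = minner E F + minner E G"
  unfolding minner_def using E F G by (simp add: distrib_left sum.distrib)

lemma minner_left: assumes Q: "Q \<in> carrier_mat N N" and E: "E \<in> carrier_mat N N"
  shows "minner E (Q * E) = (\<Sum>j<N. bil Q (\<lambda>i. E $$ (i,j)) (\<lambda>i. E $$ (i,j)))"
proof -
  have "minner E (Q * E) = (\<Sum>i<N. \<Sum>j<N. E $$ (i,j) * (\<Sum>k<N. Q $$ (i,k) * E $$ (k,j)))"
    unfolding minner_def using Q E by (simp add: scalar_prod_def lessThan_atLeast0)
  also have "\<dots> = (\<Sum>j<N. \<Sum>i<N. E $$ (i,j) * (\<Sum>k<N. Q $$ (i,k) * E $$ (k,j)))" by (rule sum.swap)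
  also have "\<dots> = (\<Sum>j<N. bil Q (\<lambda>i. E $$ (i,j)) (\<lambda>i. E $$ (i,j)))"
    unfolding bil_def mv_def using Q by simp
  finally show ?thesis .
qed

lemma minner_right: assumes Q: "Q \<in> carrier_mat N N" and E: "E \<in> carrier_mat N N"
  shows "minner E (E * Q) = (\<Sum>i<N. bil Q (\<lambda>j. E $$ (i,j)) (\<lambda>j. E $$ (i,j)))"
proof -
  have "minner E (E * Q) = (\<Sum>i<N. \<Sum>j<N. E $$ (i,j) * (\<Sum>k<N. E $$ (i,k) * Q $$ (k,j)))"
    unfolding minner_def using Q E by (simp add: scalar_prod_def lessThan_atLeast0)
  also have "\<dots> = (\<Sum>i<N. \<Sum>k<N. E $$ (i,k) * (\<Sum>j<N. Q $$ (k,j) * E $$ (i,j)))"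
  proof (rule sum.cong[OF refl])
    fix i
    show "(\<Sum>j<N. E $$ (i,j) * (\<Sum>k<N. E $$ (i,k) * Q $$ (k,j))) = (\<Sum>k<N. E $$ (i,k) * (\<Sum>j<N. Q $$ (k,j) * E $$ (i,j)))"
    proof -
      have "(\<Sum>j<N. E $$ (i,j) * (\<Sum>k<N. E $$ (i,k) * Q $$ (k,j))) = (\<Sum>j<N. \<Sum>k<N. E $$ (i,j) * (E $$ (i,k) * Q $$ (k,j)))"
        by (simp add: sum_distrib_left)
      also have "\<dots> = (\<Sum>k<N. \<Sum>j<N. E $$ (i,j) * (E $$ (i,k) * Q $$ (k,j)))" by (rule sum.swap)
      also have "\<dots> = (\<Sum>k<N. E $$ (i,k) * (\<Sum>j<N. Q $$ (k,j) * E $$ (i,j)))"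
        by (simp add: sum_distrib_left mult_ac)
      finally show ?thesis .
    qed
  qed
  also have "\<dots> = (\<Sum>i<N. bil Q (\<lambda>j. E $$ (i,j)) (\<lambda>j. E $$ (i,j)))"
    unfolding bil_def mv_def using Q by simp
  finally show ?thesis .
qed

lemma key_est: assumes E: "E \<in> carrier_mat N N" and Q1: "Q1 \<in> carrier_mat N N" and p1: "psd Q1"
  and Q0: "Q0 \<in> carrier_mat N N" and c: "0 < c" and pd: "\<And>x. c * (nv N x)\<^sup>2 \<le> bil Q0 x x"
  shows "c * fro E \<le> fro (Q1 * E + E * Q0)"
proof -
  have "c * (fro E)\<^sup>2 = (\<Sum>i<N. c * (nv N (\<lambda>j. E $$ (i,j)))\<^sup>2)"
    using E by (simp add: fro_sq nv_sq sum_distrib_left)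
  also have "\<dots> \<le> (\<Sum>i<N. bil Q0 (\<lambda>j. E $$ (i,j)) (\<lambda>j. E $$ (i,j)))" by (intro sum_mono pd)
  also have "\<dots> = minner E (E * Q0)" using minner_right[OF Q0 E] by simp
  also have "\<dots> \<le> minner E (Q1 * E) + minner E (E * Q0)"
    using minner_left[OF Q1 E] p1 unfolding psd_def by (simp add: sum_nonneg)
  also have "\<dots> = minner E (Q1 * E + E * Q0)"
    using Q1 E Q0 by (intro minner_add[symmetric, of _ N N]) auto
  also have "\<dots> \<le> fro E * fro (Q1 * E + E * Q0)"
    using Q1 E Q0 by (intro minner_CS[of _ N N]) auto
  finally have h: "c * (fro E)\<^sup>2 \<le> fro E * fro (Q1 * E + E * Q0)" .
  show ?thesis
  proof (cases "fro E = 0")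
    case True then show ?thesis using fro_nonneg by simp
  next
    case False
    then have "0 < fro E" using fro_nonneg[of E] by linarith
    then show ?thesis using h mult_le_cancel_left_pos[of "fro E" "c * fro E" "fro (Q1 * E + E * Q0)"]
      by (simp add: power2_eq_square mult_ac)
  qed
qed

lemma bil_add_mat: assumes A: "A \<in> carrier_mat N N" and B: "B \<in> carrier_mat N N"
  shows "bil (A + B) x y = bil A x y + bil B x y"
  unfolding bil_def using A B by (simp add: mv_add[OF A B] distrib_left sum.distrib)

lemma bil_minus_mat: assumes A: "A \<in> carrier_mat N N" and B: "B \<in> carrier_mat N N"
  shows "bil (A - B) x y = bil A x y - bil B x y"
  unfolding bil_def using A B by (simp add: mv_minus[OF A B] right_diff_distrib sum_subtractf)

lemma bil_smult_mat: assumes A: "A \<in> carrier_mat N N"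
  shows "bil (c \<cdot>\<^sub>m A) x y = c * bil A x y"
  unfolding bil_def using A by (simp add: mv_smult[OF A] sum_distrib_left mult_ac)

lemma bil_one: "bil (1\<^sub>m N) x x = (nv N x)\<^sup>2"
  unfolding bil_def nv_sq by (simp add: mv_one power2_eq_square)

lemma bil_cong: assumes M: "M \<in> carrier_mat N N" and xy: "\<And>i. i < N \<Longrightarrow> x i = x' i" "\<And>i. i < N \<Longrightarrow> y i = y' i"
  shows "bil M x y = bil M x' y'"
  unfolding bil_def using M xy by (auto intro!: sum.cong simp: mv_cong[of M y y'])

lemma bil_gram: assumes B: "B \<in> carrier_mat a N"
  shows "bil (transpose_mat B * B) x x = (nv a (mv B x))\<^sup>2"
proof -
  have Bt: "transpose_mat B \<in> carrier_mat N a" using B by simp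
  have "bil (transpose_mat B * B) x x = (\<Sum>i<N. x i * mv (transpose_mat B) (mv B x) i)"
    unfolding bil_def using B Bt by (simp add: mv_mult[OF Bt B])
  also have "\<dots> = (\<Sum>i<N. \<Sum>r<a. x i * (B $$ (r,i) * mv B x r))"
    unfolding mv_def[of "transpose_mat B"] using B by (simp add: sum_distrib_left)
  also have "\<dots> = (\<Sum>r<a. \<Sum>i<N. x i * (B $$ (r,i) * mv B x r))" by (rule sum.swap)
  also have "\<dots> = (\<Sum>r<a. mv B x r * mv B x r)"
    unfolding mv_def[of B] using B by (simp add: sum_distrib_left sum_distrib_right mult_ac)
  also have "\<dots> = (nv a (mv B x))\<^sup>2" unfolding nv_sq by (simp add: power2_eq_square)
  finally show ?thesis .
qed

lemma unfold_fold: fixes M :: "real mat" assumes M: "M \<in> carrier_mat (m*l) n" and l: "0 < l"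
  shows "unfold (fold l M) = M"
proof -
  have nth0: "fold l M ! 0 = mat m n (\<lambda>(i,j). M $$ (i, j))" using M l by (simp add: fold_nth)
  show ?thesis
  proof (rule eq_matI)
    show "dim_row (unfold (fold l M)) = dim_row M" "dim_col (unfold (fold l M)) = dim_col M"
      unfolding unfold_def Let_def using M nth0 by auto
    fix r c assume r: "r < dim_row M" and c: "c < dim_col M"
    have rm: "r < m*l" "c < n" using r c M by auto
    then have m0: "0 < m" by (auto intro: gr0I)
    have rd: "r div m < l" using rm(1) by (rule div_lt)
    have "unfold (fold l M) $$ (r,c) = fold l M ! (r div m) $$ (r mod m, c)"
      unfolding unfold_def Let_def using nth0 rm by simp
    also have "\<dots> = M $$ (r div m * m + r mod m, c)" using rd M m0 rm by (simp add: fold_nth)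
    also have "\<dots> = M $$ (r,c)" by simp
    finally show "unfold (fold l M) $$ (r,c) = M $$ (r,c)" .
  qed
qed

lemma fold_unfold: assumes X: "tdims m n l X" and l: "0 < l"
  shows "fold l (unfold X) = X"
proof (rule nth_equalityI)
  show "length (fold l (unfold X)) = length X" using tdimsD[OF X l] by simp
  fix k assume "k < length (fold l (unfold X))"
  then have k: "k < l" by simp
  note U = unfold_carrier[OF X l]
  show "fold l (unfold X) ! k = X ! k"
  proof (rule eq_matI)
    show "dim_row (fold l (unfold X) ! k) = dim_row (X ! k)" "dim_col (fold l (unfold X) ! k) = dim_col (X ! k)"
      using U k l tdimsD(4)[OF X l k] by (auto simp: fold_nth)
    fix i j assume "i < dim_row (X ! k)" "j < dim_col (X ! k)"
    then have i: "i < m" and j: "j < n" using tdimsD(4)[OF X l k] by auto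
    have ki: "k*m+i < m*l" using k i by (rule idx_lt)
    show "fold l (unfold X) ! k $$ (i,j) = X ! k $$ (i,j)"
      using U k l i j unfold_idx[OF X l ki j] by (simp add: fold_nth)
  qed
qed

lemma tprod_alt: "A \<star> B = fold (length A) (bcirc A * unfold B)" unfolding tprod_def ..

lemma tinv_bcirc: assumes P: "tdims p p l P" and l: "0 < l"
  and B: "B \<in> carrier_mat (p*l) (p*l)" and PB: "bcirc P * B = 1\<^sub>m (p*l)" and BP: "B * bcirc P = 1\<^sub>m (p*l)"
  shows "tdims p p l (tinv p l P)" "bcirc (tinv p l P) = B"
proof -
  note Pm = bcirc_carrier[OF P l]
  note Ui = unfold_carrier[OF tid_tdims l, of p]
  define T where "T = fold l (B * unfold (tid p l))"
  have BU: "B * unfold (tid p l) \<in> carrier_mat (p*l) p" using B Ui by simp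
  have T: "tdims p p l T" unfolding T_def tdims_def using BU B Ui l by (auto simp: fold_def)
  have lP: "length P = l" using tdimsD[OF P l] by simp
  have uT: "unfold T = B * unfold (tid p l)" unfolding T_def by (rule unfold_fold[OF BU l])
  have "P \<star> T = fold l (bcirc P * (B * unfold (tid p l)))" unfolding tprod_def lP uT ..
  also have "bcirc P * (B * unfold (tid p l)) = unfold (tid p l)"
    using Pm B Ui PB by (simp add: assoc_mult_mat[symmetric, of _ "p*l" "p*l" _ "p*l" _ p])
  finally have PT: "P \<star> T = tid p l" using fold_unfold[OF tid_tdims l] by simp
  have PTm: "bcirc P * bcirc T = 1\<^sub>m (p*l)" using bcirc_tprod[OF P T l] PT bcirc_tid[OF l] by simp
  note Tm = bcirc_carrier[OF T l]
  have bT: "bcirc T = B"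
  proof -
    have "bcirc T = (B * bcirc P) * bcirc T" using BP Tm by simp
    also have "\<dots> = B * (bcirc P * bcirc T)" using B Pm Tm by (simp add: assoc_mult_mat)
    also have "\<dots> = B" using PTm B by simp
    finally show ?thesis .
  qed
  have TP: "T \<star> P = tid p l"
    by (rule bcirc_inj[OF tprod_tdims[OF T P l] tid_tdims l]) (simp add: bcirc_tprod[OF T P l] bT BP bcirc_tid[OF l])
  have uniq: "T' = T" if T': "tdims p p l T'" and PT': "P \<star> T' = tid p l" for T'
  proof -
    note T'm = bcirc_carrier[OF T' l]
    have h: "bcirc P * bcirc T' = 1\<^sub>m (p*l)" using bcirc_tprod[OF P T' l] PT' bcirc_tid[OF l] by simp
    have "bcirc T' = (B * bcirc P) * bcirc T'" using BP T'm by simp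
    also have "\<dots> = B * (bcirc P * bcirc T')" using B Pm T'm by (simp add: assoc_mult_mat)
    also have "\<dots> = B" using h B by simp
    finally show ?thesis using bcirc_inj[OF T' T l] bT by simp
  qed
  have "tinv p l P = T" unfolding tinv_def
  proof (rule the_equality)
    show "tdims p p l T \<and> P \<star> T = tid p l \<and> T \<star> P = tid p l" using T PT TP by simp
  next
    fix T' assume "tdims p p l T' \<and> P \<star> T' = tid p l \<and> T' \<star> P = tid p l"
    then show "T' = T" using uniq by blast
  qed
  then show "tdims p p l (tinv p l P)" "bcirc (tinv p l P) = B" using T bT by auto
qed

definition zvec :: "nat \<Rightarrow> tensor \<Rightarrow> nat \<Rightarrow> real" where
  "zvec p Z = (\<lambda>r. Z ! (r div p) $$ (r mod p, 0))"

lemma tinner_bil: assumes S: "tdims p p l S" and Z: "tdims p 1 l Z" and l: "0 < l"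
  shows "tinner Z (S \<star> Z) = bil (bcirc S) (zvec p Z) (zvec p Z)"
proof -
  note Sm = bcirc_carrier[OF S l]
  have lZ: "length Z = l" using tdimsD[OF Z l] by simp
  have "tinner Z (S \<star> Z) = (\<Sum>k<l. \<Sum>i<p. Z ! k $$ (i,0) * (S \<star> Z) ! k $$ (i,0))"
    unfolding tinner_def lZ
  proof (rule sum.cong[OF refl])
    fix k assume "k \<in> {..<l}"
    then have "Z ! k \<in> carrier_mat p 1" using tdimsD(4)[OF Z l] by simp
    then have d: "dim_row (Z ! k) = p" "dim_col (Z ! k) = 1" by auto
    show "(\<Sum>i<dim_row (Z ! k). \<Sum>j<dim_col (Z ! k). Z ! k $$ (i, j) * (S \<star> Z) ! k $$ (i, j)) =
          (\<Sum>i<p. Z ! k $$ (i,0) * (S \<star> Z) ! k $$ (i,0))"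
      unfolding d by simp
  qed
  also have "\<dots> = (\<Sum>k<l. \<Sum>i<p. zvec p Z (k*p+i) * mv (bcirc S) (zvec p Z) (k*p+i))"
  proof (intro sum.cong refl)
    fix k i assume k: "k \<in> {..<l}" and i: "i \<in> {..<p}"
    have ki: "k*p+i < p*l" using k i by (intro idx_lt) auto
    have "(S \<star> Z) ! k $$ (i,0) = (\<Sum>s<p*l. bcirc S $$ (k*p+i, s) * unfold Z $$ (s,0))"
      using k i by (intro tprod_idx[OF S Z l]) auto
    also have "\<dots> = mv (bcirc S) (zvec p Z) (k*p+i)"
    proof -
      have dc: "dim_col (bcirc S) = p*l" using Sm by simp
      show ?thesis unfolding mv_def zvec_def dc by (intro sum.cong refl) (simp add: unfold_idx[OF Z l])
    qed
    finally show "Z ! k $$ (i,0) * (S \<star> Z) ! k $$ (i,0) = zvec p Z (k*p+i) * mv (bcirc S) (zvec p Z) (k*p+i)"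
      unfolding zvec_def using i by simp
  qed
  also have "\<dots> = (\<Sum>r<p*l. zvec p Z r * mv (bcirc S) (zvec p Z) r)" by (rule sum_split_mult[symmetric])
  also have "\<dots> = bil (bcirc S) (zvec p Z) (zvec p Z)" unfolding bil_def using Sm by simp
  finally show ?thesis .
qed

definition ztens :: "nat \<Rightarrow> nat \<Rightarrow> (nat \<Rightarrow> real) \<Rightarrow> tensor" where
  "ztens p l x = map (\<lambda>k. mat p 1 (\<lambda>(i,j). x (k*p+i))) [0..<l]"

lemma ztens_tdims: "tdims p 1 l (ztens p l x)"
  unfolding tdims_def ztens_def by auto

lemma zvec_ztens: assumes r: "r < p*l" shows "zvec p (ztens p l x) r = x r"
proof -
  have p0: "0 < p" using r by (auto intro: gr0I)
  have "r div p < l" using r by (rule div_lt)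
  then show ?thesis unfolding zvec_def ztens_def using p0 by simp
qed

lemma tpsd_iff: assumes S: "tdims p p l S" and l: "0 < l"
  shows "tpsd p l S \<longleftrightarrow> psd (bcirc S)"
proof
  assume t: "tpsd p l S"
  show "psd (bcirc S)" unfolding psd_def
  proof
    fix x
    have "bil (bcirc S) x x = bil (bcirc S) (zvec p (ztens p l x)) (zvec p (ztens p l x))"
      using bcirc_carrier[OF S l] by (intro bil_cong) (auto simp: zvec_ztens)
    also have "\<dots> = tinner (ztens p l x) (S \<star> ztens p l x)"
      by (rule tinner_bil[OF S ztens_tdims l, symmetric])
    finally show "0 \<le> bil (bcirc S) x x" using t ztens_tdims unfolding tpsd_def by simp
  qed
next
  assume "psd (bcirc S)"
  then show "tpsd p l S" unfolding tpsd_def psd_def using tinner_bil[OF S _ l] by simp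
qed

lemma tsym_iff: assumes S: "tdims p p l S" and l: "0 < l"
  shows "tsym S \<longleftrightarrow> symm (bcirc S)"
proof -
  have St: "tdims p p l (ttrans S)" using ttrans_tdims[OF S l] .
  have "tsym S \<longleftrightarrow> bcirc S = bcirc (ttrans S)"
    unfolding tsym_def using bcirc_inj[OF S St l] by auto
  also have "\<dots> \<longleftrightarrow> symm (bcirc S)" unfolding symm_def bcirc_ttrans[OF S l] by auto
  finally show ?thesis .
qed

declare minus_carrier_mat[simp]

lemma symm_entries: assumes M: "M \<in> carrier_mat N N"
  shows "symm M \<longleftrightarrow> (\<forall>i<N. \<forall>j<N. M $$ (i,j) = M $$ (j,i))"
proof
  assume "symm M" then show "\<forall>i<N. \<forall>j<N. M $$ (i,j) = M $$ (j,i)" using symmD[OF M] by blast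
next
  assume h: "\<forall>i<N. \<forall>j<N. M $$ (i,j) = M $$ (j,i)"
  show "symm M" unfolding symm_def
  proof (rule eq_matI)
    show "dim_row (transpose_mat M) = dim_row M" "dim_col (transpose_mat M) = dim_col M" using M by auto
    fix i j assume "i < dim_row M" "j < dim_col M"
    then show "transpose_mat M $$ (i,j) = M $$ (i,j)" using M h by auto
  qed
qed

lemma mult_entry: assumes A: "A \<in> carrier_mat a b" and B: "B \<in> carrier_mat b c" and i: "i < a" and j: "j < c"
  shows "(A * B) $$ (i,j) = (\<Sum>k<b. A $$ (i,k) * B $$ (k,j))"
  using A B i j by (simp add: scalar_prod_def lessThan_atLeast0)

lemma zero_tdims: "tdims p p l (replicate l (0\<^sub>m p p))"
  unfolding tdims_def by auto

lemma bcirc_zero: assumes l: "0 < l" shows "bcirc (replicate l (0\<^sub>m p p)) = 0\<^sub>m (p*l) (p*l)"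
proof (rule eq_matI)
  note c = bcirc_carrier[OF zero_tdims l, of p]
  show "dim_row (bcirc (replicate l (0\<^sub>m p p))) = dim_row (0\<^sub>m (p*l) (p*l) :: real mat)"
       "dim_col (bcirc (replicate l (0\<^sub>m p p))) = dim_col (0\<^sub>m (p*l) (p*l) :: real mat)" using c by auto
  fix i j assume "i < dim_row (0\<^sub>m (p*l) (p*l) :: real mat)" "j < dim_col (0\<^sub>m (p*l) (p*l) :: real mat)"
  then have i: "i < p*l" and j: "j < p*l" by auto
  then have p0: "0 < p" by (auto intro: gr0I)
  show "bcirc (replicate l (0\<^sub>m p p)) $$ (i,j) = (0\<^sub>m (p*l) (p*l) :: real mat) $$ (i,j)"
    using bcirc_idx[OF zero_tdims l i j] cx_lt[OF l] p0 i j by simp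
qed

primrec iterY :: "tensor \<Rightarrow> nat \<Rightarrow> nat \<Rightarrow> nat \<Rightarrow> tensor" where
  "iterY C p l 0 = replicate l (0\<^sub>m p p)"
| "iterY C p l (Suc k) = tsmult (1/2) (C \<oplus>\<^sub>t iterY C p l k \<star> iterY C p l k)"

lemma iterY_tdims: assumes C: "tdims p p l C" and l: "0 < l" shows "tdims p p l (iterY C p l k)"
proof (induction k)
  case 0 then show ?case using zero_tdims by simp
next
  case (Suc k) then show ?case by (simp add: tsmult_tdims tplus_tdims tprod_tdims C l)
qed

lemma bcirc_iterY_Suc: assumes C: "tdims p p l C" and l: "0 < l"
  shows "bcirc (iterY C p l (Suc k)) = (1/2) \<cdot>\<^sub>m (bcirc C + bcirc (iterY C p l k) * bcirc (iterY C p l k))"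
proof -
  note Y = iterY_tdims[OF C l, of k]
  show ?thesis
    by (simp add: bcirc_tsmult[OF tplus_tdims[OF C tprod_tdims[OF Y Y l]] l]
          bcirc_tplus[OF C tprod_tdims[OF Y Y l] l] bcirc_tprod[OF Y Y l])
qed

lemma diff_sq: fixes A B :: "real mat" assumes A: "A \<in> carrier_mat N N" and B: "B \<in> carrier_mat N N"
  and c: "A * B = B * A" shows "(A + B) * (A - B) = A * A - B * B"
proof -
  have "(A + B) * (A - B) = A * (A - B) + B * (A - B)" by (rule add_mult_distrib_mat[OF A B minus_carrier_mat[OF B]])
  also have "\<dots> = (A * A - A * B) + (B * A - B * B)" using A B by (simp add: mult_minus_distrib_mat[of _ N N])
  also have "\<dots> = A * A - B * B" unfolding c[symmetric] using A B by (intro eq_matI) auto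
  finally show ?thesis .
qed

lemma sqrt_exists:
  assumes A: "tdims p p l A" and l: "0 < l" and sA: "symm (bcirc A)" and s1: "1 \<le> s"
   and lo: "\<And>x. (nv (p*l) x)\<^sup>2 \<le> bil (bcirc A) x x" and hi: "\<And>x. bil (bcirc A) x x \<le> s * (nv (p*l) x)\<^sup>2"
  shows "\<exists>S. tdims p p l S \<and> tsym S \<and> tpsd p l S \<and> S \<star> S = A"
proof -
  define N where "N = p*l"
  define Am where "Am = bcirc A"
  have Am: "Am \<in> carrier_mat N N" using bcirc_carrier[OF A l] unfolding Am_def N_def .
  have s0: "0 < s" using s1 by simp
  define Ct where "Ct = tid p l \<ominus>\<^sub>t tsmult (1/s) A"
  have Ct: "tdims p p l Ct" unfolding Ct_def by (intro tminus_tdims tid_tdims tsmult_tdims A)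
  define Cm where "Cm = 1\<^sub>m N - (1/s) \<cdot>\<^sub>m Am"
  have bC: "bcirc Ct = Cm" unfolding Ct_def Cm_def Am_def N_def
    using bcirc_tminus[OF tid_tdims tsmult_tdims[OF A] l] bcirc_tid[OF l] bcirc_tsmult[OF A l] by simp
  have Cm: "Cm \<in> carrier_mat N N" unfolding Cm_def using Am by simp
  define \<gamma> where "\<gamma> = 1 - 1/s"
  have g0: "0 \<le> \<gamma>" "\<gamma> < 1" using s1 unfolding \<gamma>_def by (auto simp: field_simps)
  have bilC: "bil Cm x x = (nv N x)\<^sup>2 - (1/s) * bil Am x x" for x
    unfolding Cm_def using Am by (simp add: bil_minus_mat[of _ N] bil_smult_mat[of _ N] bil_one)
  have Cpsd: "psd Cm" unfolding psd_def
  proof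
    fix x
    have "(1/s) * bil Am x x \<le> (1/s) * (s * (nv N x)\<^sup>2)" using hi[of x] s0 unfolding Am_def N_def
      by (intro mult_left_mono) auto
    then show "0 \<le> bil Cm x x" unfolding bilC using s0 by simp
  qed
  have Cle: "bil Cm x x \<le> \<gamma> * (nv N x)\<^sup>2" for x
  proof -
    have "(1/s) * (nv N x)\<^sup>2 \<le> (1/s) * bil Am x x" using lo[of x] s0 unfolding Am_def N_def
      by (intro mult_left_mono) auto
    then show ?thesis unfolding bilC \<gamma>_def by (simp add: algebra_simps)
  qed
  have sAm: "\<forall>i<N. \<forall>j<N. Am $$ (i,j) = Am $$ (j,i)" using sA symm_entries[OF Am] unfolding Am_def by blast
  have Csymm: "symm Cm" unfolding symm_entries[OF Cm]
  proof (intro allI impI)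
    fix i j assume i: "i < N" and j: "j < N"
    show "Cm $$ (i,j) = Cm $$ (j,i)" using sAm i j Am unfolding Cm_def by auto
  qed
  have oC: "opb Cm \<gamma>" by (rule opb_psd[OF Cm Csymm Cpsd Cle g0(1)])
  define r where "r = 1 - sqrt (1/s)"
  have sq: "0 < sqrt (1/s)" "sqrt (1/s) \<le> 1" using s1 by (auto simp: real_sqrt_le_1_iff)
  have r: "0 \<le> r" "r < 1" using sq unfolding r_def by auto
  have rg: "(\<gamma> + r\<^sup>2) / 2 = r"
  proof -
    define q where "q = sqrt (1/s)"
    have q2: "q * q = 1/s" unfolding q_def using s0 by simp
    have "\<gamma> + r\<^sup>2 = 2 - 2*q" unfolding r_def \<gamma>_def q_def[symmetric]
      by (simp add: power2_eq_square algebra_simps q2)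
    then show ?thesis unfolding r_def q_def[symmetric] by simp
  qed
  define Y where "Y k = bcirc (iterY Ct p l k)" for k
  have Yc: "Y k \<in> carrier_mat N N" for k unfolding Y_def N_def by (rule bcirc_carrier[OF iterY_tdims[OF Ct l] l])
  have dY[simp]: "dim_row (Y k) = N" "dim_col (Y k) = N" for k using Yc[of k] by auto
  have Y0: "Y 0 = 0\<^sub>m N N" unfolding Y_def N_def by (simp add: bcirc_zero[OF l])
  have YS: "Y (Suc k) = (1/2) \<cdot>\<^sub>m (Cm + Y k * Y k)" for k
    unfolding Y_def using bcirc_iterY_Suc[OF Ct l, of k] bC by simp
  have Ysymm: "symm (Y k)" for k
  proof (induction k)
    case 0 show ?case unfolding Y0 symm_def by auto
  next
    case (Suc k)
    have s: "\<forall>i<N. \<forall>j<N. Y k $$ (i,j) = Y k $$ (j,i)" using Suc symm_entries[OF Yc] by blast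
    have c: "\<forall>i<N. \<forall>j<N. Cm $$ (i,j) = Cm $$ (j,i)" using Csymm symm_entries[OF Cm] by blast
    have "\<forall>i<N. \<forall>j<N. Y (Suc k) $$ (i,j) = Y (Suc k) $$ (j,i)"
    proof (intro allI impI)
      fix i j assume i: "i < N" and j: "j < N"
      have "(Y k * Y k) $$ (i,j) = (\<Sum>m<N. Y k $$ (i,m) * Y k $$ (m,j))" by (rule mult_entry[OF Yc Yc i j])
      also have "\<dots> = (\<Sum>m<N. Y k $$ (j,m) * Y k $$ (m,i))"
        using s i j by (intro sum.cong refl) (simp add: mult.commute)
      also have "\<dots> = (Y k * Y k) $$ (j,i)" by (rule mult_entry[OF Yc Yc j i, symmetric])
      finally have "(Y k * Y k) $$ (i,j) = (Y k * Y k) $$ (j,i)" .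
      then show "Y (Suc k) $$ (i,j) = Y (Suc k) $$ (j,i)" unfolding YS using Yc[of k] Cm i j c by simp
    qed
    then show ?case using symm_entries[OF Yc] by blast
  qed
  have YC: "Y k * Cm = Cm * Y k" for k
  proof (induction k)
    case 0 show ?case unfolding Y0 using Cm by simp
  next
    case (Suc k)
    note Yk = Yc[of k]
    have "Y (Suc k) * Cm = (1/2) \<cdot>\<^sub>m (Cm * Cm + Y k * Y k * Cm)"
      unfolding YS using Yk Cm by (simp add: mult_smult_assoc_mat[of _ N N] add_mult_distrib_mat[of _ N N])
    also have "Y k * Y k * Cm = Cm * (Y k * Y k)"
    proof -
      have "Y k * Y k * Cm = Y k * (Y k * Cm)" using Yk Cm by (simp add: assoc_mult_mat[of _ N N])
      also have "\<dots> = Y k * (Cm * Y k)" using Suc by simp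
      also have "\<dots> = (Y k * Cm) * Y k" using Yk Cm by (simp add: assoc_mult_mat[of _ N N])
      also have "\<dots> = (Cm * Y k) * Y k" using Suc by simp
      also have "\<dots> = Cm * (Y k * Y k)" using Yk Cm by (simp add: assoc_mult_mat[of _ N N])
      finally show ?thesis .
    qed
    also have "(1/2) \<cdot>\<^sub>m (Cm * Cm + Cm * (Y k * Y k)) = Cm * Y (Suc k)"
    proof -
      have YYc: "Y k * Y k \<in> carrier_mat N N" using Yk by simp
      show ?thesis unfolding YS
        by (simp add: mult_smult_distrib[OF Cm add_carrier_mat[OF YYc]] mult_add_distrib_mat[OF Cm Cm YYc])
    qed
    finally show ?case .
  qed
  have Yopb: "opb (Y k) r" for k
  proof (induction k)
    case 0
    show ?case unfolding opb_def Y0 mv_def using r by (auto intro!: mult_nonneg_nonneg simp: nv_def L2_set_def sum_nonneg)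
  next
    case (Suc k)
    have "opb (Cm + Y k * Y k) (\<gamma> + r * r)"
      using opb_add[OF Cm _ oC opb_mult[OF Yc Yc Suc Suc r(1)]] Yc[of k] by (simp add: mult_carrier_mat[of _ N N])
    then have "opb ((1/2) \<cdot>\<^sub>m (Cm + Y k * Y k)) (\<bar>1/2\<bar> * (\<gamma> + r * r))"
      using Cm Yc[of k] by (intro opb_smult[of _ N N]) auto
    then show ?case unfolding YS using rg by (simp add: power2_eq_square)
  qed
  have YY: "Y (Suc k) * Y k = Y k * Y (Suc k)" for k
  proof -
    note Yk = Yc[of k]
    have "Y (Suc k) * Y k = (1/2) \<cdot>\<^sub>m (Cm * Y k + Y k * Y k * Y k)"
      unfolding YS using Yk Cm by (simp add: mult_smult_assoc_mat[of _ N N] add_mult_distrib_mat[of _ N N])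
    also have "\<dots> = (1/2) \<cdot>\<^sub>m (Y k * Cm + Y k * (Y k * Y k))"
      using YC[of k] Yk by (simp add: assoc_mult_mat[of _ N N])
    also have "\<dots> = Y k * Y (Suc k)"
    proof -
      have YYc: "Y k * Y k \<in> carrier_mat N N" using Yk by simp
      show ?thesis unfolding YS
        by (simp add: mult_smult_distrib[OF Yk add_carrier_mat[OF YYc]] mult_add_distrib_mat[OF Yk Cm YYc])
    qed
    finally show ?thesis .
  qed
  have Ydiff: "opb (Y (Suc k) - Y k) (\<gamma>/2 * r^k)" for k
  proof (induction k)
    case 0
    have "Y (Suc 0) - Y 0 = (1/2) \<cdot>\<^sub>m Cm" unfolding YS Y0 using Cm by (intro eq_matI) auto
    then show ?case using opb_smult[OF Cm oC, of "1/2"] by (simp add: mult.commute)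
  next
    case (Suc k)
    note Yk = Yc[of k] and Yk1 = Yc[of "Suc k"]
    have "Y (Suc (Suc k)) - Y (Suc k) = (1/2) \<cdot>\<^sub>m (Y (Suc k) * Y (Suc k) - Y k * Y k)"
      using YS[of "Suc k"] YS[of k] Yk Yk1 Cm by (intro eq_matI) (auto simp: algebra_simps)
    also have "Y (Suc k) * Y (Suc k) - Y k * Y k = (Y (Suc k) + Y k) * (Y (Suc k) - Y k)"
      by (rule diff_sq[OF Yk1 Yk YY, symmetric])
    finally have e: "Y (Suc (Suc k)) - Y (Suc k) = (1/2) \<cdot>\<^sub>m ((Y (Suc k) + Y k) * (Y (Suc k) - Y k))" .
    have ac: "Y (Suc k) + Y k \<in> carrier_mat N N" by (rule add_carrier_mat[OF Yk])
    have mc: "Y (Suc k) - Y k \<in> carrier_mat N N" by (rule minus_carrier_mat[OF Yk])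
    have rr: "0 \<le> r + r" using r by simp
    have o1: "opb ((Y (Suc k) + Y k) * (Y (Suc k) - Y k)) ((r + r) * (\<gamma>/2 * r^k))"
      by (rule opb_mult[OF ac mc opb_add[OF Yk1 Yk Yopb Yopb] Suc rr])
    have pc: "(Y (Suc k) + Y k) * (Y (Suc k) - Y k) \<in> carrier_mat N N" using ac mc by simp
    have "opb ((1/2) \<cdot>\<^sub>m ((Y (Suc k) + Y k) * (Y (Suc k) - Y k))) (\<bar>1/2\<bar> * ((r + r) * (\<gamma>/2 * r^k)))"
      by (rule opb_smult[OF pc o1])
    then show ?case unfolding e by (simp add: algebra_simps)
  qed
  have conv: "(\<lambda>k. Y k $$ (i,j)) \<longlonglongrightarrow> (\<Sum>m. Y (Suc m) $$ (i,j) - Y m $$ (i,j))" if i: "i < N" and j: "j < N" for i j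
  proof -
    define d where "d m = Y (Suc m) $$ (i,j) - Y m $$ (i,j)" for m
    have db: "norm (d m) \<le> \<gamma>/2 * r^m" for m
    proof -
      have "d m = (Y (Suc m) - Y m) $$ (i,j)" unfolding d_def using Yc[of m] Yc[of "Suc m"] i j by simp
      then show ?thesis using opb_entry[OF Ydiff[of m]] Yc[of m] Yc[of "Suc m"] i j by simp
    qed
    have sg: "summable (\<lambda>m. \<gamma>/2 * r^m)" using r by (intro summable_mult summable_geometric) auto
    have sd: "summable d" by (rule summable_comparison_test[OF _ sg]) (use db in auto)
    have tel: "Y k $$ (i,j) = (\<Sum>m<k. d m)" for k
    proof -
      have "(\<Sum>m<k. d m) = Y k $$ (i,j) - Y 0 $$ (i,j)" unfolding d_def
        by (rule sum_lessThan_telescope[where f="\<lambda>m. Y m $$ (i,j)"])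
      then show ?thesis using Y0 i j by simp
    qed
    have e1: "(\<lambda>k. Y k $$ (i,j)) = (\<lambda>k. \<Sum>m<k. d m)" using tel by auto
    have e2: "(\<Sum>m. Y (Suc m) $$ (i,j) - Y m $$ (i,j)) = suminf d" unfolding d_def ..
    show ?thesis unfolding e2 e1 by (rule summable_LIMSEQ[OF sd])
  qed
  define L where "L = mat N N (\<lambda>(i,j). lim (\<lambda>k. Y k $$ (i,j)))"
  have Lc: "L \<in> carrier_mat N N" unfolding L_def by simp
  have YL: "(\<lambda>k. Y k $$ (i,j)) \<longlonglongrightarrow> L $$ (i,j)" if i: "i < N" and j: "j < N" for i j
    unfolding L_def using i j conv[OF i j] by (simp add: limI)
  have LLe: "(L * L) $$ (i,j) = 2 * L $$ (i,j) - Cm $$ (i,j)" if i: "i < N" and j: "j < N" for i j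
  proof -
    have e: "Y (Suc k) $$ (i,j) = (1/2) * (Cm $$ (i,j) + (\<Sum>m<N. Y k $$ (i,m) * Y k $$ (m,j)))" for k
      unfolding YS using Yc[of k] Cm i j by (simp add: scalar_prod_def lessThan_atLeast0)
    have t1: "(\<lambda>k. Y (Suc k) $$ (i,j)) \<longlonglongrightarrow> L $$ (i,j)" using YL[OF i j] by (rule LIMSEQ_Suc)
    have t2: "(\<lambda>k. Y (Suc k) $$ (i,j)) \<longlonglongrightarrow> (1/2) * (Cm $$ (i,j) + (\<Sum>m<N. L $$ (i,m) * L $$ (m,j)))"
      unfolding e using YL i j by (intro tendsto_intros) auto
    have "L $$ (i,j) = (1/2) * (Cm $$ (i,j) + (\<Sum>m<N. L $$ (i,m) * L $$ (m,j)))" using LIMSEQ_unique[OF t1 t2] .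
    moreover have "(L * L) $$ (i,j) = (\<Sum>m<N. L $$ (i,m) * L $$ (m,j))"
      using Lc i j by (simp add: scalar_prod_def lessThan_atLeast0)
    ultimately show ?thesis by simp
  qed
  have Lsymm: "symm L"
  proof -
    have "L $$ (i,j) = L $$ (j,i)" if i: "i < N" and j: "j < N" for i j
    proof -
      have "\<forall>k. Y k $$ (i,j) = Y k $$ (j,i)" using Ysymm symm_entries[OF Yc] i j by blast
      then show ?thesis using LIMSEQ_unique[OF YL[OF i j]] YL[OF j i] by simp
    qed
    then show ?thesis using symm_entries[OF Lc] by blast
  qed
  have Lopb: "opb L r" unfolding opb_def
  proof
    fix x
    have t: "(\<lambda>k. nv N (mv (Y k) x)) \<longlonglongrightarrow> nv N (mv L x)"
      unfolding nv_def L2_set_def mv_def using Yc Lc YL by (auto intro!: tendsto_intros)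
    have "nv N (mv L x) \<le> r * nv N x"
      using Yopb Yc unfolding opb_def by (intro LIMSEQ_le_const2[OF t]) auto
    then show "nv (dim_row L) (mv L x) \<le> r * nv (dim_col L) x" using Lc by simp
  qed
  have Lblock: "L $$ (i,j) = L $$ (cx l (i div p) (j div p) * p + i mod p, j mod p)" if i: "i < N" and j: "j < N" for i j
  proof -
    have p0: "0 < p" using i unfolding N_def by (auto intro: gr0I)
    define K where "K = cx l (i div p) (j div p)"
    have K: "K < l" unfolding K_def by (rule cx_lt[OF l])
    have i2: "K * p + i mod p < N" unfolding N_def using K p0 by (intro idx_lt) auto
    have j2: "j mod p < N" unfolding N_def using p0 l by (intro idx_lt0) auto
    have "Y k $$ (i,j) = Y k $$ (K * p + i mod p, j mod p)" for k
      unfolding Y_def K_def using bcirc_idx[OF iterY_tdims[OF Ct l] l, of i j] i j p0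
        tent[OF iterY_tdims[OF Ct l] l K, of "i mod p" "j mod p"] unfolding N_def K_def by simp
    then show ?thesis using LIMSEQ_unique[OF YL[OF i j]] YL[OF i2 j2] unfolding K_def by simp
  qed
  define Lt where "Lt = map (\<lambda>k. mat p p (\<lambda>(a,b). L $$ (k*p+a, b))) [0..<l]"
  have Lt: "tdims p p l Lt" unfolding Lt_def tdims_def by auto
  have bLt: "bcirc Lt = L"
  proof (rule eq_matI)
    show "dim_row (bcirc Lt) = dim_row L" "dim_col (bcirc Lt) = dim_col L"
      using bcirc_carrier[OF Lt l] Lc unfolding N_def by auto
    fix i j assume "i < dim_row L" "j < dim_col L"
    then have i: "i < N" and j: "j < N" using Lc by auto
    have p0: "0 < p" using i unfolding N_def by (auto intro: gr0I)
    show "bcirc Lt $$ (i,j) = L $$ (i,j)"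
      using bcirc_idx[OF Lt l, of i j] i j Lblock[OF i j] cx_lt[OF l] p0 unfolding N_def Lt_def by simp
  qed
  define S where "S = tsmult (sqrt s) (tid p l \<ominus>\<^sub>t Lt)"
  have S: "tdims p p l S" unfolding S_def by (intro tsmult_tdims tminus_tdims tid_tdims Lt)
  have bS: "bcirc S = sqrt s \<cdot>\<^sub>m (1\<^sub>m N - L)" unfolding S_def N_def
    using bcirc_tsmult[OF tminus_tdims[OF tid_tdims Lt] l] bcirc_tminus[OF tid_tdims Lt l] bcirc_tid[OF l] bLt by simp
  have oneL: "1\<^sub>m N - L \<in> carrier_mat N N" using Lc by simp
  have "(1\<^sub>m N - L) * (1\<^sub>m N - L) = (1\<^sub>m N - L) - (L - L * L)"
  proof -
    have e1: "(1\<^sub>m N - L) * (1\<^sub>m N - L) = (1\<^sub>m N - L) * 1\<^sub>m N - (1\<^sub>m N - L) * L"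
      by (rule mult_minus_distrib_mat[OF oneL one_carrier_mat Lc])
    have e2: "(1\<^sub>m N - L) * 1\<^sub>m N = 1\<^sub>m N - L" by (rule right_mult_one_mat[OF oneL])
    have e3: "(1\<^sub>m N - L) * L = 1\<^sub>m N * L - L * L" by (rule minus_mult_distrib_mat[OF one_carrier_mat Lc Lc])
    have e4: "1\<^sub>m N * L = L" by (rule left_mult_one_mat[OF Lc])
    show ?thesis unfolding e1 e2 e3 e4 ..
  qed
  then have SS: "bcirc S * bcirc S = Am"
  proof -
    assume e: "(1\<^sub>m N - L) * (1\<^sub>m N - L) = (1\<^sub>m N - L) - (L - L * L)"
    have "bcirc S * bcirc S = sqrt s \<cdot>\<^sub>m (sqrt s \<cdot>\<^sub>m ((1\<^sub>m N - L) * (1\<^sub>m N - L)))"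
      unfolding bS using oneL by (simp add: mult_smult_assoc_mat[of _ N N] mult_smult_distrib[of _ N N])
    also have "\<dots> = Am" unfolding e
    proof (rule eq_matI)
      fix i j assume "i < dim_row Am" "j < dim_col Am"
      then have i: "i < N" and j: "j < N" using Am by auto
      have M: "(1\<^sub>m N - L - (L - L * L)) $$ (i,j) = (1/s) * Am $$ (i,j)"
        using i j Lc Am LLe[OF i j] unfolding Cm_def by (simp add: algebra_simps)
      have key: "sqrt s * (sqrt s * (1/s * a)) = a" for a
      proof -
        have "sqrt s * (sqrt s * (1/s * a)) = (sqrt s * sqrt s) * (1/s) * a" by (simp only: mult.assoc)
        also have "\<dots> = a" using s0 by simp
        finally show ?thesis .
      qed
      have key2: "sqrt s * (sqrt s * a) / s = a" for a
        using s0 by (simp add: mult.assoc[symmetric])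
      show "(sqrt s \<cdot>\<^sub>m (sqrt s \<cdot>\<^sub>m (1\<^sub>m N - L - (L - L * L)))) $$ (i,j) = Am $$ (i,j)"
        using i j Lc by (simp add: M key key2)
    qed (use Am Lc in auto)
    finally show ?thesis .
  qed
  have SSt: "S \<star> S = A"
    by (rule bcirc_inj[OF tprod_tdims[OF S S l] A l]) (simp add: bcirc_tprod[OF S S l] SS Am_def)
  have bSc: "bcirc S \<in> carrier_mat N N" using bcirc_carrier[OF S l] unfolding N_def .
  have Ssym: "tsym S" unfolding tsym_iff[OF S l] bS
    using Lsymm Lc unfolding symm_entries[OF Lc] by (subst symm_entries[of _ N]) auto
  have Spsd: "tpsd p l S" unfolding tpsd_iff[OF S l] psd_def bS
  proof
    fix x
    have "bil L x x \<le> r * (nv N x)\<^sup>2" by (rule bil_le_nv[OF Lc Lopb])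
    then have "0 \<le> (nv N x)\<^sup>2 - bil L x x" using r by (smt (verit) mult_left_le_one_le zero_le_power2)
    then have "0 \<le> sqrt s * ((nv N x)\<^sup>2 - bil L x x)" using s0 by simp
    also have "\<dots> = bil (sqrt s \<cdot>\<^sub>m (1\<^sub>m N - L)) x x"
      using oneL Lc by (simp add: bil_smult_mat[of _ N] bil_minus_mat[of _ N] bil_one)
    finally show "0 \<le> bil (sqrt s \<cdot>\<^sub>m (1\<^sub>m N - L)) x x" .
  qed
  show ?thesis using S Ssym Spsd SSt by blast
qed

definition gram :: "nat \<Rightarrow> nat \<Rightarrow> tensor \<Rightarrow> tensor" where
  "gram p l W = tid p l \<oplus>\<^sub>t ttrans W \<star> W"

lemma gram_tdims: assumes W: "tdims n p l W" and l: "0 < l" shows "tdims p p l (gram p l W)"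
  unfolding gram_def by (intro tplus_tdims tid_tdims tprod_tdims[OF ttrans_tdims[OF W l] W l])

lemma bcirc_gram: assumes W: "tdims n p l W" and l: "0 < l"
  shows "bcirc (gram p l W) = 1\<^sub>m (p*l) + transpose_mat (bcirc W) * bcirc W"
  unfolding gram_def
  by (simp add: bcirc_tplus[OF tid_tdims tprod_tdims[OF ttrans_tdims[OF W l] W l] l] bcirc_tid[OF l]
      bcirc_tprod[OF ttrans_tdims[OF W l] W l] bcirc_ttrans[OF W l])

lemma gram_bil: assumes Wm: "Wm \<in> carrier_mat a N"
  shows "bil (1\<^sub>m N + transpose_mat Wm * Wm) x x = (nv N x)\<^sup>2 + (nv a (mv Wm x))\<^sup>2"
proof -
  have "transpose_mat Wm * Wm \<in> carrier_mat N N" using Wm by simp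
  then show ?thesis by (simp add: bil_add_mat[of _ N] bil_one bil_gram[OF Wm])
qed

lemma gram_symm: assumes Wm: "Wm \<in> carrier_mat a N"
  shows "symm (1\<^sub>m N + transpose_mat Wm * Wm)"
  unfolding symm_def using Wm
  by (simp add: transpose_add[of _ N N] transpose_mult[of _ N a _ N])

lemma gram_bounds: assumes Wm: "Wm \<in> carrier_mat a N"
  shows "(nv N x)\<^sup>2 \<le> bil (1\<^sub>m N + transpose_mat Wm * Wm) x x"
        "bil (1\<^sub>m N + transpose_mat Wm * Wm) x x \<le> (1 + (fro Wm)\<^sup>2) * (nv N x)\<^sup>2"
proof -
  show "(nv N x)\<^sup>2 \<le> bil (1\<^sub>m N + transpose_mat Wm * Wm) x x" unfolding gram_bil[OF Wm] by simp
  have "nv a (mv Wm x) \<le> fro Wm * nv N x" by (rule nv_mv_fro[OF Wm])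
  then have "(nv a (mv Wm x))\<^sup>2 \<le> (fro Wm * nv N x)\<^sup>2" using nv_nonneg by (simp add: power_mono)
  then show "bil (1\<^sub>m N + transpose_mat Wm * Wm) x x \<le> (1 + (fro Wm)\<^sup>2) * (nv N x)\<^sup>2"
    unfolding gram_bil[OF Wm] by (simp add: power_mult_distrib algebra_simps)
qed

lemma gram_sqrt_exists: assumes W: "tdims n p l W" and l: "0 < l"
  shows "\<exists>S. tdims p p l S \<and> tsym S \<and> tpsd p l S \<and> S \<star> S = gram p l W"
proof -
  have Wm: "bcirc W \<in> carrier_mat (n*l) (p*l)" by (rule bcirc_carrier[OF W l])
  show ?thesis
    by (rule sqrt_exists[OF gram_tdims[OF W l] l _ _ _ _, of "1 + (fro (bcirc W))\<^sup>2"])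
       (use gram_symm[OF Wm] gram_bounds[OF Wm] in \<open>auto simp: bcirc_gram[OF W l]\<close>)
qed

lemma sq_lower: assumes Q: "Q \<in> carrier_mat N N" and s: "symm Q"
  and lo: "\<And>x. (nv N x)\<^sup>2 \<le> bil (Q * Q) x x"
  shows "nv N x \<le> nv N (mv Q x)"
proof -
  have "bil (Q * Q) x x = bil (transpose_mat Q * Q) x x" using s unfolding symm_def by simp
  also have "\<dots> = (nv N (mv Q x))\<^sup>2" by (rule bil_gram[OF Q])
  finally have "(nv N x)\<^sup>2 \<le> (nv N (mv Q x))\<^sup>2" using lo[of x] by simp
  then show ?thesis using nv_nonneg by (meson power2_le_imp_le)
qed

lemma pd_const: assumes Q: "Q \<in> carrier_mat N N" and s: "symm Q" and p: "psd Q"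
  and lo: "\<And>x. nv N x \<le> nv N (mv Q x)"
  shows "\<exists>c>0. \<forall>x. c * (nv N x)\<^sup>2 \<le> bil Q x x"
proof -
  define \<beta> where "\<beta> = fro Q + 1"
  have b0: "0 < \<beta>" unfolding \<beta>_def using fro_nonneg[of Q] by simp
  have oQ: "opb Q \<beta>" unfolding \<beta>_def by (rule opb_mono[OF opb_fro]) simp
  have "(1/\<beta>) * (nv N x)\<^sup>2 \<le> bil Q x x" for x
    using pd_from_sq[OF Q s p lo oQ b0, of x] b0 by (simp add: field_simps)
  moreover have "0 < 1/\<beta>" using b0 by simp
  ultimately show ?thesis by blast
qed

lemma sqrt_unique_mat: assumes Q1: "Q1 \<in> carrier_mat N N" and Q2: "Q2 \<in> carrier_mat N N"
  and s2: "symm Q2" and p1: "psd Q1" and p2: "psd Q2" and eq: "Q1 * Q1 = Q2 * Q2"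
  and lo: "\<And>x. (nv N x)\<^sup>2 \<le> bil (Q2 * Q2) x x"
  shows "Q1 = Q2"
proof -
  obtain c where c: "0 < c" and pd: "\<And>x. c * (nv N x)\<^sup>2 \<le> bil Q2 x x"
    using pd_const[OF Q2 s2 p2 sq_lower[OF Q2 s2 lo]] by blast
  define E where "E = Q1 - Q2"
  have Ec: "E \<in> carrier_mat N N" unfolding E_def using Q2 by simp
  have "Q1 * E + E * Q2 = 0\<^sub>m N N"
  proof -
    have e1: "Q1 * E = Q1 * Q1 - Q1 * Q2" unfolding E_def by (rule mult_minus_distrib_mat[OF Q1 Q1 Q2])
    have e2: "E * Q2 = Q1 * Q2 - Q2 * Q2" unfolding E_def by (rule minus_mult_distrib_mat[OF Q1 Q2 Q2])
    show ?thesis unfolding e1 e2 eq using Q1 Q2 by (intro eq_matI) auto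
  qed
  moreover have "fro (0\<^sub>m N N :: real mat) = 0" unfolding fro_def by (rule L2_set_0') auto
  ultimately have "c * fro E \<le> 0" using key_est[OF Ec Q1 p1 Q2 c pd] by simp
  then have f0: "fro E \<le> 0" using c by (simp add: mult_le_0_iff)
  show ?thesis
  proof (rule eq_matI)
    fix i j assume i: "i < dim_row Q2" and j: "j < dim_col Q2"
    have "\<bar>E $$ (i,j)\<bar> \<le> fro E" using abs_le_fro[of i E j] Ec Q2 i j by simp
    then have "E $$ (i,j) = 0" using f0 by simp
    then show "Q1 $$ (i,j) = Q2 $$ (i,j)" unfolding E_def using Q1 Q2 i j by simp
  qed (use Q1 Q2 in auto)
qed

lemma gram_sqrt_unique: assumes W: "tdims n p l W" and l: "0 < l"
  and S1: "tdims p p l S1 \<and> tsym S1 \<and> tpsd p l S1 \<and> S1 \<star> S1 = gram p l W"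
  and S2: "tdims p p l S2 \<and> tsym S2 \<and> tpsd p l S2 \<and> S2 \<star> S2 = gram p l W"
  shows "S1 = S2"
proof -
  have Wm: "bcirc W \<in> carrier_mat (n*l) (p*l)" by (rule bcirc_carrier[OF W l])
  have t1: "tdims p p l S1" and t2: "tdims p p l S2" using S1 S2 by auto
  note Q1 = bcirc_carrier[OF t1 l] and Q2 = bcirc_carrier[OF t2 l]
  have sq1: "bcirc S1 * bcirc S1 = bcirc (gram p l W)" using S1 bcirc_tprod[OF t1 t1 l] by simp
  have sq2: "bcirc S2 * bcirc S2 = bcirc (gram p l W)" using S2 bcirc_tprod[OF t2 t2 l] by simp
  have "bcirc S1 = bcirc S2"
  proof (rule sqrt_unique_mat[OF Q1 Q2])
    show "symm (bcirc S2)" using S2 tsym_iff[OF t2 l] by simp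
    show "psd (bcirc S1)" using S1 tpsd_iff[OF t1 l] by simp
    show "psd (bcirc S2)" using S2 tpsd_iff[OF t2 l] by simp
    show "bcirc S1 * bcirc S1 = bcirc S2 * bcirc S2" using sq1 sq2 by simp
    show "(nv (p*l) x)\<^sup>2 \<le> bil (bcirc S2 * bcirc S2) x x" for x
      unfolding sq2 bcirc_gram[OF W l] by (rule gram_bounds(1)[OF Wm])
  qed
  then show ?thesis by (rule bcirc_inj[OF t1 t2 l])
qed

lemma tsqrt_gram: assumes W: "tdims n p l W" and l: "0 < l"
  shows "tdims p p l (tsqrt p l (gram p l W)) \<and> tsym (tsqrt p l (gram p l W)) \<and>
         tpsd p l (tsqrt p l (gram p l W)) \<and> tsqrt p l (gram p l W) \<star> tsqrt p l (gram p l W) = gram p l W"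
proof -
  have "\<exists>!S. tdims p p l S \<and> tsym S \<and> tpsd p l S \<and> S \<star> S = gram p l W"
    using gram_sqrt_exists[OF W l] gram_sqrt_unique[OF W l] by blast
  then show ?thesis unfolding tsqrt_def by (rule theI')
qed

lemma mv_zero_imp: assumes Q: "Q \<in> carrier_mat N N" and lo: "\<And>x. nv N x \<le> nv N (mv Q x)"
  shows "det Q \<noteq> 0"
proof
  assume "det Q = 0"
  then obtain v where v: "v \<in> carrier_vec N" "v \<noteq> 0\<^sub>v N" "Q *\<^sub>v v = 0\<^sub>v N"
    using det_0_iff_vec_prod_zero_field[OF Q] by blast
  define x where "x i = v $ i" for i
  have "mv Q x i = 0" if i: "i < N" for i
  proof -
    have "(Q *\<^sub>v v) $ i = (0\<^sub>v N) $ i" by (simp only: v(3))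
    then have "(Q *\<^sub>v v) $ i = 0" using i by (simp only: index_zero_vec)
    moreover have "(Q *\<^sub>v v) $ i = (\<Sum>j<N. Q $$ (i,j) * v $ j)"
      using Q v(1) i by (auto simp: scalar_prod_def lessThan_atLeast0 intro!: sum.cong)
    ultimately show ?thesis unfolding mv_def x_def using Q by simp
  qed
  then have "nv N (mv Q x) = 0" unfolding nv_def by (simp add: L2_set_def)
  then have "nv N x = 0" using lo[of x] nv_nonneg[of N x] by simp
  then have "\<forall>i<N. x i = 0" unfolding nv_def by (simp add: L2_set_eq_0_iff)
  then have "v = 0\<^sub>v N" using v(1) unfolding x_def by (intro eq_vecI) auto
  then show False using v(2) by simp
qed

lemma inverse_exists: assumes Q: "Q \<in> carrier_mat N N" and lo: "\<And>x. nv N x \<le> nv N (mv Q x)"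
  shows "\<exists>B. B \<in> carrier_mat N N \<and> Q * B = 1\<^sub>m N \<and> B * Q = 1\<^sub>m N \<and> opb B 1"
proof -
  have "Q \<in> Units (ring_mat TYPE(real) N ())"
    by (rule det_non_zero_imp_unit[OF Q mv_zero_imp[OF Q lo]])
  then obtain B where B: "B \<in> carrier_mat N N" "B * Q = 1\<^sub>m N" "Q * B = 1\<^sub>m N"
    unfolding Units_def ring_mat_def by auto
  have "opb B 1" unfolding opb_def
  proof
    fix y
    have "mv Q (mv B y) i = y i" if i: "i < N" for i
      using mv_mult[OF Q B(1) i, of y, symmetric] B(3) mv_one[OF i] by simp
    then have "nv N (mv Q (mv B y)) = nv N y" by (intro nv_cong) auto
    then show "nv (dim_row B) (mv B y) \<le> 1 * nv (dim_col B) y" using lo[of "mv B y"] B(1) by simp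
  qed
  then show ?thesis using B by blast
qed

lemma null_cmp: fixes f g :: "real \<Rightarrow> real"
  assumes ev: "eventually (\<lambda>x. \<bar>f x\<bar> \<le> g x) F" and g: "(g \<longlongrightarrow> 0) F" shows "(f \<longlongrightarrow> 0) F"
proof (rule tendsto_0_le[OF g, of _ 1])
  show "eventually (\<lambda>x. norm (f x) \<le> norm (g x) * 1) F"
    using ev by (rule eventually_mono) auto
qed

lemma ev_small: "eventually (\<lambda>t::real. t \<noteq> 0 \<and> \<bar>t\<bar> < 1) (at 0)"
  unfolding eventually_at by (intro exI[of _ 1]) (auto simp: dist_real_def)

definition mderiv :: "nat \<Rightarrow> nat \<Rightarrow> (real \<Rightarrow> real mat) \<Rightarrow> real mat \<Rightarrow> bool" where
  "mderiv a b F F' \<longleftrightarrow> (\<forall>i<a. \<forall>j<b. ((\<lambda>t. F t $$ (i,j)) has_real_derivative F' $$ (i,j)) (at 0))"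

lemma mderiv_cont: assumes "mderiv a b F F'" "i < a" "j < b"
  shows "((\<lambda>t. F t $$ (i,j)) \<longlongrightarrow> F 0 $$ (i,j)) (at 0)"
proof -
  have "continuous (at 0) (\<lambda>t. F t $$ (i,j))"
    using assms unfolding mderiv_def by (intro DERIV_continuous) auto
  then show ?thesis by (simp add: continuous_at)
qed

lemma mderiv_quot: assumes "mderiv a b F F'" "i < a" "j < b"
  shows "((\<lambda>t. (F t $$ (i,j) - F 0 $$ (i,j)) / t) \<longlongrightarrow> F' $$ (i,j)) (at 0)"
  using assms unfolding mderiv_def has_field_derivative_iff by simp

lemma mderiv_affine: assumes F0: "F0 \<in> carrier_mat a b" and V: "V \<in> carrier_mat a b"
  shows "mderiv a b (\<lambda>t. F0 + t \<cdot>\<^sub>m V) V"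
  unfolding mderiv_def
proof (intro allI impI)
  fix i j assume i: "i < a" and j: "j < b"
  have e: "(\<lambda>t. (F0 + t \<cdot>\<^sub>m V) $$ (i,j)) = (\<lambda>t. F0 $$ (i,j) + t * V $$ (i,j))"
    using F0 V i j by auto
  show "((\<lambda>t. (F0 + t \<cdot>\<^sub>m V) $$ (i,j)) has_real_derivative V $$ (i,j)) (at 0)"
    unfolding e by (auto intro!: derivative_eq_intros)
qed

lemma mderiv_mult: assumes F: "\<And>t. F t \<in> carrier_mat a b" and G: "\<And>t. G t \<in> carrier_mat b c"
  and dF: "mderiv a b F F'" and dG: "mderiv b c G G'" and F': "F' \<in> carrier_mat a b" and G': "G' \<in> carrier_mat b c"
  shows "mderiv a c (\<lambda>t. F t * G t) (F' * G 0 + F 0 * G')"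
  unfolding mderiv_def
proof (intro allI impI)
  fix i j assume i: "i < a" and j: "j < c"
  have e: "(\<lambda>t. (F t * G t) $$ (i,j)) = (\<lambda>t. \<Sum>k<b. F t $$ (i,k) * G t $$ (k,j))"
    using mult_entry[OF F G i j] by auto
  have "((\<lambda>t. \<Sum>k<b. F t $$ (i,k) * G t $$ (k,j)) has_real_derivative
          (\<Sum>k<b. F' $$ (i,k) * G 0 $$ (k,j) + G' $$ (k,j) * F 0 $$ (i,k))) (at 0)"
    using dF dG i j unfolding mderiv_def by (intro DERIV_sum DERIV_mult) auto
  moreover have "(\<Sum>k<b. F' $$ (i,k) * G 0 $$ (k,j) + G' $$ (k,j) * F 0 $$ (i,k)) = (F' * G 0 + F 0 * G') $$ (i,j)"
  proof -
    have "(F' * G 0 + F 0 * G') $$ (i,j) = (F' * G 0) $$ (i,j) + (F 0 * G') $$ (i,j)"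
      using F' G[of 0] F[of 0] G' i j by simp
    then show ?thesis using mult_entry[OF F' G i j, of 0] mult_entry[OF F G' i j, of 0]
      by (simp add: sum.distrib mult.commute)
  qed
  ultimately show "((\<lambda>t. (F t * G t) $$ (i,j)) has_real_derivative (F' * G 0 + F 0 * G') $$ (i,j)) (at 0)"
    unfolding e by simp
qed

lemma dsum_bound: fixes f :: "nat \<Rightarrow> nat \<Rightarrow> real"
  shows "\<bar>\<Sum>b<N. (\<Sum>a<N. f a b) * z b\<bar> \<le> (\<Sum>b<N. \<Sum>a<N. \<bar>f a b\<bar> * \<bar>z b\<bar>)"
proof -
  have "\<bar>\<Sum>b<N. (\<Sum>a<N. f a b) * z b\<bar> \<le> (\<Sum>b<N. \<bar>(\<Sum>a<N. f a b) * z b\<bar>)" by (rule sum_abs)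
  also have "\<dots> \<le> (\<Sum>b<N. \<Sum>a<N. \<bar>f a b\<bar> * \<bar>z b\<bar>)"
  proof (rule sum_mono)
    fix b
    have "\<bar>(\<Sum>a<N. f a b) * z b\<bar> = \<bar>\<Sum>a<N. f a b\<bar> * \<bar>z b\<bar>" by (simp add: abs_mult)
    also have "\<dots> \<le> (\<Sum>a<N. \<bar>f a b\<bar>) * \<bar>z b\<bar>" by (intro mult_right_mono sum_abs) auto
    finally show "\<bar>(\<Sum>a<N. f a b) * z b\<bar> \<le> (\<Sum>a<N. \<bar>f a b\<bar> * \<bar>z b\<bar>)" by (simp add: sum_distrib_right)
  qed
  finally show ?thesis .
qed

lemma mderiv_inverse:
  assumes F: "\<And>t. F t \<in> carrier_mat N N" and Fi: "\<And>t. Fi t \<in> carrier_mat N N"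
  and inv1: "\<And>t. Fi t * F t = 1\<^sub>m N" and inv0: "F 0 * Fi 0 = 1\<^sub>m N"
  and bnd: "\<And>t i j. i < N \<Longrightarrow> j < N \<Longrightarrow> \<bar>Fi t $$ (i,j)\<bar> \<le> \<beta>"
  and dF: "mderiv N N F F'" and F': "F' \<in> carrier_mat N N"
  shows "mderiv N N Fi (- (Fi 0 * F' * Fi 0))"
  unfolding mderiv_def
proof (intro allI impI)
  fix i j assume i: "i < N" and j: "j < N"
  have ident: "Fi t - Fi 0 = Fi t * (F 0 - F t) * Fi 0" for t
  proof -
    have "Fi t * (F 0 - F t) = Fi t * F 0 - Fi t * F t" by (rule mult_minus_distrib_mat[OF Fi F F])
    then have "Fi t * (F 0 - F t) * Fi 0 = (Fi t * F 0 - Fi t * F t) * Fi 0" by simp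
    also have "\<dots> = Fi t * F 0 * Fi 0 - Fi t * F t * Fi 0"
      by (rule minus_mult_distrib_mat[OF mult_carrier_mat[OF Fi F] mult_carrier_mat[OF Fi F] Fi])
    also have "Fi t * F 0 * Fi 0 = Fi t" using inv0 right_mult_one_mat[OF Fi] by (simp add: assoc_mult_mat[OF Fi F Fi])
    also have "Fi t * F t * Fi 0 = Fi 0" using inv1 left_mult_one_mat[OF Fi] by simp
    finally show ?thesis by simp
  qed
  have entg: "Fi t $$ (i,j) - Fi 0 $$ (i,j) = (\<Sum>b<N. (\<Sum>a<N. Fi t $$ (i,a) * (F 0 $$ (a,b) - F t $$ (a,b))) * Fi 0 $$ (b,j))"
    if i: "i < N" and j: "j < N" for t i j
  proof -
    have "Fi t $$ (i,j) - Fi 0 $$ (i,j) = (Fi t - Fi 0) $$ (i,j)" using Fi[of t] Fi[of 0] i j by simp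
    also have "\<dots> = (Fi t * (F 0 - F t) * Fi 0) $$ (i,j)" unfolding ident ..
    also have "\<dots> = (\<Sum>b<N. (Fi t * (F 0 - F t)) $$ (i,b) * Fi 0 $$ (b,j))"
      by (rule mult_entry[OF mult_carrier_mat[OF Fi minus_carrier_mat[OF F]] Fi i j])
    also have "\<dots> = (\<Sum>b<N. (\<Sum>a<N. Fi t $$ (i,a) * (F 0 $$ (a,b) - F t $$ (a,b))) * Fi 0 $$ (b,j))"
    proof (rule sum.cong[OF refl])
      fix b assume b: "b \<in> {..<N}"
      have "(Fi t * (F 0 - F t)) $$ (i,b) = (\<Sum>a<N. Fi t $$ (i,a) * (F 0 - F t) $$ (a,b))"
        using b by (intro mult_entry[OF Fi minus_carrier_mat[OF F] i]) auto
      also have "\<dots> = (\<Sum>a<N. Fi t $$ (i,a) * (F 0 $$ (a,b) - F t $$ (a,b)))"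
        using b F[of t] F[of 0] by (intro sum.cong refl) auto
      finally show "(Fi t * (F 0 - F t)) $$ (i,b) * Fi 0 $$ (b,j) = (\<Sum>a<N. Fi t $$ (i,a) * (F 0 $$ (a,b) - F t $$ (a,b))) * Fi 0 $$ (b,j)"
        by simp
    qed
    finally show ?thesis .
  qed
  have ent: "Fi t $$ (i,j) - Fi 0 $$ (i,j) = (\<Sum>b<N. (\<Sum>a<N. Fi t $$ (i,a) * (F 0 $$ (a,b) - F t $$ (a,b))) * Fi 0 $$ (b,j))" for t
    by (rule entg[OF i j])
  have contFi: "((\<lambda>t. Fi t $$ (i',j')) \<longlongrightarrow> Fi 0 $$ (i',j')) (at 0)" if i': "i' < N" and j': "j' < N" for i' j'
  proof -
    have ent': "Fi t $$ (i',j') - Fi 0 $$ (i',j') = (\<Sum>b<N. (\<Sum>a<N. Fi t $$ (i',a) * (F 0 $$ (a,b) - F t $$ (a,b))) * Fi 0 $$ (b,j'))" for t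
      by (rule entg[OF i' j'])
    have "((\<lambda>t. Fi t $$ (i',j') - Fi 0 $$ (i',j')) \<longlongrightarrow> 0) (at 0)"
    proof (rule null_cmp)
      show "eventually (\<lambda>t. \<bar>Fi t $$ (i',j') - Fi 0 $$ (i',j')\<bar> \<le> (\<Sum>b<N. \<Sum>a<N. \<beta> * \<bar>F 0 $$ (a,b) - F t $$ (a,b)\<bar> * \<bar>Fi 0 $$ (b,j')\<bar>)) (at 0)"
      proof (rule always_eventually, rule allI)
        fix t
        have "\<bar>Fi t $$ (i',j') - Fi 0 $$ (i',j')\<bar> \<le> (\<Sum>b<N. \<Sum>a<N. \<bar>Fi t $$ (i',a) * (F 0 $$ (a,b) - F t $$ (a,b))\<bar> * \<bar>Fi 0 $$ (b,j')\<bar>)"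
          unfolding ent' by (rule dsum_bound)
        also have "\<dots> \<le> (\<Sum>b<N. \<Sum>a<N. \<beta> * \<bar>F 0 $$ (a,b) - F t $$ (a,b)\<bar> * \<bar>Fi 0 $$ (b,j')\<bar>)"
          using bnd i' by (intro sum_mono mult_right_mono) (auto simp: abs_mult intro: mult_right_mono)
        finally show "\<bar>Fi t $$ (i',j') - Fi 0 $$ (i',j')\<bar> \<le> (\<Sum>b<N. \<Sum>a<N. \<beta> * \<bar>F 0 $$ (a,b) - F t $$ (a,b)\<bar> * \<bar>Fi 0 $$ (b,j')\<bar>)" .
      qed
      have "((\<lambda>t. \<Sum>b<N. \<Sum>a<N. \<beta> * \<bar>F 0 $$ (a,b) - F t $$ (a,b)\<bar> * \<bar>Fi 0 $$ (b,j')\<bar>) \<longlongrightarrow>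
              (\<Sum>b<N. \<Sum>a<N. \<beta> * \<bar>F 0 $$ (a,b) - F 0 $$ (a,b)\<bar> * \<bar>Fi 0 $$ (b,j')\<bar>)) (at 0)"
        using mderiv_cont[OF dF] by (intro tendsto_intros) auto
      then show "((\<lambda>t. \<Sum>b<N. \<Sum>a<N. \<beta> * \<bar>F 0 $$ (a,b) - F t $$ (a,b)\<bar> * \<bar>Fi 0 $$ (b,j')\<bar>) \<longlongrightarrow> 0) (at 0)"
        by simp
    qed
    then show ?thesis by (simp add: LIM_zero_iff)
  qed
  have quot: "(Fi t $$ (i,j) - Fi 0 $$ (i,j)) / t = (\<Sum>b<N. (\<Sum>a<N. Fi t $$ (i,a) * ((F 0 $$ (a,b) - F t $$ (a,b)) / t)) * Fi 0 $$ (b,j))" for t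
    unfolding ent by (simp add: sum_divide_distrib sum_distrib_right sum_distrib_left algebra_simps)
  have nq: "((\<lambda>t. (F 0 $$ (a,b) - F t $$ (a,b)) / t) \<longlongrightarrow> - F' $$ (a,b)) (at 0)" if a: "a < N" and b: "b < N" for a b
  proof -
    have "((\<lambda>t. - ((F t $$ (a,b) - F 0 $$ (a,b)) / t)) \<longlongrightarrow> - F' $$ (a,b)) (at 0)"
      by (intro tendsto_minus mderiv_quot[OF dF a b])
    moreover have "(\<lambda>t. - ((F t $$ (a,b) - F 0 $$ (a,b)) / t)) = (\<lambda>t. (F 0 $$ (a,b) - F t $$ (a,b)) / t)"
      by (rule ext) (simp add: minus_divide_left)
    ultimately show ?thesis by simp
  qed
  have lim: "((\<lambda>t. (Fi t $$ (i,j) - Fi 0 $$ (i,j)) / t) \<longlongrightarrow>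
     (\<Sum>b<N. (\<Sum>a<N. Fi 0 $$ (i,a) * (- F' $$ (a,b))) * Fi 0 $$ (b,j))) (at 0)"
    unfolding quot using contFi nq i by (intro tendsto_intros) auto
  have val: "(\<Sum>b<N. (\<Sum>a<N. Fi 0 $$ (i,a) * (- F' $$ (a,b))) * Fi 0 $$ (b,j)) = (- (Fi 0 * F' * Fi 0)) $$ (i,j)"
  proof -
    have "(- (Fi 0 * F' * Fi 0)) $$ (i,j) = - ((Fi 0 * F') * Fi 0) $$ (i,j)" using Fi[of 0] F' i j by simp
    also have "((Fi 0 * F') * Fi 0) $$ (i,j) = (\<Sum>b<N. (Fi 0 * F') $$ (i,b) * Fi 0 $$ (b,j))"
      by (rule mult_entry[OF mult_carrier_mat[OF Fi F'] Fi i j])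
    also have "\<dots> = (\<Sum>b<N. (\<Sum>a<N. Fi 0 $$ (i,a) * F' $$ (a,b)) * Fi 0 $$ (b,j))"
      by (intro sum.cong refl) (simp add: mult_entry[OF Fi F' i])
    finally show ?thesis by (simp add: sum_negf)
  qed
  show "((\<lambda>t. Fi t $$ (i,j)) has_real_derivative (- (Fi 0 * F' * Fi 0)) $$ (i,j)) (at 0)"
    unfolding has_field_derivative_iff using lim unfolding val by simp
qed

lemma sqrt_deriv:
  assumes P: "\<And>t. P t \<in> carrier_mat N N" and psdP: "\<And>t. psd (P t)"
  and A0: "A0 \<in> carrier_mat N N" and B1: "B1 \<in> carrier_mat N N" and B2: "B2 \<in> carrier_mat N N"
  and sq: "\<And>t. P t * P t = A0 + t \<cdot>\<^sub>m B1 + (t*t) \<cdot>\<^sub>m B2"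
  and c: "0 < c" and pd: "\<And>x. c * (nv N x)\<^sup>2 \<le> bil (P 0) x x"
  and G: "G \<in> carrier_mat N N" and GE: "P 0 * G + G * P 0 = B1"
  shows "mderiv N N P G"
proof -
  have dimP[simp]: "dim_row (P t) = N" "dim_col (P t) = N" for t using P[of t] by auto
  have dimO[simp]: "dim_row A0 = N" "dim_col A0 = N" "dim_row B1 = N" "dim_col B1 = N"
    "dim_row B2 = N" "dim_col B2 = N" "dim_row G = N" "dim_col G = N" using A0 B1 B2 G by auto
  define D where "D t = P t - P 0" for t
  have Dc: "D t \<in> carrier_mat N N" for t unfolding D_def using P[of 0] by simp
  have PP: "P s * P u \<in> carrier_mat N N" for s u using P[of s] P[of u] by simp
  have sq0: "P 0 * P 0 = A0" using sq[of 0] A0 B1 B2 by (intro eq_matI) auto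
  have id1: "P t * D t + D t * P 0 = t \<cdot>\<^sub>m B1 + (t*t) \<cdot>\<^sub>m B2" for t
  proof -
    have e1: "P t * D t = P t * P t - P t * P 0" unfolding D_def by (rule mult_minus_distrib_mat[OF P P P])
    have e2: "D t * P 0 = P t * P 0 - P 0 * P 0" unfolding D_def by (rule minus_mult_distrib_mat[OF P P P])
    show ?thesis unfolding e1 e2 sq sq0 using PP[of t 0] A0 B1 B2 by (intro eq_matI) auto
  qed
  define b1 where "b1 = fro B1"
  define b2 where "b2 = fro B2"
  have b0: "0 \<le> b1" "0 \<le> b2" unfolding b1_def b2_def by (auto intro: fro_nonneg)
  have est1: "c * fro (D t) \<le> \<bar>t\<bar> * b1 + (t*t) * b2" for t
  proof -
    have "c * fro (D t) \<le> fro (P t * D t + D t * P 0)" by (rule key_est[OF Dc P psdP P c pd])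
    also have "\<dots> = fro (t \<cdot>\<^sub>m B1 + (t*t) \<cdot>\<^sub>m B2)" unfolding id1 ..
    also have "\<dots> \<le> fro (t \<cdot>\<^sub>m B1) + fro ((t*t) \<cdot>\<^sub>m B2)" using B1 B2 by (intro fro_add[of _ N N]) auto
    also have "\<dots> = \<bar>t\<bar> * b1 + (t*t) * b2" unfolding b1_def b2_def using B1 B2 by (simp add: fro_smult[of _ N N])
    finally show ?thesis .
  qed
  define E where "E t = D t - t \<cdot>\<^sub>m G" for t
  have Ec: "E t \<in> carrier_mat N N" for t unfolding E_def using G by simp
  have id2: "P 0 * E t + E t * P 0 = (t*t) \<cdot>\<^sub>m B2 - D t * D t" for t
  proof -
    have e1: "P 0 * E t = P 0 * D t - t \<cdot>\<^sub>m (P 0 * G)" unfolding E_def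
      using mult_minus_distrib_mat[OF P Dc smult_carrier_mat[OF G]] mult_smult_distrib[OF P G] by simp
    have e2: "E t * P 0 = D t * P 0 - t \<cdot>\<^sub>m (G * P 0)" unfolding E_def
      using minus_mult_distrib_mat[OF Dc smult_carrier_mat[OF G] P] mult_smult_assoc_mat[OF G P] by simp
    have e3: "P 0 * D t = P 0 * P t - P 0 * P 0" unfolding D_def by (rule mult_minus_distrib_mat[OF P P P])
    have e4: "D t * P 0 = P t * P 0 - P 0 * P 0" unfolding D_def by (rule minus_mult_distrib_mat[OF P P P])
    have e5: "D t * D t = (P t * P t - P t * P 0) - (P 0 * P t - P 0 * P 0)"
    proof -
      have "D t * D t = P t * D t - P 0 * D t" unfolding D_def[of t] by (rule minus_mult_distrib_mat[OF P P Dc[unfolded D_def]])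
      also have "P t * D t = P t * P t - P t * P 0" unfolding D_def by (rule mult_minus_distrib_mat[OF P P P])
      finally show ?thesis unfolding e3 .
    qed
    have ge: "(P 0 * G) $$ (i,j) + (G * P 0) $$ (i,j) = B1 $$ (i,j)" if "i < N" "j < N" for i j
      using GE that P[of 0] G by (metis carrier_matD index_add_mat(1) mult_carrier_mat)
    show ?thesis unfolding e1 e2 e3 e4 e5
    proof (rule eq_matI)
      fix i j assume "i < dim_row ((t*t) \<cdot>\<^sub>m B2 - (P t * P t - P t * P 0 - (P 0 * P t - P 0 * P 0)))"
        "j < dim_col ((t*t) \<cdot>\<^sub>m B2 - (P t * P t - P t * P 0 - (P 0 * P t - P 0 * P 0)))"
      then have i: "i < N" and j: "j < N" using B2 by auto
      have s: "(P t * P t) $$ (i,j) = A0 $$ (i,j) + t * B1 $$ (i,j) + t * t * B2 $$ (i,j)"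
        unfolding sq using A0 B1 B2 i j by simp
      have s0: "(P 0 * P 0) $$ (i,j) = A0 $$ (i,j)" unfolding sq0 ..
      show "(P 0 * P t - P 0 * P 0 - t \<cdot>\<^sub>m (P 0 * G) + (P t * P 0 - P 0 * P 0 - t \<cdot>\<^sub>m (G * P 0))) $$ (i,j) =
            ((t*t) \<cdot>\<^sub>m B2 - (P t * P t - P t * P 0 - (P 0 * P t - P 0 * P 0))) $$ (i,j)"
        using i j PP[of 0 t] PP[of t 0] PP[of 0 0] PP[of t t] P[of 0] G B2 s s0 ge[OF i j, symmetric]
        by (simp add: algebra_simps del: index_mult_mat(1))
    qed (use B2 P[of 0] G in auto)
  qed
  have psd0: "psd (P 0)" by (rule psdP)
  have est2: "c * fro (E t) \<le> (t*t) * b2 + fro (D t) * fro (D t)" for t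
  proof -
    have "c * fro (E t) \<le> fro (P 0 * E t + E t * P 0)" by (rule key_est[OF Ec P psd0 P c pd])
    also have "\<dots> = fro ((t*t) \<cdot>\<^sub>m B2 - D t * D t)" unfolding id2 ..
    also have "\<dots> \<le> fro ((t*t) \<cdot>\<^sub>m B2) + fro (D t * D t)" using B2 Dc[of t] by (intro fro_minus[of _ N N]) auto
    also have "\<dots> \<le> (t*t) * b2 + fro (D t) * fro (D t)"
      unfolding b2_def using B2 fro_mult[OF Dc Dc, of t t] by (simp add: fro_smult[of _ N N])
    finally show ?thesis .
  qed
  define M where "M = (b1 + b2) / c"
  have M0: "0 \<le> M" unfolding M_def using b0 c by simp
  have bD: "fro (D t) \<le> \<bar>t\<bar> * M" if t1: "\<bar>t\<bar> < 1" for t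
  proof -
    have "t * t \<le> \<bar>t\<bar>" using t1 by (metis abs_ge_zero abs_mult_self_eq less_eq_real_def mult_left_le_one_le)
    then have "(t*t) * b2 \<le> \<bar>t\<bar> * b2" using b0 by (intro mult_right_mono) auto
    then have "c * fro (D t) \<le> \<bar>t\<bar> * (b1 + b2)" using est1[of t] by (simp add: algebra_simps)
    then show ?thesis unfolding M_def using c by (simp add: field_simps)
  qed
  define K where "K = (b2 + M * M) / c"
  have bE: "fro (E t) \<le> (t*t) * K" if t1: "\<bar>t\<bar> < 1" for t
  proof -
    have "fro (D t) * fro (D t) \<le> (\<bar>t\<bar> * M) * (\<bar>t\<bar> * M)"
      using bD[OF t1] fro_nonneg M0 by (intro mult_mono) auto
    then have "c * fro (E t) \<le> (t*t) * (b2 + M * M)" using est2[of t] by (simp add: algebra_simps abs_mult_self_eq)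
    then show ?thesis unfolding K_def using c by (simp add: field_simps)
  qed
  show ?thesis unfolding mderiv_def
  proof (intro allI impI)
    fix i j assume i: "i < N" and j: "j < N"
    have Eij: "E t $$ (i,j) = P t $$ (i,j) - P 0 $$ (i,j) - t * G $$ (i,j)" for t
      unfolding E_def D_def using P[of t] P[of 0] G i j by simp
    have "((\<lambda>t. (P t $$ (i,j) - P 0 $$ (i,j)) / t - G $$ (i,j)) \<longlongrightarrow> 0) (at 0)"
    proof (rule null_cmp)
      show "eventually (\<lambda>t. \<bar>(P t $$ (i,j) - P 0 $$ (i,j)) / t - G $$ (i,j)\<bar> \<le> \<bar>t\<bar> * K) (at 0)"
        using ev_small
      proof (rule eventually_mono)
        fix t :: real assume t: "t \<noteq> 0 \<and> \<bar>t\<bar> < 1"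
        have "(P t $$ (i,j) - P 0 $$ (i,j)) / t - G $$ (i,j) = E t $$ (i,j) / t"
          unfolding Eij using t by (simp add: field_simps)
        also have "\<bar>\<dots>\<bar> = \<bar>E t $$ (i,j)\<bar> / \<bar>t\<bar>" by simp
        also have "\<dots> \<le> (t*t) * K / \<bar>t\<bar>"
        proof (rule divide_right_mono)
          have "\<bar>E t $$ (i,j)\<bar> \<le> fro (E t)" using abs_le_fro[of i "E t" j] Ec[of t] i j by simp
          moreover have "fro (E t) \<le> (t*t) * K" using bE t by simp
          ultimately show "\<bar>E t $$ (i,j)\<bar> \<le> (t*t) * K" by (rule order_trans)
        qed simp
        also have "\<dots> = \<bar>t\<bar> * K"
        proof -
          have nz: "\<bar>t\<bar> \<noteq> 0" using t by simp
          have e: "(t*t) * K = \<bar>t\<bar> * (\<bar>t\<bar> * K)" by (simp add: mult.assoc[symmetric])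
          show ?thesis unfolding e using nz by (rule nonzero_mult_div_cancel_left)
        qed
        finally show "\<bar>(P t $$ (i,j) - P 0 $$ (i,j)) / t - G $$ (i,j)\<bar> \<le> \<bar>t\<bar> * K" .
      qed
      have "((\<lambda>t::real. \<bar>t\<bar> * K) \<longlongrightarrow> \<bar>0\<bar> * K) (at 0)" by (intro tendsto_intros)
      then show "((\<lambda>t::real. \<bar>t\<bar> * K) \<longlongrightarrow> 0) (at 0)" by simp
    qed
    then have "((\<lambda>t. (P t $$ (i,j) - P 0 $$ (i,j)) / (t - 0)) \<longlongrightarrow> G $$ (i,j)) (at 0)"
      by (simp add: LIM_zero_iff)
    then show "((\<lambda>t. P t $$ (i,j)) has_real_derivative G $$ (i,j)) (at 0)"
      unfolding has_field_derivative_iff .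
  qed
qed

lemma sum_quad: fixes x y u v :: "nat \<Rightarrow> real"
  shows "(\<Sum>k<a. (x k + t * y k) * (u k + t * v k)) = (\<Sum>k<a. x k * u k) + t * ((\<Sum>k<a. x k * v k) + (\<Sum>k<a. y k * u k)) + t * t * (\<Sum>k<a. y k * v k)"
  by (simp add: algebra_simps sum.distrib sum_distrib_left)

lemma gram_expand: fixes Um Vm :: "real mat" assumes U: "Um \<in> carrier_mat a N" and V: "Vm \<in> carrier_mat a N"
  shows "1\<^sub>m N + transpose_mat (Um + t \<cdot>\<^sub>m Vm) * (Um + t \<cdot>\<^sub>m Vm) =
         (1\<^sub>m N + transpose_mat Um * Um) + t \<cdot>\<^sub>m (transpose_mat Um * Vm + transpose_mat Vm * Um) + (t*t) \<cdot>\<^sub>m (transpose_mat Vm * Vm)"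
proof (rule eq_matI)
  fix i j assume "i < dim_row ((1\<^sub>m N + transpose_mat Um * Um) + t \<cdot>\<^sub>m (transpose_mat Um * Vm + transpose_mat Vm * Um) + (t*t) \<cdot>\<^sub>m (transpose_mat Vm * Vm))"
    "j < dim_col ((1\<^sub>m N + transpose_mat Um * Um) + t \<cdot>\<^sub>m (transpose_mat Um * Vm + transpose_mat Vm * Um) + (t*t) \<cdot>\<^sub>m (transpose_mat Vm * Vm))"
  then have i: "i < N" and j: "j < N" using V by auto
  have W: "Um + t \<cdot>\<^sub>m Vm \<in> carrier_mat a N" using U V by simp
  have tr: "\<And>M. M \<in> carrier_mat a N \<Longrightarrow> transpose_mat M \<in> carrier_mat N a" by simp
  have m: "\<And>M1 M2. M1 \<in> carrier_mat a N \<Longrightarrow> M2 \<in> carrier_mat a N \<Longrightarrow>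
      (transpose_mat M1 * M2) $$ (i,j) = (\<Sum>k<a. M1 $$ (k,i) * M2 $$ (k,j))"
    using i j by (subst mult_entry[OF tr]) auto
  show "(1\<^sub>m N + transpose_mat (Um + t \<cdot>\<^sub>m Vm) * (Um + t \<cdot>\<^sub>m Vm)) $$ (i,j) =
        ((1\<^sub>m N + transpose_mat Um * Um) + t \<cdot>\<^sub>m (transpose_mat Um * Vm + transpose_mat Vm * Um) + (t*t) \<cdot>\<^sub>m (transpose_mat Vm * Vm)) $$ (i,j)"
  proof -
    have "(transpose_mat (Um + t \<cdot>\<^sub>m Vm) * (Um + t \<cdot>\<^sub>m Vm)) $$ (i,j) = (\<Sum>k<a. (Um $$ (k,i) + t * Vm $$ (k,i)) * (Um $$ (k,j) + t * Vm $$ (k,j)))"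
      unfolding m[OF W W] using U V i j by (intro sum.cong refl) auto
    also have "\<dots> = (transpose_mat Um * Um) $$ (i,j) + t * ((transpose_mat Um * Vm) $$ (i,j) + (transpose_mat Vm * Um) $$ (i,j)) + t * t * (transpose_mat Vm * Vm) $$ (i,j)"
      unfolding m[OF U U] m[OF U V] m[OF V U] m[OF V V]
      using sum_quad[where x="\<lambda>k. Um $$ (k,i)" and y="\<lambda>k. Vm $$ (k,i)" and u="\<lambda>k. Um $$ (k,j)" and v="\<lambda>k. Vm $$ (k,j)" and t=t and a=a]
      by simp
    finally show ?thesis using i j U V by (simp del: index_mult_mat(1))
  qed
qed (use U V in auto)

lemma idx3_facts: fixes k b a p :: nat assumes b: "b < p" and a: "a < p"
  shows "((k*p+b)*p+a) div p = k*p+b" "((k*p+b)*p+a) mod p = a"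
        "((k*p+b)*p+a) div (p*p) = k" "((k*p+b)*p+a) mod (p*p) = b*p+a"
        "(b*p+a) div p = b" "(b*p+a) mod p = a" "(k*p+b) div p = k" "(k*p+b) mod p = b"
proof -
  have e: "(k*p+b)*p+a = k*(p*p) + (b*p+a)" by (simp add: algebra_simps)
  have ba: "b*p+a < p*p" using idx_lt[OF b a] by (simp add: mult.commute)
  show "((k*p+b)*p+a) div p = k*p+b" "((k*p+b)*p+a) mod p = a" using a by auto
  show "((k*p+b)*p+a) div (p*p) = k" "((k*p+b)*p+a) mod (p*p) = b*p+a" unfolding e using divmod_facts[OF ba, of k] by auto
  show "(b*p+a) div p = b" "(b*p+a) mod p = a" "(k*p+b) div p = k" "(k*p+b) mod p = b" using a b by auto
qed

lemma idx3_lt: fixes k b a p l :: nat assumes "k < l" "b < p" "a < p" shows "(k*p+b)*p+a < p*p*l"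
proof -
  have "k*p+b < p*l" using assms by (intro idx_lt) auto
  then have "(k*p+b)*p+a < p*(p*l)" using assms by (intro idx_lt) auto
  then show ?thesis by (simp add: mult.assoc)
qed

lemma sum_split3: fixes p l :: nat
  shows "(\<Sum>y<p*p*l. g y) = (\<Sum>j<l. \<Sum>d<p. \<Sum>c<p. g ((j*p+d)*p+c))"
proof -
  have "(\<Sum>y<p*p*l. g y) = (\<Sum>y<p*(p*l). g y)" by (simp add: mult.assoc)
  also have "\<dots> = (\<Sum>u<p*l. \<Sum>c<p. g (u*p+c))" by (rule sum_split_mult)
  also have "\<dots> = (\<Sum>j<l. \<Sum>d<p. \<Sum>c<p. g ((j*p+d)*p+c))" by (rule sum_split_mult)
  finally show ?thesis .
qed

lemma idx3_decomp: fixes x p l :: nat assumes x: "x < p*p*l"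
  shows "\<exists>k b a. k < l \<and> b < p \<and> a < p \<and> x = (k*p+b)*p+a"
proof -
  have p0: "0 < p" using x by (auto intro: gr0I)
  define a where "a = x mod p"
  define b where "b = (x div p) mod p"
  define k where "k = x div p div p"
  have "x = (k*p+b)*p+a" unfolding a_def b_def k_def by (metis div_mult_mod_eq)
  moreover have "k < l"
  proof -
    have "k = x div (p*p)" unfolding k_def by (simp add: div_mult2_eq)
    then show ?thesis using div_lt[of x "p*p" l] x by simp
  qed
  moreover have "b < p" "a < p" unfolding a_def b_def using p0 by auto
  ultimately show ?thesis by blast
qed

lemma tvec_dim: assumes T: "tdims p p l T" and l: "0 < l" shows "tvec T \<in> carrier_vec (p*p*l)"
  unfolding tvec_def Let_def using tdimsD[OF T l] by simp

lemma tvec_idx: assumes T: "tdims p p l T" and l: "0 < l" and k: "k < l" and b: "b < p" and a: "a < p"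
  shows "tvec T $ ((k*p+b)*p+a) = T ! k $$ (a,b)"
  unfolding tvec_def Let_def using tdimsD[OF T l] idx3_lt[OF k b a] idx3_facts[OF b a] by simp

lemma tvec_inj: assumes T1: "tdims p p l T1" and T2: "tdims p p l T2" and l: "0 < l"
  and eq: "tvec T1 = tvec T2" shows "T1 = T2"
proof (rule nth_equalityI)
  show "length T1 = length T2" using tdimsD[OF T1 l] tdimsD[OF T2 l] by simp
  fix k assume "k < length T1"
  then have k: "k < l" using tdimsD[OF T1 l] by simp
  show "T1 ! k = T2 ! k"
  proof (rule eq_matI)
    show "dim_row (T1!k) = dim_row (T2!k)" "dim_col (T1!k) = dim_col (T2!k)"
      using tdimsD(4)[OF T1 l k] tdimsD(4)[OF T2 l k] by auto
    fix a b assume "a < dim_row (T2!k)" "b < dim_col (T2!k)"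
    then have a: "a < p" and b: "b < p" using tdimsD(4)[OF T2 l k] by auto
    show "T1 ! k $$ (a,b) = T2 ! k $$ (a,b)"
      using tvec_idx[OF T1 l k b a] tvec_idx[OF T2 l k b a] eq by simp
  qed
qed

definition unvec :: "nat \<Rightarrow> nat \<Rightarrow> real vec \<Rightarrow> tensor" where
  "unvec p l v = map (\<lambda>k. mat p p (\<lambda>(a,b). v $ ((k*p+b)*p+a))) [0..<l]"

lemma unvec_tdims: "tdims p p l (unvec p l v)" unfolding unvec_def tdims_def by auto

lemma tvec_unvec: assumes v: "v \<in> carrier_vec (p*p*l)" and l: "0 < l" shows "tvec (unvec p l v) = v"
proof (rule eq_vecI)
  show "dim_vec (tvec (unvec p l v)) = dim_vec v" using tvec_dim[OF unvec_tdims l] v by simp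
  fix x assume "x < dim_vec v"
  then have x: "x < p*p*l" using v by simp
  obtain k b a where kba: "k < l" "b < p" "a < p" "x = (k*p+b)*p+a" using idx3_decomp[OF x] by blast
  have "tvec (unvec p l v) $ x = unvec p l v ! k $$ (a,b)" unfolding kba(4) by (rule tvec_idx[OF unvec_tdims l kba(1-3)])
  also have "\<dots> = v $ x" unfolding unvec_def kba(4) using kba by simp
  finally show "tvec (unvec p l v) $ x = v $ x" .
qed

lemma cx_invol: fixes l k j :: nat assumes l: "0 < l" and j: "j < l" shows "cx l k (cx l k j) = j"
  by (rule cx_eq_natI[OF l j]) (use j in \<open>simp add: cx_int[OF l] mod_diff_right_eq flip: of_nat_mod\<close>)

lemma cx_sum: fixes l k :: nat assumes l: "0 < l" shows "(\<Sum>j<l. f (cx l k j)) = (\<Sum>j<l. f j)"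
  by (rule sum.reindex_bij_witness[of _ "\<lambda>j. cx l k j" "\<lambda>j. cx l k j"])
     (use cx_invol[OF l] cx_lt[OF l] in auto)

definition Kop :: "nat \<Rightarrow> nat \<Rightarrow> tensor \<Rightarrow> real mat" where
  "Kop p l P = kron (transpose_mat (bcirc_t P)) (1\<^sub>m p) + khatri_rao l (blockI p l) (bcirc P)"

lemma bcirc_t_carrier: assumes "tdims m n l A" "0 < l" shows "bcirc_t A \<in> carrier_mat (m*l) (n*l)"
  using tdimsD[OF assms] unfolding bcirc_t_def Let_def by auto

lemma bcirc_t_idx: assumes "tdims m n l A" "0 < l" "r < m*l" "c < n*l"
  shows "bcirc_t A $$ (r,c) = A ! cx l (c div n) (r div m) $$ (r mod m, c mod n)"
  using tdimsD[OF assms(1,2)] assms(3,4) unfolding bcirc_t_def Let_def cx_def by auto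

lemma Kop_parts: assumes P: "tdims p p l P" and l: "0 < l"
  shows "kron (transpose_mat (bcirc_t P)) (1\<^sub>m p) \<in> carrier_mat (p*p*l) (p*p*l)"
        "khatri_rao l (blockI p l) (bcirc P) \<in> carrier_mat (p*p*l) (p*p*l)"
  unfolding kron_def khatri_rao_def blockI_def Let_def
  using bcirc_t_carrier[OF P l] bcirc_carrier[OF P l] l by (simp_all add: mult_ac)

lemma Kop_carrier: assumes P: "tdims p p l P" and l: "0 < l" shows "Kop p l P \<in> carrier_mat (p*p*l) (p*p*l)"
  unfolding Kop_def kron_def khatri_rao_def blockI_def Let_def
  using bcirc_t_carrier[OF P l] bcirc_carrier[OF P l] l by (simp add: mult_ac)

lemma kron_entry: assumes P: "tdims p p l P" and l: "0 < l" and kj: "k < l" "j < l" and i: "b < p" "a < p" "d < p" "c < p"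
  shows "kron (transpose_mat (bcirc_t P)) (1\<^sub>m p) $$ ((k*p+b)*p+a, (j*p+d)*p+c) = P ! cx l k j $$ (d,b) * (if a = c then 1 else 0)"
proof -
  note Bt = bcirc_t_carrier[OF P l]
  have u: "k*p+b < p*l" "j*p+d < p*l" using kj i by (auto intro: idx_lt)
  have r: "(k*p+b)*p+a < p*l*p" "(j*p+d)*p+c < p*l*p" using idx3_lt[OF kj(1) i(1,2)] idx3_lt[OF kj(2) i(3,4)] by (simp_all add: mult_ac)
  show ?thesis unfolding kron_def using Bt r u i idx3_facts[OF i(1,2)] idx3_facts[OF i(3,4)]
    bcirc_t_idx[OF P l u(2) u(1)] by simp
qed

lemma kr_entry: assumes P: "tdims p p l P" and l: "0 < l" and kj: "k < l" "j < l" and i: "b < p" "a < p" "d < p" "c < p"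
  shows "khatri_rao l (blockI p l) (bcirc P) $$ ((k*p+b)*p+a, (j*p+d)*p+c) = (if b = d then 1 else 0) * P ! cx l k j $$ (a,c)"
proof -
  note B = bcirc_carrier[OF P l]
  have u: "k*p+b < p*l" "j*p+d < p*l" "k*p+a < p*l" "j*p+c < p*l" using kj i by (auto intro: idx_lt)
  have r: "(k*p+b)*p+a < p*p*l" "(j*p+d)*p+c < p*p*l" using idx3_lt[OF kj(1) i(1,2)] idx3_lt[OF kj(2) i(3,4)] by simp_all
  have bl: "blockI p l $$ (k*p+b, j*p+d) = (if b = d then 1 else 0)"
    unfolding blockI_def using u i by (simp add: idx3_facts)
  have bc: "bcirc P $$ (k*p+a, j*p+c) = P ! cx l k j $$ (a,c)"
    using bcirc_idx[OF P l u(3) u(4)] i by simp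
  have dims: "dim_row (blockI p l) = p*l" "dim_col (blockI p l) = p*l" unfolding blockI_def by auto
  show ?thesis unfolding khatri_rao_def Let_def dims using B r l idx3_facts[OF i(1,2)] idx3_facts[OF i(3,4)] bl bc
    by simp
qed

lemma delta_sum: fixes f :: "nat \<Rightarrow> real" assumes "a < p"
  shows "(\<Sum>c<p. f c * (if a = c then 1 else 0)) = f a"
proof -
  have "(\<Sum>c<p. f c * (if a = c then 1 else 0)) = (\<Sum>c<p. if a = c then f c else 0)" by (intro sum.cong) auto
  also have "\<dots> = f a" using assms by (simp add: sum.delta)
  finally show ?thesis .
qed

lemma inner_collapse: fixes f g :: "nat \<Rightarrow> real" and h :: "nat \<Rightarrow> nat \<Rightarrow> real"
  assumes a: "a < p" and b: "b < p"
  shows "(\<Sum>d<p. \<Sum>c<p. (f d * (if a = c then 1 else 0) + (if b = d then 1 else 0) * g c) * h c d)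
       = (\<Sum>d<p. f d * h a d) + (\<Sum>c<p. g c * h c b)"
proof -
  have "(\<Sum>d<p. \<Sum>c<p. (f d * (if a = c then 1 else 0) + (if b = d then 1 else 0) * g c) * h c d)
      = (\<Sum>d<p. f d * h a d + (if b = d then (\<Sum>c<p. g c * h c d) else 0))"
  proof (rule sum.cong[OF refl])
    fix d assume d: "d \<in> {..<p}"
    have "(\<Sum>c<p. (f d * (if a = c then 1 else 0) + (if b = d then 1 else 0) * g c) * h c d)
        = (\<Sum>c<p. (if a = c then f d * h c d else 0) + (if b = d then g c * h c d else 0))"
      by (intro sum.cong) (auto simp: algebra_simps)
    also have "\<dots> = f d * h a d + (if b = d then (\<Sum>c<p. g c * h c d) else 0)"
      using a by (cases "b = d") (simp_all add: sum.distrib sum.delta)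
    finally show "(\<Sum>c<p. (f d * (if a = c then 1 else 0) + (if b = d then 1 else 0) * g c) * h c d)
        = f d * h a d + (if b = d then (\<Sum>c<p. g c * h c d) else 0)" .
  qed
  also have "\<dots> = (\<Sum>d<p. f d * h a d) + (\<Sum>c<p. g c * h c b)"
    using b by (simp add: sum.distrib sum.delta)
  finally show ?thesis .
qed

lemma Kop_tvec: assumes S: "tdims p p l S" and P: "tdims p p l P" and l: "0 < l"
  shows "Kop p l P *\<^sub>v tvec S = tvec (S \<star> P \<oplus>\<^sub>t P \<star> S)"
proof -
  note Kc = Kop_carrier[OF P l] and Sv = tvec_dim[OF S l]
  have SP: "tdims p p l (S \<star> P)" and PS: "tdims p p l (P \<star> S)" using tprod_tdims S P l by auto
  have R: "tdims p p l (S \<star> P \<oplus>\<^sub>t P \<star> S)" by (rule tplus_tdims[OF SP PS])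
  show ?thesis
  proof (rule eq_vecI)
    show "dim_vec (Kop p l P *\<^sub>v tvec S) = dim_vec (tvec (S \<star> P \<oplus>\<^sub>t P \<star> S))"
      using Kc tvec_dim[OF R l] by simp
    fix x assume "x < dim_vec (tvec (S \<star> P \<oplus>\<^sub>t P \<star> S))"
    then have x: "x < p*p*l" using tvec_dim[OF R l] by simp
    obtain k b a where kba: "k < l" "b < p" "a < p" "x = (k*p+b)*p+a" using idx3_decomp[OF x] by blast
    have lhs: "(Kop p l P *\<^sub>v tvec S) $ x = (\<Sum>y<p*p*l. Kop p l P $$ (x,y) * tvec S $ y)"
      using Kc Sv x by (simp add: scalar_prod_def lessThan_atLeast0)
    also have "\<dots> = (\<Sum>j<l. \<Sum>d<p. \<Sum>c<p. Kop p l P $$ (x, (j*p+d)*p+c) * S ! j $$ (c,d))"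
      unfolding sum_split3 using tvec_idx[OF S l] by (intro sum.cong refl) auto
    also have "\<dots> = (\<Sum>j<l. \<Sum>d<p. \<Sum>c<p. (P ! cx l k j $$ (d,b) * (if a = c then 1 else 0)
                   + (if b = d then 1 else 0) * P ! cx l k j $$ (a,c)) * S ! j $$ (c,d))"
    proof (intro sum.cong refl)
      fix j d c assume j: "j \<in> {..<l}" and d: "d \<in> {..<p}" and c: "c \<in> {..<p}"
      have y: "(j*p+d)*p+c < p*p*l" using j d c by (intro idx3_lt) auto
      have "Kop p l P $$ (x, (j*p+d)*p+c) = kron (transpose_mat (bcirc_t P)) (1\<^sub>m p) $$ (x, (j*p+d)*p+c)
            + khatri_rao l (blockI p l) (bcirc P) $$ (x, (j*p+d)*p+c)"
        unfolding Kop_def using Kop_parts[OF P l] x y by simp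
      then show "Kop p l P $$ (x, (j*p+d)*p+c) * S ! j $$ (c,d) = (P ! cx l k j $$ (d,b) * (if a = c then 1 else 0)
                   + (if b = d then 1 else 0) * P ! cx l k j $$ (a,c)) * S ! j $$ (c,d)"
        unfolding kba(4) using kron_entry[OF P l kba(1) _ kba(2,3)] kr_entry[OF P l kba(1) _ kba(2,3)] j d c by simp
    qed
    also have "\<dots> = (\<Sum>j<l. \<Sum>d<p. S ! j $$ (a,d) * P ! cx l k j $$ (d,b)) + (\<Sum>j<l. \<Sum>c<p. P ! cx l k j $$ (a,c) * S ! j $$ (c,b))"
    proof -
      have "(\<Sum>j<l. \<Sum>d<p. \<Sum>c<p. (P ! cx l k j $$ (d,b) * (if a = c then 1 else 0)
                   + (if b = d then 1 else 0) * P ! cx l k j $$ (a,c)) * S ! j $$ (c,d))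
          = (\<Sum>j<l. (\<Sum>d<p. P ! cx l k j $$ (d,b) * S ! j $$ (a,d)) + (\<Sum>c<p. P ! cx l k j $$ (a,c) * S ! j $$ (c,b)))"
        using kba by (intro sum.cong refl inner_collapse) auto
      also have "\<dots> = (\<Sum>j<l. \<Sum>d<p. S ! j $$ (a,d) * P ! cx l k j $$ (d,b)) + (\<Sum>j<l. \<Sum>c<p. P ! cx l k j $$ (a,c) * S ! j $$ (c,b))"
        by (simp add: sum.distrib mult.commute)
      finally show ?thesis .
    qed
    also have "(\<Sum>j<l. \<Sum>d<p. S ! j $$ (a,d) * P ! cx l k j $$ (d,b)) = (S \<star> P) ! k $$ (a,b)"
    proof -
      have "(\<Sum>j<l. \<Sum>d<p. S ! j $$ (a,d) * P ! cx l k j $$ (d,b)) = (\<Sum>j<l. \<Sum>d<p. S ! cx l k j $$ (a,d) * P ! cx l k (cx l k j) $$ (d,b))"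
        by (rule cx_sum[OF l, symmetric, where f="\<lambda>j. \<Sum>d<p. S ! j $$ (a,d) * P ! cx l k j $$ (d,b)"])
      also have "\<dots> = (\<Sum>j<l. \<Sum>d<p. S ! cx l k j $$ (a,d) * P ! j $$ (d,b))"
        using cx_invol[OF l] by simp
      also have "\<dots> = (\<Sum>s<p*l. bcirc S $$ (k*p+a, s) * unfold P $$ (s,b))"
      proof (subst sum_split_mult, intro sum.cong refl)
        fix j d assume j: "j \<in> {..<l}" and d: "d \<in> {..<p}"
        have jd: "j*p+d < p*l" using j d by (intro idx_lt) auto
        have ka: "k*p+a < p*l" using kba by (intro idx_lt) auto
        show "S ! cx l k j $$ (a,d) * P ! j $$ (d,b) = bcirc S $$ (k*p+a, j*p+d) * unfold P $$ (j*p+d, b)"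
          using bcirc_idx[OF S l ka jd] unfold_idx[OF P l jd kba(2)] kba d by simp
      qed
      also have "\<dots> = (S \<star> P) ! k $$ (a,b)" by (rule tprod_idx[OF S P l kba(1) kba(3) kba(2), symmetric])
      finally show ?thesis .
    qed
    also have "(\<Sum>j<l. \<Sum>c<p. P ! cx l k j $$ (a,c) * S ! j $$ (c,b)) = (P \<star> S) ! k $$ (a,b)"
    proof -
      have "(\<Sum>j<l. \<Sum>c<p. P ! cx l k j $$ (a,c) * S ! j $$ (c,b)) = (\<Sum>s<p*l. bcirc P $$ (k*p+a, s) * unfold S $$ (s,b))"
      proof (subst sum_split_mult, intro sum.cong refl)
        fix j d assume j: "j \<in> {..<l}" and d: "d \<in> {..<p}"
        have jd: "j*p+d < p*l" using j d by (intro idx_lt) auto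
        have ka: "k*p+a < p*l" using kba by (intro idx_lt) auto
        show "P ! cx l k j $$ (a,d) * S ! j $$ (d,b) = bcirc P $$ (k*p+a, j*p+d) * unfold S $$ (j*p+d, b)"
          using bcirc_idx[OF P l ka jd] unfold_idx[OF S l jd kba(2)] kba d by simp
      qed
      also have "\<dots> = (P \<star> S) ! k $$ (a,b)" by (rule tprod_idx[OF P S l kba(1) kba(3) kba(2), symmetric])
      finally show ?thesis .
    qed
    also have "(S \<star> P) ! k $$ (a,b) + (P \<star> S) ! k $$ (a,b) = (S \<star> P \<oplus>\<^sub>t P \<star> S) ! k $$ (a,b)"
      using tdimsD[OF SP l] tdimsD[OF PS l] carrier_matD[OF tdimsD(4)[OF SP l kba(1)]] carrier_matD[OF tdimsD(4)[OF PS l kba(1)]] kba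
      by (simp add: tplus_nth)
    also have "\<dots> = tvec (S \<star> P \<oplus>\<^sub>t P \<star> S) $ x" unfolding kba(4) by (rule tvec_idx[OF R l kba(1-3), symmetric])
    finally show "(Kop p l P *\<^sub>v tvec S) $ x = tvec (S \<star> P \<oplus>\<^sub>t P \<star> S) $ x" .
  qed
qed

lemma entry_eqI: fixes A B :: "real mat" assumes "A \<in> carrier_mat a b" "B \<in> carrier_mat a b"
  and "\<And>i j. i < a \<Longrightarrow> j < b \<Longrightarrow> A $$ (i,j) = B $$ (i,j)" shows "A = B"
  using assms by (intro eq_matI) auto

lemma alg_I1: fixes Xm Um :: "real mat" assumes X: "Xm \<in> carrier_mat a N" and U: "Um \<in> carrier_mat a N"
  and h1: "transpose_mat Xm * Xm = 1\<^sub>m N" and h2: "transpose_mat Xm * Um + transpose_mat Um * Xm = 0\<^sub>m N N"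
  shows "transpose_mat (Xm + Um) * (Xm + Um) = 1\<^sub>m N + transpose_mat Um * Um"
proof -
  have XT: "transpose_mat Xm \<in> carrier_mat N a" and UT: "transpose_mat Um \<in> carrier_mat N a" using X U by auto
  have XU: "Xm + Um \<in> carrier_mat a N" using U by simp
  have "transpose_mat (Xm + Um) * (Xm + Um) = transpose_mat Xm * (Xm + Um) + transpose_mat Um * (Xm + Um)"
    unfolding transpose_add[OF X U] by (rule add_mult_distrib_mat[OF XT UT XU])
  also have "\<dots> = (transpose_mat Xm * Xm + transpose_mat Xm * Um) + (transpose_mat Um * Xm + transpose_mat Um * Um)"
    by (simp add: mult_add_distrib_mat[OF XT X U] mult_add_distrib_mat[OF UT X U])
  also have "\<dots> = 1\<^sub>m N + transpose_mat Um * Um"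
  proof (rule entry_eqI[of _ N N])
    fix i j assume i: "i < N" and j: "j < N"
    have e2: "(transpose_mat Xm * Um) $$ (i,j) + (transpose_mat Um * Xm) $$ (i,j) = 0"
      using arg_cong[OF h2, of "\<lambda>M. M $$ (i,j)"] XT UT X U i j by (simp del: index_mult_mat(1))
    have e1: "(transpose_mat Xm * Xm) $$ (i,j) = (1\<^sub>m N :: real mat) $$ (i,j)" using h1 by simp
    show "(transpose_mat Xm * Xm + transpose_mat Xm * Um + (transpose_mat Um * Xm + transpose_mat Um * Um)) $$ (i,j)
          = (1\<^sub>m N + transpose_mat Um * Um) $$ (i,j)"
      using i j XT UT X U e1 e2 by (simp del: index_mult_mat(1) index_one_mat add: algebra_simps)
  qed (use XT UT X U in auto)
  finally show ?thesis .
qed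

lemma alg_B1: fixes Xm Um Vm :: "real mat" assumes X: "Xm \<in> carrier_mat a N" and U: "Um \<in> carrier_mat a N"
  and V: "Vm \<in> carrier_mat a N" and h: "transpose_mat Xm * Vm + transpose_mat Vm * Xm = 0\<^sub>m N N"
  shows "transpose_mat (Xm + Um) * Vm + transpose_mat Vm * (Xm + Um) = transpose_mat Um * Vm + transpose_mat Vm * Um"
proof -
  have XT: "transpose_mat Xm \<in> carrier_mat N a" and UT: "transpose_mat Um \<in> carrier_mat N a"
    and VT: "transpose_mat Vm \<in> carrier_mat N a" using X U V by auto
  have "transpose_mat (Xm + Um) * Vm + transpose_mat Vm * (Xm + Um)
      = (transpose_mat Xm * Vm + transpose_mat Um * Vm) + (transpose_mat Vm * Xm + transpose_mat Vm * Um)"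
    unfolding transpose_add[OF X U] by (simp add: add_mult_distrib_mat[OF XT UT V] mult_add_distrib_mat[OF VT X U])
  also have "\<dots> = transpose_mat Um * Vm + transpose_mat Vm * Um"
  proof (rule entry_eqI[of _ N N])
    fix i j assume i: "i < N" and j: "j < N"
    have e: "(transpose_mat Xm * Vm) $$ (i,j) + (transpose_mat Vm * Xm) $$ (i,j) = 0"
      using arg_cong[OF h, of "\<lambda>M. M $$ (i,j)"] XT VT X V i j by (simp del: index_mult_mat(1))
    show "(transpose_mat Xm * Vm + transpose_mat Um * Vm + (transpose_mat Vm * Xm + transpose_mat Vm * Um)) $$ (i,j)
        = (transpose_mat Um * Vm + transpose_mat Vm * Um) $$ (i,j)"
      using i j XT UT VT X U V e by (simp del: index_mult_mat(1) add: algebra_simps)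
  qed (use XT UT VT X U V in auto)
  finally show ?thesis .
qed

lemma inv_symm: fixes P Q :: "real mat" assumes P: "P \<in> carrier_mat N N" and Q: "Q \<in> carrier_mat N N"
  and s: "symm P" and PQ: "P * Q = 1\<^sub>m N" and QP: "Q * P = 1\<^sub>m N"
  shows "transpose_mat Q = Q"
proof -
  have QT: "transpose_mat Q \<in> carrier_mat N N" using Q by simp
  have "transpose_mat Q * P = transpose_mat Q * transpose_mat P" using s unfolding symm_def by simp
  also have "\<dots> = transpose_mat (P * Q)" by (rule transpose_mult[OF P Q, symmetric])
  also have "\<dots> = 1\<^sub>m N" using PQ by simp
  finally have h: "transpose_mat Q * P = 1\<^sub>m N" .
  have "transpose_mat Q = transpose_mat Q * (P * Q)" using PQ QT by simp
  also have "\<dots> = (transpose_mat Q * P) * Q" using QT P Q by (simp add: assoc_mult_mat)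
  also have "\<dots> = Q" using h Q by simp
  finally show ?thesis .
qed

lemma alg_G: fixes P0 Qi F0 Vm Sm :: "real mat"
  assumes P0: "P0 \<in> carrier_mat N N" and Qi: "Qi \<in> carrier_mat N N" and Sm: "Sm \<in> carrier_mat N N"
  and F0: "F0 \<in> carrier_mat a N" and V: "Vm \<in> carrier_mat a N"
  and sP: "symm P0" and PQ: "P0 * Qi = 1\<^sub>m N" and QP: "Qi * P0 = 1\<^sub>m N"
  and FF: "transpose_mat F0 * F0 = P0 * P0"
  and SE: "Sm * P0 + P0 * Sm = transpose_mat (F0 * Qi) * Vm - transpose_mat Vm * (F0 * Qi)"
  shows "P0 * (transpose_mat (F0 * Qi) * Vm - Sm * P0) + (transpose_mat (F0 * Qi) * Vm - Sm * P0) * P0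
         = transpose_mat F0 * Vm + transpose_mat Vm * F0"
proof -
  define Y0 where "Y0 = F0 * Qi"
  have Y0: "Y0 \<in> carrier_mat a N" unfolding Y0_def using F0 Qi by simp
  have Y0T: "transpose_mat Y0 \<in> carrier_mat N a" using Y0 by simp
  have FT: "transpose_mat F0 \<in> carrier_mat N a" and VT: "transpose_mat Vm \<in> carrier_mat N a" using F0 V by auto
  have QT: "transpose_mat Qi = Qi" by (rule inv_symm[OF P0 Qi sP PQ QP])
  have Y0t: "transpose_mat Y0 = Qi * transpose_mat F0" unfolding Y0_def using transpose_mult[OF F0 Qi] QT by simp
  have I4: "Y0 * P0 = F0" unfolding Y0_def using F0 Qi P0 QP by (simp add: assoc_mult_mat[OF F0 Qi P0])
  have I5: "P0 * transpose_mat Y0 = transpose_mat F0" unfolding Y0t using P0 Qi FT PQ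
    by (simp add: assoc_mult_mat[OF P0 Qi FT, symmetric])
  define YV where "YV = transpose_mat Y0 * Vm"
  have YV: "YV \<in> carrier_mat N N" unfolding YV_def using Y0T V by simp
  have SP: "Sm * P0 \<in> carrier_mat N N" using Sm P0 by simp
  have e1: "P0 * (YV - Sm * P0) = transpose_mat F0 * Vm - P0 * Sm * P0"
  proof -
    have "P0 * (YV - Sm * P0) = P0 * YV - P0 * (Sm * P0)" by (rule mult_minus_distrib_mat[OF P0 YV SP])
    also have "P0 * YV = transpose_mat F0 * Vm" unfolding YV_def
      using assoc_mult_mat[OF P0 Y0T V, symmetric] I5 by simp
    also have "P0 * (Sm * P0) = P0 * Sm * P0" using assoc_mult_mat[OF P0 Sm P0] by simp
    finally show ?thesis .
  qed
  have e2: "(YV - Sm * P0) * P0 = YV * P0 - Sm * P0 * P0" by (rule minus_mult_distrib_mat[OF YV SP P0])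
  have e3: "P0 * Sm * P0 = YV * P0 - transpose_mat Vm * F0 - Sm * P0 * P0"
  proof -
    have PS: "P0 * Sm = YV - transpose_mat Vm * Y0 - Sm * P0"
    proof (rule entry_eqI[of _ N N])
      show "P0 * Sm \<in> carrier_mat N N" using P0 Sm by simp
      show "YV - transpose_mat Vm * Y0 - Sm * P0 \<in> carrier_mat N N" by (rule minus_carrier_mat[OF SP])
      fix i j assume i: "i < N" and j: "j < N"
      have "(Sm * P0) $$ (i,j) + (P0 * Sm) $$ (i,j) = (YV - transpose_mat Vm * Y0) $$ (i,j)"
        using arg_cong[OF SE, of "\<lambda>M. M $$ (i,j)"] Sm P0 i j unfolding YV_def Y0_def[symmetric]
        by (simp del: index_mult_mat(1))
      then show "(P0 * Sm) $$ (i,j) = (YV - transpose_mat Vm * Y0 - Sm * P0) $$ (i,j)"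
        using i j YV VT Y0 Sm P0 by (simp del: index_mult_mat(1))
    qed
    have VY: "transpose_mat Vm * Y0 \<in> carrier_mat N N" using VT Y0 by simp
    have "P0 * Sm * P0 = (YV - transpose_mat Vm * Y0 - Sm * P0) * P0" unfolding PS ..
    also have "\<dots> = (YV - transpose_mat Vm * Y0) * P0 - Sm * P0 * P0"
      by (rule minus_mult_distrib_mat[OF minus_carrier_mat[OF VY] SP P0])
    also have "(YV - transpose_mat Vm * Y0) * P0 = YV * P0 - transpose_mat Vm * Y0 * P0"
      by (rule minus_mult_distrib_mat[OF YV VY P0])
    also have "transpose_mat Vm * Y0 * P0 = transpose_mat Vm * F0"
      using assoc_mult_mat[OF VT Y0 P0] I4 by simp
    finally show ?thesis .
  qed
  show ?thesis unfolding Y0_def[symmetric] YV_def[symmetric] e1 e2 e3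
  proof (rule entry_eqI[of _ N N])
    show "transpose_mat F0 * Vm + transpose_mat Vm * F0 \<in> carrier_mat N N" using FT VT F0 V by simp
    show "transpose_mat F0 * Vm - (YV * P0 - transpose_mat Vm * F0 - Sm * P0 * P0) + (YV * P0 - Sm * P0 * P0) \<in> carrier_mat N N"
      by (rule add_carrier_mat[OF minus_carrier_mat[OF mult_carrier_mat[OF SP P0]]])
    fix i j assume i: "i < N" and j: "j < N"
    show "(transpose_mat F0 * Vm - (YV * P0 - transpose_mat Vm * F0 - Sm * P0 * P0) + (YV * P0 - Sm * P0 * P0)) $$ (i,j)
        = (transpose_mat F0 * Vm + transpose_mat Vm * F0) $$ (i,j)"
      using i j carrier_matD[OF FT] carrier_matD[OF VT] carrier_matD[OF F0] carrier_matD[OF V]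
        carrier_matD[OF YV] carrier_matD[OF P0] carrier_matD[OF SP] carrier_matD[OF Sm] by (simp del: index_mult_mat(1))
  qed
qed

lemma alg_final: fixes P0 Qi F0 Vm Sm :: "real mat"
  assumes P0: "P0 \<in> carrier_mat N N" and Qi: "Qi \<in> carrier_mat N N" and Sm: "Sm \<in> carrier_mat N N"
  and F0: "F0 \<in> carrier_mat a N" and V: "Vm \<in> carrier_mat a N" and PQ: "P0 * Qi = 1\<^sub>m N"
  shows "Vm * Qi + F0 * (- (Qi * (transpose_mat (F0 * Qi) * Vm - Sm * P0) * Qi))
       = (F0 * Qi) * Sm + (1\<^sub>m a - (F0 * Qi) * transpose_mat (F0 * Qi)) * Vm * Qi"
proof -
  define Y0 where "Y0 = F0 * Qi"
  have Y0: "Y0 \<in> carrier_mat a N" unfolding Y0_def using F0 Qi by simp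
  have Y0T: "transpose_mat Y0 \<in> carrier_mat N a" using Y0 by simp
  define G where "G = transpose_mat Y0 * Vm - Sm * P0"
  have YV: "transpose_mat Y0 * Vm \<in> carrier_mat N N" using Y0T V by simp
  have SP: "Sm * P0 \<in> carrier_mat N N" using Sm P0 by simp
  have G: "G \<in> carrier_mat N N" unfolding G_def using SP by simp
  have "F0 * (Qi * G * Qi) = Y0 * G * Qi"
    unfolding Y0_def
    using assoc_mult_mat[OF Qi G Qi] assoc_mult_mat[OF mult_carrier_mat[OF F0 Qi] G Qi]
      assoc_mult_mat[OF F0 Qi mult_carrier_mat[OF G Qi]] by simp
  also have "Y0 * G = Y0 * (transpose_mat Y0 * Vm) - Y0 * (Sm * P0)" unfolding G_def
    by (rule mult_minus_distrib_mat[OF Y0 YV SP])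
  also have "(Y0 * (transpose_mat Y0 * Vm) - Y0 * (Sm * P0)) * Qi = Y0 * (transpose_mat Y0 * Vm) * Qi - Y0 * (Sm * P0) * Qi"
    by (rule minus_mult_distrib_mat[OF mult_carrier_mat[OF Y0 YV] mult_carrier_mat[OF Y0 SP] Qi])
  also have "Y0 * (Sm * P0) * Qi = Y0 * Sm"
    using assoc_mult_mat[OF Y0 SP Qi] assoc_mult_mat[OF Sm P0 Qi] PQ right_mult_one_mat[OF Sm] by simp
  also have "Y0 * (transpose_mat Y0 * Vm) * Qi = Y0 * transpose_mat Y0 * Vm * Qi"
    using Y0 Y0T V Qi by (simp add: assoc_mult_mat)
  finally have h: "F0 * (Qi * G * Qi) = Y0 * transpose_mat Y0 * Vm * Qi - Y0 * Sm" .
  have e1: "F0 * (- (Qi * G * Qi)) = - (F0 * (Qi * G * Qi))"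
    by (rule uminus_mult_right_mat) (use F0 Qi G in simp)
  have YYV: "Y0 * transpose_mat Y0 * Vm * Qi \<in> carrier_mat a N"
    by (rule mult_carrier_mat[OF mult_carrier_mat[OF mult_carrier_mat[OF Y0 Y0T] V] Qi])
  have e2: "(1\<^sub>m a - Y0 * transpose_mat Y0) * Vm * Qi = Vm * Qi - Y0 * transpose_mat Y0 * Vm * Qi"
  proof -
    have YY: "Y0 * transpose_mat Y0 \<in> carrier_mat a a" using Y0 Y0T by simp
    have "(1\<^sub>m a - Y0 * transpose_mat Y0) * Vm = 1\<^sub>m a * Vm - Y0 * transpose_mat Y0 * Vm"
      by (rule minus_mult_distrib_mat[OF one_carrier_mat YY V])
    also have "1\<^sub>m a * Vm = Vm" using V by simp
    finally have "(1\<^sub>m a - Y0 * transpose_mat Y0) * Vm = Vm - Y0 * transpose_mat Y0 * Vm" .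
    then show ?thesis using minus_mult_distrib_mat[OF V mult_carrier_mat[OF YY V] Qi] by simp
  qed
  show ?thesis unfolding Y0_def[symmetric] G_def[symmetric] e1 h e2
  proof (rule entry_eqI[of _ a N])
    show "Vm * Qi + - (Y0 * transpose_mat Y0 * Vm * Qi - Y0 * Sm) \<in> carrier_mat a N"
      by (rule add_carrier_mat[OF uminus_carrier_mat[OF minus_carrier_mat[OF mult_carrier_mat[OF Y0 Sm]]]])
    show "Y0 * Sm + (Vm * Qi - Y0 * transpose_mat Y0 * Vm * Qi) \<in> carrier_mat a N"
      by (rule add_carrier_mat[OF minus_carrier_mat[OF YYV]])
    fix i j assume i: "i < a" and j: "j < N"
    show "(Vm * Qi + - (Y0 * transpose_mat Y0 * Vm * Qi - Y0 * Sm)) $$ (i,j) = (Y0 * Sm + (Vm * Qi - Y0 * transpose_mat Y0 * Vm * Qi)) $$ (i,j)"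
      using i j carrier_matD[OF V] carrier_matD[OF Qi] carrier_matD[OF Y0] carrier_matD[OF Sm] carrier_matD[OF YYV]
      by (simp del: index_mult_mat(1))
  qed
qed

lemma pinv_inv: fixes K Ki :: "real mat" assumes K: "K \<in> carrier_mat M M" and Ki: "Ki \<in> carrier_mat M M"
  and KKi: "K * Ki = 1\<^sub>m M" and KiK: "Ki * K = 1\<^sub>m M"
  shows "pinv K = Ki"
  unfolding pinv_def
proof (rule the_equality)
  show "Ki \<in> carrier_mat (dim_col K) (dim_row K) \<and> K * Ki * K = K \<and> Ki * K * Ki = Ki \<and>
        transpose_mat (K * Ki) = K * Ki \<and> transpose_mat (Ki * K) = Ki * K"
    using K Ki KKi KiK by simp
next
  fix Z assume h: "Z \<in> carrier_mat (dim_col K) (dim_row K) \<and> K * Z * K = K \<and> Z * K * Z = Z \<and>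
        transpose_mat (K * Z) = K * Z \<and> transpose_mat (Z * K) = Z * K"
  then have Z: "Z \<in> carrier_mat M M" and KZK: "K * Z * K = K" using K by auto
  have "Z = (Ki * K) * Z * (K * Ki)" using KKi KiK Z by simp
  also have "\<dots> = Ki * (K * Z * K) * Ki"
    by (simp only: assoc_mult_mat[OF mult_carrier_mat[OF Ki K] Z mult_carrier_mat[OF K Ki]]
      assoc_mult_mat[OF Ki K mult_carrier_mat[OF Z mult_carrier_mat[OF K Ki]]]
      assoc_mult_mat[OF Ki mult_carrier_mat[OF mult_carrier_mat[OF K Z] K] Ki]
      assoc_mult_mat[OF mult_carrier_mat[OF K Z] K Ki]
      assoc_mult_mat[OF K Z mult_carrier_mat[OF K Ki]])
  also have "\<dots> = Ki" using KZK KiK Ki by (simp add: assoc_mult_mat[OF Ki K Ki])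
  finally show "Z = Ki" .
qed

lemma tvec_zero: assumes l: "0 < l" shows "tvec (replicate l (0\<^sub>m p p)) = 0\<^sub>v (p*p*l)"
proof (rule eq_vecI)
  show "dim_vec (tvec (replicate l (0\<^sub>m p p))) = dim_vec (0\<^sub>v (p*p*l) :: real vec)"
    using tvec_dim[OF zero_tdims l] by simp
  fix x assume "x < dim_vec (0\<^sub>v (p*p*l) :: real vec)"
  then have x: "x < p*p*l" by simp
  obtain k b a where kba: "k < l" "b < p" "a < p" "x = (k*p+b)*p+a" using idx3_decomp[OF x] by blast
  show "tvec (replicate l (0\<^sub>m p p)) $ x = (0\<^sub>v (p*p*l) :: real vec) $ x"
    unfolding kba(4) tvec_idx[OF zero_tdims l kba(1-3)] using kba x by simp
qed

lemma K_invertible: assumes P: "tdims p p l P" and l: "0 < l" and pP: "psd (bcirc P)"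
  and c: "0 < c" and pd: "\<And>x. c * (nv (p*l) x)\<^sup>2 \<le> bil (bcirc P) x x"
  shows "\<exists>Ki. Ki \<in> carrier_mat (p*p*l) (p*p*l) \<and> Kop p l P * Ki = 1\<^sub>m (p*p*l) \<and> Ki * Kop p l P = 1\<^sub>m (p*p*l)"
proof -
  note Kc = Kop_carrier[OF P l]
  note Pm = bcirc_carrier[OF P l]
  have "det (Kop p l P) \<noteq> 0"
  proof
    assume "det (Kop p l P) = 0"
    then obtain v where v: "v \<in> carrier_vec (p*p*l)" "v \<noteq> 0\<^sub>v (p*p*l)" "Kop p l P *\<^sub>v v = 0\<^sub>v (p*p*l)"
      using det_0_iff_vec_prod_zero_field[OF Kc] by blast
    define T where "T = unvec p l v"
    have T: "tdims p p l T" unfolding T_def by (rule unvec_tdims)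
    have tv: "tvec T = v" unfolding T_def by (rule tvec_unvec[OF v(1) l])
    have TPPT: "tdims p p l (T \<star> P \<oplus>\<^sub>t P \<star> T)" by (rule tplus_tdims[OF tprod_tdims[OF T P l] tprod_tdims[OF P T l]])
    have "tvec (T \<star> P \<oplus>\<^sub>t P \<star> T) = tvec (replicate l (0\<^sub>m p p))"
      using Kop_tvec[OF T P l] v(3) tv tvec_zero[OF l] by simp
    then have e: "T \<star> P \<oplus>\<^sub>t P \<star> T = replicate l (0\<^sub>m p p)" by (rule tvec_inj[OF TPPT zero_tdims l])
    have Tm: "bcirc T \<in> carrier_mat (p*l) (p*l)" by (rule bcirc_carrier[OF T l])
    have "bcirc T * bcirc P + bcirc P * bcirc T = 0\<^sub>m (p*l) (p*l)"
      using arg_cong[OF e, of bcirc] bcirc_zero[OF l]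
      by (simp add: bcirc_tplus[OF tprod_tdims[OF T P l] tprod_tdims[OF P T l] l] bcirc_tprod[OF T P l] bcirc_tprod[OF P T l])
    then have z: "bcirc P * bcirc T + bcirc T * bcirc P = 0\<^sub>m (p*l) (p*l)"
      using Tm Pm by (simp add: comm_add_mat[of "bcirc P * bcirc T" "p*l" "p*l"])
    have "c * fro (bcirc T) \<le> fro (bcirc P * bcirc T + bcirc T * bcirc P)" by (rule key_est[OF Tm Pm pP Pm c pd])
    also have "\<dots> = 0" unfolding z fro_def by (rule L2_set_0') auto
    finally have f0: "fro (bcirc T) \<le> 0" using c by (simp add: mult_le_0_iff)
    have "bcirc T = 0\<^sub>m (p*l) (p*l)"
    proof (rule entry_eqI[OF Tm zero_carrier_mat])
      fix a b assume a: "a < p*l" and b: "b < p*l"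
      have "\<bar>bcirc T $$ (a,b)\<bar> \<le> fro (bcirc T)" using abs_le_fro[of a "bcirc T" b] Tm a b by simp
      then show "bcirc T $$ (a,b) = 0\<^sub>m (p*l) (p*l) $$ (a,b)" using f0 a b by simp
    qed
    then have "T = replicate l (0\<^sub>m p p)" using bcirc_inj[OF T zero_tdims l] bcirc_zero[OF l] by simp
    then have "v = 0\<^sub>v (p*p*l)" using tv tvec_zero[OF l] by simp
    then show False using v(2) by simp
  qed
  then have "Kop p l P \<in> Units (ring_mat TYPE(real) (p*p*l) ())" by (rule det_non_zero_imp_unit[OF Kc])
  then show ?thesis unfolding Units_def ring_mat_def by auto
qed

lemma YTF: fixes F0 Qi P0 :: "real mat" assumes F0: "F0 \<in> carrier_mat a N" and Qi: "Qi \<in> carrier_mat N N"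
  and P0: "P0 \<in> carrier_mat N N" and sP: "symm P0" and PQ: "P0 * Qi = 1\<^sub>m N" and QP: "Qi * P0 = 1\<^sub>m N"
  and FF: "transpose_mat F0 * F0 = P0 * P0"
  shows "transpose_mat (F0 * Qi) * F0 = P0"
proof -
  have QT: "transpose_mat Qi = Qi" by (rule inv_symm[OF P0 Qi sP PQ QP])
  have FT: "transpose_mat F0 \<in> carrier_mat N a" using F0 by simp
  have "transpose_mat (F0 * Qi) * F0 = Qi * transpose_mat F0 * F0" using transpose_mult[OF F0 Qi] QT by simp
  also have "\<dots> = Qi * (P0 * P0)" using assoc_mult_mat[OF Qi FT F0] FF by simp
  also have "\<dots> = P0" using assoc_mult_mat[OF Qi P0 P0, symmetric] QP P0 by simp
  finally show ?thesis .
qed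

theorem mainTheorem12:
  fixes n p l :: nat and X U V S :: tensor
  assumes "0 < l" and "p \<le> n"
    and "X \<in> tStiefel n p l"
    and "U \<in> tangent_tStiefel n p l X" and "V \<in> tangent_tStiefel n p l X"
    and "tdims p p l S"
    and "tvec S = pinv (kron (transpose_mat (bcirc_t (tsqrt p l (tid p l \<oplus>\<^sub>t ttrans U \<star> U)))) (1\<^sub>m p)
                 + khatri_rao l (blockI p l) (bcirc (tsqrt p l (tid p l \<oplus>\<^sub>t ttrans U \<star> U))))
             *\<^sub>v tvec (ttrans (retr_tpd p l X U) \<star> V \<ominus>\<^sub>t ttrans V \<star> retr_tpd p l X U)"
  shows "\<forall>k<l. \<forall>i<n. \<forall>j<p.
     ((\<lambda>t. retr_tpd p l X (U \<oplus>\<^sub>t tsmult t V) ! k $$ (i,j)) has_real_derivative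
       ((retr_tpd p l X U \<star> S
         \<oplus>\<^sub>t (tid n l \<ominus>\<^sub>t retr_tpd p l X U \<star> ttrans (retr_tpd p l X U)) \<star> V
              \<star> tinv p l (ttrans (retr_tpd p l X U) \<star> (X \<oplus>\<^sub>t U))) ! k $$ (i,j))) (at 0)"
proof (intro allI impI)
  fix k i j assume k: "k < l" and i: "i < n" and j: "j < p"
  have l: "0 < l" by (rule assms(1))
  have X: "tdims n p l X" and XX: "ttrans X \<star> X = tid p l" using assms(3) unfolding tStiefel_def by auto
  have U: "tdims n p l U" and XU: "ttrans X \<star> U \<oplus>\<^sub>t ttrans U \<star> X = replicate l (0\<^sub>m p p)"
    using assms(4) unfolding tangent_tStiefel_def by auto
  have V: "tdims n p l V" and XV: "ttrans X \<star> V \<oplus>\<^sub>t ttrans V \<star> X = replicate l (0\<^sub>m p p)"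
    using assms(5) unfolding tangent_tStiefel_def by auto
  have S: "tdims p p l S" by (rule assms(6))
  define N where "N = p*l"
  define Xm where "Xm = bcirc X"
  define Um where "Um = bcirc U"
  define Vm where "Vm = bcirc V"
  define Sm where "Sm = bcirc S"
  have Xc: "Xm \<in> carrier_mat (n*l) N" unfolding Xm_def N_def by (rule bcirc_carrier[OF X l])
  have Uc: "Um \<in> carrier_mat (n*l) N" unfolding Um_def N_def by (rule bcirc_carrier[OF U l])
  have Vc: "Vm \<in> carrier_mat (n*l) N" unfolding Vm_def N_def by (rule bcirc_carrier[OF V l])
  have Sc: "Sm \<in> carrier_mat N N" unfolding Sm_def N_def by (rule bcirc_carrier[OF S l])
  have XXm: "transpose_mat Xm * Xm = 1\<^sub>m N"
    using arg_cong[OF XX, of bcirc] unfolding Xm_def N_def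
    by (simp add: bcirc_tprod[OF ttrans_tdims[OF X l] X l] bcirc_ttrans[OF X l] bcirc_tid[OF l])
  have tang: "transpose_mat Xm * Wm + transpose_mat Wm * Xm = 0\<^sub>m N N"
    if W: "tdims n p l W" and XW: "ttrans X \<star> W \<oplus>\<^sub>t ttrans W \<star> X = replicate l (0\<^sub>m p p)" and Wm: "Wm = bcirc W" for W Wm
    using arg_cong[OF XW, of bcirc] unfolding Xm_def N_def Wm
    by (simp add: bcirc_tplus[OF tprod_tdims[OF ttrans_tdims[OF X l] W l] tprod_tdims[OF ttrans_tdims[OF W l] X l] l]
        bcirc_tprod[OF ttrans_tdims[OF X l] W l] bcirc_tprod[OF ttrans_tdims[OF W l] X l]
        bcirc_ttrans[OF X l] bcirc_ttrans[OF W l] bcirc_zero[OF l])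
  have XUm: "transpose_mat Xm * Um + transpose_mat Um * Xm = 0\<^sub>m N N" by (rule tang[OF U XU]) (simp add: Um_def)
  have XVm: "transpose_mat Xm * Vm + transpose_mat Vm * Xm = 0\<^sub>m N N" by (rule tang[OF V XV]) (simp add: Vm_def)
  define W where "W t = U \<oplus>\<^sub>t tsmult t V" for t
  have Wt: "tdims n p l (W t)" for t unfolding W_def by (rule tplus_tdims[OF U tsmult_tdims[OF V]])
  have bW: "bcirc (W t) = Um + t \<cdot>\<^sub>m Vm" for t
    unfolding W_def Um_def Vm_def by (simp add: bcirc_tplus[OF U tsmult_tdims[OF V] l] bcirc_tsmult[OF V l])
  have Wmc: "Um + t \<cdot>\<^sub>m Vm \<in> carrier_mat (n*l) N" for t using Uc Vc by simp
  have W0: "W 0 = U"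
  proof (rule bcirc_inj[OF Wt U l])
    show "bcirc (W 0) = bcirc U" unfolding bW Um_def[symmetric] using Uc Vc by (intro entry_eqI[of _ "n*l" N]) auto
  qed
  define Pt where "Pt t = tsqrt p l (gram p l (W t))" for t
  have Pfacts: "tdims p p l (Pt t) \<and> tsym (Pt t) \<and> tpsd p l (Pt t) \<and> Pt t \<star> Pt t = gram p l (W t)" for t
    unfolding Pt_def by (rule tsqrt_gram[OF Wt l])
  have Ptd: "tdims p p l (Pt t)" for t using Pfacts by blast
  define Pm where "Pm t = bcirc (Pt t)" for t
  have Pc: "Pm t \<in> carrier_mat N N" for t unfolding Pm_def N_def by (rule bcirc_carrier[OF Ptd l])
  have Psym: "symm (Pm t)" for t unfolding Pm_def using Pfacts tsym_iff[OF Ptd l] by blast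
  have Ppsd: "psd (Pm t)" for t unfolding Pm_def using Pfacts tpsd_iff[OF Ptd l] by blast
  have Psq: "Pm t * Pm t = 1\<^sub>m N + transpose_mat (Um + t \<cdot>\<^sub>m Vm) * (Um + t \<cdot>\<^sub>m Vm)" for t
  proof -
    have e: "Pt t \<star> Pt t = gram p l (W t)" using Pfacts by blast
    have "Pm t * Pm t = bcirc (gram p l (W t))" unfolding Pm_def bcirc_tprod[OF Ptd Ptd l, symmetric] e ..
    also have "\<dots> = 1\<^sub>m N + transpose_mat (Um + t \<cdot>\<^sub>m Vm) * (Um + t \<cdot>\<^sub>m Vm)"
      unfolding bcirc_gram[OF Wt l] bW N_def ..
    finally show ?thesis .
  qed
  define A0 where "A0 = 1\<^sub>m N + transpose_mat Um * Um"
  define B1 where "B1 = transpose_mat Um * Vm + transpose_mat Vm * Um"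
  define B2 where "B2 = transpose_mat Vm * Vm"
  have A0c: "A0 \<in> carrier_mat N N" unfolding A0_def using Uc by simp
  have B1c: "B1 \<in> carrier_mat N N" unfolding B1_def using Uc Vc by simp
  have B2c: "B2 \<in> carrier_mat N N" unfolding B2_def using Vc by simp
  have Psq2: "Pm t * Pm t = A0 + t \<cdot>\<^sub>m B1 + (t*t) \<cdot>\<^sub>m B2" for t
    unfolding Psq A0_def B1_def B2_def by (rule gram_expand[OF Uc Vc])
  have Plo: "nv N x \<le> nv N (mv (Pm t) x)" for t x
  proof (rule sq_lower[OF Pc Psym])
    fix y show "(nv N y)\<^sup>2 \<le> bil (Pm t * Pm t) y y" unfolding Psq by (rule gram_bounds(1)[OF Wmc])
  qed
  define Bi where "Bi t = (SOME B. B \<in> carrier_mat N N \<and> Pm t * B = 1\<^sub>m N \<and> B * Pm t = 1\<^sub>m N \<and> opb B 1)" for t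
  have Bi: "Bi t \<in> carrier_mat N N \<and> Pm t * Bi t = 1\<^sub>m N \<and> Bi t * Pm t = 1\<^sub>m N \<and> opb (Bi t) 1" for t
    unfolding Bi_def by (rule someI_ex[OF inverse_exists[OF Pc Plo]])
  have Bic: "Bi t \<in> carrier_mat N N" for t using Bi by blast
  have tinvB: "tdims p p l (tinv p l (Pt t)) \<and> bcirc (tinv p l (Pt t)) = Bi t" for t
    using tinv_bcirc[OF Ptd l, of "Bi t"] Bi[of t] unfolding Pm_def N_def by blast
  define F0 where "F0 = Xm + Um"
  have F0c: "F0 \<in> carrier_mat (n*l) N" unfolding F0_def using Uc by simp
  define F where "F t = F0 + t \<cdot>\<^sub>m Vm" for t
  have Fc: "F t \<in> carrier_mat (n*l) N" for t unfolding F_def using Vc by simp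
  have F00: "F 0 = F0" unfolding F_def using F0c Vc by (intro entry_eqI[of _ "n*l" N]) auto
  have XWt: "tdims n p l (X \<oplus>\<^sub>t W t)" for t by (rule tplus_tdims[OF X Wt])
  have retr: "retr_tpd p l X (W t) = (X \<oplus>\<^sub>t W t) \<star> tinv p l (Pt t)" for t
    unfolding retr_tpd_def tinvsqrt_def Pt_def gram_def ..
  have Ytd: "tdims n p l (retr_tpd p l X (W t))" for t
    unfolding retr using tinvB by (intro tprod_tdims[OF XWt _ l]) blast
  have bY: "bcirc (retr_tpd p l X (W t)) = F t * Bi t" for t
  proof -
    have "bcirc (retr_tpd p l X (W t)) = bcirc (X \<oplus>\<^sub>t W t) * Bi t"
    proof -
      have tiv: "tdims p p l (tinv p l (Pt t))" using tinvB by blast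
      show ?thesis unfolding retr bcirc_tprod[OF XWt tiv l] using tinvB[of t] by simp
    qed
    also have "bcirc (X \<oplus>\<^sub>t W t) = F t"
      unfolding bcirc_tplus[OF X Wt l] bW F_def F0_def Xm_def[symmetric]
      using Xc Uc Vc by (intro entry_eqI[of _ "n*l" N]) auto
    finally show ?thesis .
  qed
  obtain c where c: "0 < c" and pd: "\<And>x. c * (nv N x)\<^sup>2 \<le> bil (Pm 0) x x"
    using pd_const[OF Pc[of 0] Psym[of 0] Ppsd[of 0] Plo] by blast
  define Y0 where "Y0 = retr_tpd p l X U"
  have Y0W: "Y0 = retr_tpd p l X (W 0)" unfolding Y0_def W0 ..
  have Y0d: "tdims n p l Y0" unfolding Y0W by (rule Ytd)
  define Qi where "Qi = Bi 0"
  have Qic: "Qi \<in> carrier_mat N N" unfolding Qi_def by (rule Bic)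
  have PQ: "Pm 0 * Qi = 1\<^sub>m N" and QP: "Qi * Pm 0 = 1\<^sub>m N" unfolding Qi_def using Bi by auto
  have bY0: "bcirc Y0 = F0 * Qi" unfolding Y0W bY F00 Qi_def ..
  have P0U: "tsqrt p l (tid p l \<oplus>\<^sub>t ttrans U \<star> U) = Pt 0" unfolding Pt_def gram_def W0 ..
  define C where "C = ttrans Y0 \<star> V \<ominus>\<^sub>t ttrans V \<star> Y0"
  have Cd: "tdims p p l C" unfolding C_def
    by (rule tminus_tdims[OF tprod_tdims[OF ttrans_tdims[OF Y0d l] V l] tprod_tdims[OF ttrans_tdims[OF V l] Y0d l]])
  have psd0: "psd (bcirc (Pt 0))" using Ppsd[of 0] unfolding Pm_def .
  have pd0: "\<And>x. c * (nv (p*l) x)\<^sup>2 \<le> bil (bcirc (Pt 0)) x x" using pd unfolding Pm_def N_def .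
  obtain Ki where Ki: "Ki \<in> carrier_mat (p*p*l) (p*p*l)" "Kop p l (Pt 0) * Ki = 1\<^sub>m (p*p*l)" "Ki * Kop p l (Pt 0) = 1\<^sub>m (p*p*l)"
    using K_invertible[OF Ptd l psd0 c pd0] by blast
  have pinvK: "pinv (Kop p l (Pt 0)) = Ki" by (rule pinv_inv[OF Kop_carrier[OF Ptd l] Ki])
  have tvS: "tvec S = Ki *\<^sub>v tvec C"
    using assms(7) unfolding Kop_def[symmetric] P0U pinvK C_def Y0_def .
  have "Kop p l (Pt 0) *\<^sub>v tvec S = tvec C"
  proof -
    have "Kop p l (Pt 0) *\<^sub>v tvec S = (Kop p l (Pt 0) * Ki) *\<^sub>v tvec C"
      unfolding tvS using assoc_mult_mat_vec[OF Kop_carrier[OF Ptd l] Ki(1) tvec_dim[OF Cd l]] by simp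
    also have "\<dots> = tvec C" unfolding Ki(2) using tvec_dim[OF Cd l] by simp
    finally show ?thesis .
  qed
  then have "tvec (S \<star> Pt 0 \<oplus>\<^sub>t Pt 0 \<star> S) = tvec C" using Kop_tvec[OF S Ptd l] by simp
  then have SE_t: "S \<star> Pt 0 \<oplus>\<^sub>t Pt 0 \<star> S = C"
    by (rule tvec_inj[OF tplus_tdims[OF tprod_tdims[OF S Ptd l] tprod_tdims[OF Ptd S l]] Cd l])
  have SE: "Sm * Pm 0 + Pm 0 * Sm = transpose_mat (F0 * Qi) * Vm - transpose_mat Vm * (F0 * Qi)"
    using arg_cong[OF SE_t, of bcirc] unfolding C_def Sm_def Pm_def Vm_def bY0[symmetric]
    by (simp add: bcirc_tplus[OF tprod_tdims[OF S Ptd l] tprod_tdims[OF Ptd S l] l]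
        bcirc_tprod[OF S Ptd l] bcirc_tprod[OF Ptd S l]
        bcirc_tminus[OF tprod_tdims[OF ttrans_tdims[OF Y0d l] V l] tprod_tdims[OF ttrans_tdims[OF V l] Y0d l] l]
        bcirc_tprod[OF ttrans_tdims[OF Y0d l] V l] bcirc_tprod[OF ttrans_tdims[OF V l] Y0d l]
        bcirc_ttrans[OF Y0d l] bcirc_ttrans[OF V l])
  have A0P: "Pm 0 * Pm 0 = A0" using Psq2[of 0] A0c B1c B2c by (intro entry_eqI[of _ N N]) auto
  have FF: "transpose_mat F0 * F0 = Pm 0 * Pm 0" unfolding A0P A0_def F0_def by (rule alg_I1[OF Xc Uc XXm XUm])
  define G where "G = transpose_mat (F0 * Qi) * Vm - Sm * Pm 0"
  have Gc: "G \<in> carrier_mat N N" unfolding G_def using Sc Pc[of 0] by simp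
  have GE: "Pm 0 * G + G * Pm 0 = B1"
  proof -
    have "Pm 0 * G + G * Pm 0 = transpose_mat F0 * Vm + transpose_mat Vm * F0"
      unfolding G_def by (rule alg_G[OF Pc Qic Sc F0c Vc Psym PQ QP FF SE])
    also have "\<dots> = B1" unfolding F0_def B1_def by (rule alg_B1[OF Xc Uc Vc XVm])
    finally show ?thesis .
  qed
  have dP: "mderiv N N Pm G" by (rule sqrt_deriv[OF Pc Ppsd A0c B1c B2c Psq2 c pd Gc GE])
  have bnd: "\<bar>Bi t $$ (a,b)\<bar> \<le> 1" if "a < N" "b < N" for t a b
    using opb_entry[of "Bi t" 1 a b] Bi[of t] that by auto
  have dBi: "mderiv N N Bi (- (Qi * G * Qi))" unfolding Qi_def
    by (rule mderiv_inverse[OF Pc Bic _ _ bnd dP Gc]) (use Bi in auto)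
  have dF: "mderiv (n*l) N F Vm" unfolding F_def by (rule mderiv_affine[OF F0c Vc])
  have dY: "mderiv (n*l) N (\<lambda>t. F t * Bi t) (Vm * Bi 0 + F 0 * (- (Qi * G * Qi)))"
    by (rule mderiv_mult[OF Fc Bic dF dBi Vc]) (use Qic Gc in simp)
  have val: "Vm * Bi 0 + F 0 * (- (Qi * G * Qi)) = (F0 * Qi) * Sm + (1\<^sub>m (n*l) - (F0 * Qi) * transpose_mat (F0 * Qi)) * Vm * Qi"
    unfolding F00 Qi_def[symmetric] G_def by (rule alg_final[OF Pc Qic Sc F0c Vc PQ])
  define R where "R = Y0 \<star> S \<oplus>\<^sub>t (tid n l \<ominus>\<^sub>t Y0 \<star> ttrans Y0) \<star> V \<star> tinv p l (ttrans Y0 \<star> (X \<oplus>\<^sub>t U))"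
  have TY: "ttrans Y0 \<star> (X \<oplus>\<^sub>t U) = Pt 0"
  proof (rule bcirc_inj[OF tprod_tdims[OF ttrans_tdims[OF Y0d l] tplus_tdims[OF X U] l] Ptd l])
    have "bcirc (ttrans Y0 \<star> (X \<oplus>\<^sub>t U)) = transpose_mat (F0 * Qi) * F0"
      unfolding bcirc_tprod[OF ttrans_tdims[OF Y0d l] tplus_tdims[OF X U] l] bcirc_ttrans[OF Y0d l]
        bY0 bcirc_tplus[OF X U l] F0_def Xm_def Um_def ..
    also have "\<dots> = Pm 0" by (rule YTF[OF F0c Qic Pc Psym PQ QP FF])
    finally show "bcirc (ttrans Y0 \<star> (X \<oplus>\<^sub>t U)) = bcirc (Pt 0)" unfolding Pm_def .
  qed
  have Rd: "tdims n p l R" unfolding R_def TY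
    using tinvB[of 0] Y0d S V tid_tdims[of n l]
    by (intro tplus_tdims tprod_tdims[OF _ _ l] tminus_tdims ttrans_tdims[OF _ l]) auto
  have bR: "bcirc R = (F0 * Qi) * Sm + (1\<^sub>m (n*l) - (F0 * Qi) * transpose_mat (F0 * Qi)) * Vm * Qi"
  proof -
    have t1: "tdims n p l (Y0 \<star> S)" by (rule tprod_tdims[OF Y0d S l])
    have t2: "tdims n n l (Y0 \<star> ttrans Y0)" by (rule tprod_tdims[OF Y0d ttrans_tdims[OF Y0d l] l])
    have t3: "tdims n n l (tid n l \<ominus>\<^sub>t Y0 \<star> ttrans Y0)" by (rule tminus_tdims[OF tid_tdims t2])
    have t4: "tdims n p l ((tid n l \<ominus>\<^sub>t Y0 \<star> ttrans Y0) \<star> V)" by (rule tprod_tdims[OF t3 V l])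
    have t5: "tdims p p l (tinv p l (Pt 0))" using tinvB by blast
    show ?thesis unfolding R_def TY
      using tinvB[of 0]
      by (simp add: bcirc_tplus[OF t1 tprod_tdims[OF t4 t5 l] l] bcirc_tprod[OF Y0d S l] bcirc_tprod[OF t4 t5 l]
        bcirc_tprod[OF t3 V l] bcirc_tminus[OF tid_tdims t2 l] bcirc_tid[OF l]
        bcirc_tprod[OF Y0d ttrans_tdims[OF Y0d l] l] bcirc_ttrans[OF Y0d l] bY0 Sm_def Vm_def Qi_def mult.commute[of l n])
  qed
  have ki: "k*n+i < n*l" using k i by (rule idx_lt)
  have jN: "j < N" unfolding N_def using l j by (rule idx_lt0)
  have lhs: "(\<lambda>t. retr_tpd p l X (U \<oplus>\<^sub>t tsmult t V) ! k $$ (i,j)) = (\<lambda>t. (F t * Bi t) $$ (k*n+i, j))"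
  proof
    fix t
    have "retr_tpd p l X (U \<oplus>\<^sub>t tsmult t V) ! k $$ (i,j) = bcirc (retr_tpd p l X (W t)) $$ (k*n+i, j)"
      unfolding W_def by (rule tent[OF Ytd[unfolded W_def] l k i j])
    then show "retr_tpd p l X (U \<oplus>\<^sub>t tsmult t V) ! k $$ (i,j) = (F t * Bi t) $$ (k*n+i, j)" unfolding bY .
  qed
  have rhs: "R ! k $$ (i,j) = (Vm * Bi 0 + F 0 * (- (Qi * G * Qi))) $$ (k*n+i, j)"
    using tent[OF Rd l k i j] unfolding bR val[symmetric] .
  have "((\<lambda>t. (F t * Bi t) $$ (k*n+i, j)) has_real_derivative (Vm * Bi 0 + F 0 * (- (Qi * G * Qi))) $$ (k*n+i, j)) (at 0)"
    using dY ki jN unfolding mderiv_def by blast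
  then show "((\<lambda>t. retr_tpd p l X (U \<oplus>\<^sub>t tsmult t V) ! k $$ (i,j)) has_real_derivative
       ((retr_tpd p l X U \<star> S
         \<oplus>\<^sub>t (tid n l \<ominus>\<^sub>t retr_tpd p l X U \<star> ttrans (retr_tpd p l X U)) \<star> V
              \<star> tinv p l (ttrans (retr_tpd p l X U) \<star> (X \<oplus>\<^sub>t U))) ! k $$ (i,j))) (at 0)"
    unfolding lhs using rhs unfolding R_def Y0_def by simp
qed

end
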